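(* Suppose Assumption 1 (context) holds, let $u^*$ be any minimizer of $D$, and let $0\le K_0\le K$ be integers. For ARDCA as in the context, define $\hat x^K=\frac{\sum_{k=K_0}^Kx^*(v^k)/\theta_k}{\sum_{k=K_0}^K1/\theta_k}$ and $\hat y^K=\frac{\sum_{k=K_0}^Kny^k/\theta_k}{\sum_{k=K_0}^K1/\theta_k}$. Then for any deterministic $u\in\mathbb{D}$ (not depending on $\xi_K$), $$\left(\frac1{\theta_K^2}-\frac1{\theta_{K_0-1}^2}\right)\mathbb{E}_{\xi_K}\left[\langle\triangle(\hat x^K,\hat y^K),u\rangle+D(u^* )+f(\hat x^K)+\frac1n\phi(\hat y^K)\right]\le2(\widehat n^2-\widehat n)(D(u^0)-D(u^* ))+2\widehat n^2\|u^0-u^*\|_L^2+2\widehat n^2\|u-u^*\|_L^2.$$ Moreover, with $R_0=(1-\theta_0)(D(u^0)-D(u^* ))+\|u^0-u^*\|_L^2$, $$\frac12\sum_{k=K_0}^K\mathbb{E}_{\xi_K}[\|z^{k+1}-z^k\|_L^2]\le R_0,\qquad\mathbb{E}_{\xi_K}[\|z^{K+1}-u^*\|_L^2]\le R_0,$$ $$\frac{\mathbb{E}_{\xi_K}[D(u^{K+1})]-D(u^* )}{\theta_K^2}+\widehat n^2\mathbb{E}_{\xi_K}[\|z^{K+1}-u^*\|_L^2]\le\widehat n^2R_0.$$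
   Context: Data: integers $n,t\ge1$, $p,m\ge0$; $A\in\mathbb{R}^{t\times n}$ (columns $A_j$), $B\in\mathbb{R}^{p\times t}$ (rows $B_{j,:}$), $b\in\mathbb{R}^p$; $f:\mathbb{R}^t\to\mathbb{R}$, $\phi_i:\mathbb{R}\to\mathbb{R}$, $g_i:\mathbb{R}^t\to\mathbb{R}$. Primal problem: minimize $f(x)+\frac1n\sum_i\phi_i(A_i^Tx)$ s.t. $Bx+b=0$, $g_i(x)\le0$. Assumption 1: $f$ $\mu$-strongly convex ($\mu>0$); $\phi_i$ convex and $M$-Lipschitz; $g_i$ convex with subgradients of norm $\le L_{g_i}$; a Slater point exists; finite optimal value. Dual: $\widehat n=n+p+m$, $\mathbb{D}=\{u:u_{n+p+1},\dots,u_{\widehat n}\ge0\}$, $L_f(x,u)=f(x)+\langle u_{1:n},A^Tx/n\rangle+\langle u_{n+1:n+p},Bx+b\rangle+\sum_iu_{n+p+i}g_i(x)$, $x^*(u)=\arg\min_xL_f(x,u)$, $d(u)=-L_f(x^*(u),u)$, $\nabla d(u)=-[(A^Tx^*(u)/n)^T,(Bx^*(u)+b)^T,g(x^*(u))^T]^T$; $h_i=\frac1n\phi_i^*$ ($i\le n$), $h_i\equiv0$ ($n<i\le n+p$), $h_i$ = indicator of $[0,\infty)$ ($i>n+p$); $D(u)=d(u)+\sum_ih_i(u_i)$. $L_j=\|A_j\|^2/(n^2\mu)$ ($j\le n$), $\|B_{j-n,:}\|^2/\mu$ ($n<j\le n+p$), $L_{g_{j-n-p}}^2/\mu$ ($j>n+p$);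 $\|w\|_L=\sqrt{\sum_iL_iw_i^2}$. ARDCA: $\theta_0=1/\widehat n$, $\theta_{k+1}=\frac{\sqrt{\theta_k^4+4\theta_k^2}-\theta_k^2}{2}$, with the convention $1/\theta_{-1}^2=\widehat n^2-\widehat n$; $z^0=u^0\in\mathbb{D}$; for $k\ge0$: $v^k=\theta_kz^k+(1-\theta_k)u^k$; $\tilde z_i^k=\arg\min_w\widehat n\theta_kL_i(w-z_i^k)^2+\nabla_id(v^k)(w-z_i^k)+h_i(w)$ for each $i$; $i_k$ uniform on $\{1,\dots,\widehat n\}$, independent; $z^{k+1}_{i_k}=\tilde z^k_{i_k}$, other coordinates unchanged; $u^{k+1}=v^k+\widehat n\theta_k(z^{k+1}-z^k)$. $y_i^k=-2\widehat n\theta_kL_i(\tilde z_i^k-z_i^k)-\nabla_id(v^k)$ ($i\le n$). $\xi_K=\{i_0,\dots,i_K\}$. $\triangle(x,y)=[(A^Tx-y)^T/n,(Bx+b)^T,g_1(x),\dots,g_m(x)]^T$, $\phi(y)=\sum_{i=1}^n\phi_i(y_i)$. *)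

theory Defs
  imports "HOL-Analysis.Analysis"
begin

(* Dual coordinates are 0-based: i < n (phi block), n <= i < n+p (equality block),
   n+p <= i < n+p+m (inequality block).  Vectors in R^n, R^p, R^m, R^nhat are
   represented as nat => real, only the coordinates below the dimension matter. *)
record ('t::finite) prob =
  nn :: nat
  pp :: nat
  mm :: nat
  Acol :: "nat \<Rightarrow> real^'t"
  Brow :: "nat \<Rightarrow> real^'t"
  bv   :: "nat \<Rightarrow> real"
  fobj :: "real^'t \<Rightarrow> real"
  phi  :: "nat \<Rightarrow> real \<Rightarrow> real"
  gc   :: "nat \<Rightarrow> real^'t \<Rightarrow> real"
  mu   :: real
  Lg   :: "nat \<Rightarrow> real"

definition strongly_convex :: "real \<Rightarrow> ('a::real_inner \<Rightarrow> real) \<Rightarrow> bool" where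
  "strongly_convex c F \<longleftrightarrow> (\<forall>x y. \<forall>s::real. 0 \<le> s \<and> s \<le> 1 \<longrightarrow>
      F ((1 - s) *\<^sub>R x + s *\<^sub>R y) \<le> (1 - s) * F x + s * F y - c / 2 * s * (1 - s) * (norm (x - y))\<^sup>2)"

definition nhat :: "'t::finite prob \<Rightarrow> nat" where
  "nhat P = nn P + pp P + mm P"

definition Lc :: "'t::finite prob \<Rightarrow> nat \<Rightarrow> real" where
  "Lc P j = (if j < nn P then (norm (Acol P j))\<^sup>2 / ((real (nn P))\<^sup>2 * mu P)
             else if j < nn P + pp P then (norm (Brow P (j - nn P)))\<^sup>2 / mu P
             else (Lg P (j - nn P - pp P))\<^sup>2 / mu P)"

definition Lnorm_sq :: "'t::finite prob \<Rightarrow> (nat \<Rightarrow> real) \<Rightarrow> real" where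
  "Lnorm_sq P w = (\<Sum>i<nhat P. Lc P i * (w i)\<^sup>2)"

definition Lagr :: "'t::finite prob \<Rightarrow> real^'t \<Rightarrow> (nat \<Rightarrow> real) \<Rightarrow> real" where
  "Lagr P x u = fobj P x + (\<Sum>i<nn P. u i * ((Acol P i \<bullet> x) / real (nn P)))
     + (\<Sum>j<pp P. u (nn P + j) * (Brow P j \<bullet> x + bv P j))
     + (\<Sum>i<mm P. u (nn P + pp P + i) * gc P i x)"

definition xstar :: "'t::finite prob \<Rightarrow> (nat \<Rightarrow> real) \<Rightarrow> real^'t" where
  "xstar P u = (SOME x. \<forall>y. Lagr P x u \<le> Lagr P y u)"

definition dfun :: "'t::finite prob \<Rightarrow> (nat \<Rightarrow> real) \<Rightarrow> real" where
  "dfun P u = - Lagr P (xstar P u) u"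

definition gradd :: "'t::finite prob \<Rightarrow> (nat \<Rightarrow> real) \<Rightarrow> nat \<Rightarrow> real" where
  "gradd P u i = (let x = xstar P u in
     if i < nn P then - ((Acol P i \<bullet> x) / real (nn P))
     else if i < nn P + pp P then - (Brow P (i - nn P) \<bullet> x + bv P (i - nn P))
     else - gc P (i - nn P - pp P) x)"

definition conjugate :: "(real \<Rightarrow> real) \<Rightarrow> real \<Rightarrow> ereal" where
  "conjugate F s = (SUP y. ereal (s * y - F y))"

definition hfun :: "'t::finite prob \<Rightarrow> nat \<Rightarrow> real \<Rightarrow> ereal" where
  "hfun P i w = (if i < nn P then conjugate (phi P i) w / ereal (real (nn P))
                 else if i < nn P + pp P then 0
                 else (if 0 \<le> w then 0 else \<infinity>))"

definition Dfun :: "'t::finite prob \<Rightarrow> (nat \<Rightarrow> real) \<Rightarrow> ereal" where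
  "Dfun P u = ereal (dfun P u) + (\<Sum>i<nhat P. hfun P i (u i))"

definition in_dom :: "'t::finite prob \<Rightarrow> (nat \<Rightarrow> real) \<Rightarrow> bool" where
  "in_dom P u \<longleftrightarrow> (\<forall>i. nn P + pp P \<le> i \<and> i < nhat P \<longrightarrow> 0 \<le> u i)"

fun theta :: "'t::finite prob \<Rightarrow> nat \<Rightarrow> real" where
  "theta P 0 = 1 / real (nhat P)"
| "theta P (Suc k) = (sqrt ((theta P k)^4 + 4 * (theta P k)\<^sup>2) - (theta P k)\<^sup>2) / 2"

(* 1/theta_{k-1}^2 with the convention 1/theta_{-1}^2 = nhat^2 - nhat *)
definition inv_theta_sq_prev :: "'t::finite prob \<Rightarrow> nat \<Rightarrow> real" where
  "inv_theta_sq_prev P k = (if k = 0 then (real (nhat P))\<^sup>2 - real (nhat P)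
                            else 1 / (theta P (k - 1))\<^sup>2)"

definition ztil :: "'t::finite prob \<Rightarrow> nat \<Rightarrow> (nat \<Rightarrow> real) \<Rightarrow> (nat \<Rightarrow> real) \<Rightarrow> nat \<Rightarrow> real" where
  "ztil P k v z i = (if i < nhat P then
     (SOME w. \<forall>w'.
        ereal (real (nhat P) * theta P k * Lc P i * (w - z i)\<^sup>2 + gradd P v i * (w - z i)) + hfun P i w
      \<le> ereal (real (nhat P) * theta P k * Lc P i * (w' - z i)\<^sup>2 + gradd P v i * (w' - z i)) + hfun P i w')
     else z i)"

(* ARDCA iterates (u^k, z^k) along the index sequence s = (i_0, i_1, ...) *)
fun ardca :: "'t::finite prob \<Rightarrow> (nat \<Rightarrow> real) \<Rightarrow> (nat \<Rightarrow> nat) \<Rightarrow> nat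
              \<Rightarrow> (nat \<Rightarrow> real) \<times> (nat \<Rightarrow> real)" where
  "ardca P u0 s 0 = (u0, u0)"
| "ardca P u0 s (Suc k) =
     (let (u, z) = ardca P u0 s k;
          v = (\<lambda>i. theta P k * z i + (1 - theta P k) * u i);
          zt = ztil P k v z;
          z' = z(s k := zt (s k));
          u' = (\<lambda>i. v i + real (nhat P) * theta P k * (z' i - z i))
      in (u', z'))"

definition u_it where "u_it P u0 s k = fst (ardca P u0 s k)"
definition z_it where "z_it P u0 s k = snd (ardca P u0 s k)"
definition v_it where
  "v_it P u0 s k = (\<lambda>i. theta P k * z_it P u0 s k i + (1 - theta P k) * u_it P u0 s k i)"
definition zt_it where
  "zt_it P u0 s k = ztil P k (v_it P u0 s k) (z_it P u0 s k)"

definition y_it :: "'t::finite prob \<Rightarrow> (nat \<Rightarrow> real) \<Rightarrow> (nat \<Rightarrow> nat) \<Rightarrow> nat \<Rightarrow> nat \<Rightarrow> real" where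
  "y_it P u0 s k i = - 2 * real (nhat P) * theta P k * Lc P i * (zt_it P u0 s k i - z_it P u0 s k i)
                     - gradd P (v_it P u0 s k) i"

definition xhat :: "'t::finite prob \<Rightarrow> (nat \<Rightarrow> real) \<Rightarrow> (nat \<Rightarrow> nat) \<Rightarrow> nat \<Rightarrow> nat \<Rightarrow> real^'t" where
  "xhat P u0 s K0 K = (1 / (\<Sum>k=K0..K. 1 / theta P k)) *\<^sub>R
      (\<Sum>k=K0..K. (1 / theta P k) *\<^sub>R xstar P (v_it P u0 s k))"

definition yhat :: "'t::finite prob \<Rightarrow> (nat \<Rightarrow> real) \<Rightarrow> (nat \<Rightarrow> nat) \<Rightarrow> nat \<Rightarrow> nat \<Rightarrow> nat \<Rightarrow> real" where
  "yhat P u0 s K0 K i = (\<Sum>k=K0..K. real (nn P) * y_it P u0 s k i / theta P k)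
                        / (\<Sum>k=K0..K. 1 / theta P k)"

definition delta_inner :: "'t::finite prob \<Rightarrow> real^'t \<Rightarrow> (nat \<Rightarrow> real) \<Rightarrow> (nat \<Rightarrow> real) \<Rightarrow> real" where
  "delta_inner P x y u = (\<Sum>i<nn P. ((Acol P i \<bullet> x - y i) / real (nn P)) * u i)
     + (\<Sum>j<pp P. (Brow P j \<bullet> x + bv P j) * u (nn P + j))
     + (\<Sum>i<mm P. gc P i x * u (nn P + pp P + i))"

definition phisum :: "'t::finite prob \<Rightarrow> (nat \<Rightarrow> real) \<Rightarrow> real" where
  "phisum P y = (\<Sum>i<nn P. phi P i (y i))"

(* xi_K = (i_0,...,i_K), i.i.d. uniform on {0..<nhat}; expectation = average *)
definition seqs :: "'t::finite prob \<Rightarrow> nat \<Rightarrow> (nat \<Rightarrow> nat) set" where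
  "seqs P K = PiE {0..K} (\<lambda>_. {..<nhat P})"

definition Exp :: "'t::finite prob \<Rightarrow> nat \<Rightarrow> ((nat \<Rightarrow> nat) \<Rightarrow> ereal) \<Rightarrow> ereal" where
  "Exp P K F = (\<Sum>s\<in>seqs P K. F s) / ereal (real (card (seqs P K)))"

end

theory Submission
  imports Defs
begin

lemma le_of_small_slack:
  fixes A B C :: real
  assumes "\<And>t. 0 < t \<Longrightarrow> t \<le> 1 \<Longrightarrow> A \<le> B + t * C"
  shows "A \<le> B"
proof (rule ccontr)
  assume nle: "\<not> A \<le> B"
  show False
  proof (cases "C \<le> 0")
    case True
    have "A \<le> B + 1 * C" using assms[of 1] by simp
    then show False using True nle by simp
  next
    case False
    define t where "t = min 1 ((A - B) / (2 * C))"
    have t0: "0 < t" using False nle by (simp add: t_def)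
    have t1: "t \<le> 1" by (simp add: t_def)
    have "t * C \<le> (A - B) / (2 * C) * C"
      using False by (intro mult_right_mono) (auto simp: t_def)
    also have "\<dots> = (A - B) / 2" using False by (simp add: field_simps)
    finally have "t * C \<le> (A - B) / 2" .
    moreover have "A \<le> B + t * C" using assms[OF t0 t1] .
    ultimately have "A - B \<le> (A - B) / 2" by linarith
    then show False using nle by (simp add: field_simps)
  qed
qed

lemma theta_step_props:
  fixes a :: real
  assumes "0 < a" "a \<le> 1"
  defines "b \<equiv> (sqrt (a^4 + 4 * a\<^sup>2) - a\<^sup>2) / 2"
  shows "0 < b" "b < 1" "b\<^sup>2 = (1 - b) * a\<^sup>2" "b \<le> a"
proof -
  have s0: "0 \<le> a^4 + 4 * a\<^sup>2" by simp
  have sq: "(sqrt (a^4 + 4 * a\<^sup>2))\<^sup>2 = a^4 + 4 * a\<^sup>2" using s0 by simp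
  have "a\<^sup>2 < sqrt (a^4 + 4 * a\<^sup>2)"
  proof (rule real_less_rsqrt)
    show "(a\<^sup>2)\<^sup>2 < a ^ 4 + 4 * a\<^sup>2" using assms by (simp add: power_even_eq)
  qed
  then show b0: "0 < b" by (simp add: b_def)
  have "sqrt (a^4 + 4 * a\<^sup>2) < 2 + a\<^sup>2"
  proof (rule real_sqrt_less_iff[THEN iffD2, THEN order.strict_trans2])
    show "a ^ 4 + 4 * a\<^sup>2 < (2 + a\<^sup>2)\<^sup>2" by (simp add: power2_eq_square power4_eq_xxxx algebra_simps)
    show "sqrt ((2 + a\<^sup>2)\<^sup>2) \<le> 2 + a\<^sup>2" by simp
  qed
  then show b1: "b < 1" by (simp add: b_def)
  have "2 * b = sqrt (a^4 + 4 * a\<^sup>2) - a\<^sup>2" unfolding b_def by simp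
  then have "2 * b + a\<^sup>2 = sqrt (a^4 + 4 * a\<^sup>2)" by linarith
  then have "(2 * b + a\<^sup>2)\<^sup>2 = a^4 + 4 * a\<^sup>2" using sq by simp
  then show eq: "b\<^sup>2 = (1 - b) * a\<^sup>2"
    by (simp add: power2_eq_square power4_eq_xxxx algebra_simps)
  have "0 \<le> b * a\<^sup>2" using b0 by simp
  then have "b\<^sup>2 \<le> a\<^sup>2" using eq by (simp add: algebra_simps)
  then show "b \<le> a" using b0 assms by (simp add: power2_le_iff_abs_le)
qed

declare theta.simps(2)[simp del]

lemma theta_basic:
  assumes N: "1 \<le> nhat P"
  shows "0 < theta P k \<and> theta P k \<le> 1 / real (nhat P)"
proof (induction k)
  case 0
  then show ?case using N by simp
next
  case (Suc k)
  have le: "theta P k \<le> 1 / real (nhat P)" and pos: "0 < theta P k" using Suc by auto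
  have "1 / real (nhat P) \<le> 1" using N by simp
  then have a1: "theta P k \<le> 1" using le by linarith
  have b: "theta P (Suc k) = (sqrt ((theta P k)^4 + 4 * (theta P k)\<^sup>2) - (theta P k)\<^sup>2) / 2"
    by (rule theta.simps(2))
  have "0 < theta P (Suc k)" unfolding b by (rule theta_step_props(1)[OF pos a1])
  moreover have "theta P (Suc k) \<le> theta P k" unfolding b by (rule theta_step_props(4)[OF pos a1])
  ultimately show ?case using le by linarith
qed

lemma theta_pos: "1 \<le> nhat P \<Longrightarrow> 0 < theta P k"
  using theta_basic by blast

lemma theta_le: "1 \<le> nhat P \<Longrightarrow> theta P k \<le> 1 / real (nhat P)"
  using theta_basic by blast

lemma theta_le1: "1 \<le> nhat P \<Longrightarrow> theta P k \<le> 1"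
  using theta_le[of P k] by (smt (verit) divide_le_eq_1 of_nat_1 of_nat_le_iff)

lemma theta_Nle1: "1 \<le> nhat P \<Longrightarrow> real (nhat P) * theta P k \<le> 1"
  using theta_le[of P k] by (simp add: field_simps)

lemma theta_rec:
  assumes "1 \<le> nhat P"
  shows "(theta P (Suc k))\<^sup>2 = (1 - theta P (Suc k)) * (theta P k)\<^sup>2"
  using theta_step_props(3)[of "theta P k"] theta_pos[OF assms] theta_le1[OF assms] by (simp add: theta.simps(2))

lemma theta_Suc_le:
  assumes "1 \<le> nhat P"
  shows "theta P (Suc k) \<le> theta P k"
  using theta_step_props(4)[of "theta P k"] theta_pos[OF assms] theta_le1[OF assms] by (simp add: theta.simps(2))

lemma itsp_eq:
  assumes N: "1 \<le> nhat P"
  shows "inv_theta_sq_prev P k = (1 - theta P k) / (theta P k)\<^sup>2"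
proof (cases k)
  case 0
  have "real (nhat P) > 0" using N by simp
  then show ?thesis using 0 by (simp add: inv_theta_sq_prev_def field_simps power2_eq_square)
next
  case (Suc j)
  have r: "(theta P (Suc j))\<^sup>2 = (1 - theta P (Suc j)) * (theta P j)\<^sup>2" using theta_rec[OF N] .
  have p: "theta P j > 0" "theta P (Suc j) > 0" using theta_pos[OF N] by auto
  have lt1: "theta P (Suc j) < 1"
    using theta_step_props(2)[of "theta P j"] p theta_le1[OF N, of j] by (simp add: theta.simps(2))
  have "(1 - theta P (Suc j)) / (theta P (Suc j))\<^sup>2 = (1 - theta P (Suc j)) / ((1 - theta P (Suc j)) * (theta P j)\<^sup>2)"
    by (simp only: r)
  also have "\<dots> = 1 / (theta P j)\<^sup>2" using lt1 by simp
  finally show ?thesis using Suc by (simp add: inv_theta_sq_prev_def)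
qed

lemma itsp_Suc: "inv_theta_sq_prev P (Suc k) = 1 / (theta P k)\<^sup>2"
  by (simp add: inv_theta_sq_prev_def)

lemma itsp_diff:
  assumes N: "1 \<le> nhat P"
  shows "1 / (theta P k)\<^sup>2 - inv_theta_sq_prev P k = 1 / theta P k"
  using theta_pos[OF N, of k] by (simp add: itsp_eq[OF N] field_simps power2_eq_square)

lemma itsp_nonneg:
  assumes N: "1 \<le> nhat P"
  shows "0 \<le> inv_theta_sq_prev P k"
  using theta_pos[OF N, of k] theta_le1[OF N, of k] by (simp add: itsp_eq[OF N])

lemma sum_inv_theta:
  assumes N: "1 \<le> nhat P" and "K0 \<le> K"
  shows "(\<Sum>k=K0..K. 1 / theta P k) = 1 / (theta P K)\<^sup>2 - inv_theta_sq_prev P K0"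
  using assms(2)
proof (induction K)
  case 0
  then show ?case using itsp_diff[OF N, of 0] by simp
next
  case (Suc K)
  show ?case
  proof (cases "K0 = Suc K")
    case True
    then show ?thesis using itsp_diff[OF N, of "Suc K"] by simp
  next
    case False
    then have "K0 \<le> K" using Suc by simp
    then have "(\<Sum>k=K0..Suc K. 1 / theta P k) = 1 / (theta P K)\<^sup>2 - inv_theta_sq_prev P K0 + 1 / theta P (Suc K)"
      using Suc by simp
    also have "\<dots> = 1 / (theta P (Suc K))\<^sup>2 - inv_theta_sq_prev P K0"
      using itsp_diff[OF N, of "Suc K"] itsp_Suc[of P K] by simp
    finally show ?thesis .
  qed
qed

definition alph :: "'t::finite prob \<Rightarrow> nat \<Rightarrow> real" where
  "alph P k = (if k = 0 then 1 else real (nhat P) * theta P (k - 1))"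

lemma alph_bounds:
  assumes N: "1 \<le> nhat P"
  shows "0 \<le> alph P k" "alph P k \<le> 1"
  using theta_pos[OF N] theta_Nle1[OF N] by (auto simp: alph_def less_imp_le)

lemma alph_Suc: "alph P (Suc k) = real (nhat P) * theta P k"
  by (simp add: alph_def)

lemma alph_cond:
  assumes N: "1 \<le> nhat P"
  shows "(real (nhat P) - 1) * theta P k \<le> (1 - theta P k) * alph P k"
proof (cases k)
  case 0
  have "real (nhat P) > 0" using N by simp
  then show ?thesis using 0 by (simp add: alph_def field_simps)
next
  case (Suc j)
  define t where "t = theta P (Suc j)"
  define a where "a = theta P j"
  define NN where "NN = real (nhat P)"
  have t0: "0 < t" and a0: "0 < a" using theta_pos[OF N] by (auto simp: t_def a_def)
  have tN: "NN * t \<le> 1" using theta_Nle1[OF N] by (simp add: t_def NN_def)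
  have rec: "t\<^sup>2 = (1 - t) * a\<^sup>2" using theta_rec[OF N] by (simp add: t_def a_def)
  have N1: "NN \<ge> 1" using N by (simp add: NN_def)
  have key: "(NN - 1) * a \<le> NN * t"
  proof (rule ccontr)
    assume "\<not> (NN - 1) * a \<le> NN * t"
    then have lt: "NN * t < (NN - 1) * a" by simp
    have "0 \<le> NN * t" using t0 N1 by simp
    then have "(NN * t)\<^sup>2 < ((NN - 1) * a)\<^sup>2" using lt by (simp add: power_strict_mono)
    also have "\<dots> = (NN - 1) * (NN - 1) * a\<^sup>2" by (simp add: power2_eq_square)
    also have "\<dots> \<le> (NN - 1) * NN * a\<^sup>2" using N1 by (intro mult_right_mono mult_left_mono) auto
    also have "\<dots> \<le> NN * NN * (1 - t) * a\<^sup>2"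
    proof -
      have "NN - 1 \<le> NN * (1 - t)" using tN by (simp add: algebra_simps)
      then have "(NN - 1) * NN \<le> NN * (1 - t) * NN" using N1 by (intro mult_right_mono) auto
      then show ?thesis by (intro mult_right_mono) (auto simp: algebra_simps)
    qed
    also have "\<dots> = NN * NN * ((1 - t) * a\<^sup>2)" by (simp add: algebra_simps)
    also have "\<dots> = NN * NN * t\<^sup>2" using rec by simp
    also have "\<dots> = (NN * t)\<^sup>2" by (simp add: power2_eq_square)
    finally show False by simp
  qed
  have "(1 - t) * (NN * a) * a = NN * ((1 - t) * a\<^sup>2)" by (simp add: power2_eq_square algebra_simps)
  also have "\<dots> = NN * t\<^sup>2" using rec by simp
  also have "\<dots> \<ge> (NN - 1) * a * t" using key t0 by (simp add: power2_eq_square mult_right_mono mult.assoc[symmetric])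
  finally have "(NN - 1) * t * a \<le> (1 - t) * (NN * a) * a" by (simp add: algebra_simps)
  then have "(NN - 1) * t \<le> (1 - t) * (NN * a)" using a0 by simp
  then show ?thesis using Suc by (simp add: alph_def t_def a_def NN_def)
qed


lemma convex_subgradient_exists:
  fixes f :: "'a::euclidean_space \<Rightarrow> real"
  assumes cv: "convex_on UNIV f"
  shows "\<exists>sg. \<forall>y. f x + sg \<bullet> (y - x) \<le> f y"
proof -
  define S where "S = {p :: 'a \<times> real. f (fst p) \<le> snd p}"
  have cS: "convex S"
    unfolding convex_def S_def
  proof (clarsimp)
    fix a :: 'a and b :: real and c :: 'a and d :: real and u v :: real
    assume h: "f a \<le> b" "f c \<le> d" "0 \<le> u" "0 \<le> v" "u + v = 1"
    have "f (u *\<^sub>R a + v *\<^sub>R c) \<le> u * f a + v * f c"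
      using cv h(3-5) unfolding convex_on_def by auto
    also have "\<dots> \<le> u * b + v * d" using h by (intro add_mono mult_left_mono) auto
    finally show "f (u *\<^sub>R a + v *\<^sub>R c) \<le> u * b + v * d" .
  qed
  have xS: "(x, f x) \<in> S" by (simp add: S_def)
  have notri: "(x, f x) \<notin> rel_interior S"
  proof
    assume "(x, f x) \<in> rel_interior S"
    then obtain e where e0: "e > 0" and sub: "cball (x, f x) e \<inter> affine hull S \<subseteq> S"
      by (auto simp: mem_rel_interior_cball)
    have q1: "(x, f x + e) \<in> affine hull S" by (rule hull_inc) (simp add: S_def e0 less_imp_le)
    have q2: "(x, f x) \<in> affine hull S" by (rule hull_inc) (rule xS)
    have "(2::real) *\<^sub>R (x, f x) + (-1::real) *\<^sub>R (x, f x + e) \<in> affine hull S"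
    proof -
      have "\<And>p q u v. p \<in> affine hull S \<Longrightarrow> q \<in> affine hull S \<Longrightarrow> u + v = 1 \<Longrightarrow> u *\<^sub>R p + v *\<^sub>R q \<in> affine hull S"
        using affine_affine_hull[of S] unfolding affine_def by blast
      moreover have "(2::real) + (-1) = 1" by simp
      ultimately show ?thesis using q1 q2 by blast
    qed
    moreover have "(2::real) *\<^sub>R (x, f x) + (-1::real) *\<^sub>R (x, f x + e) = (x, f x - e)"
      by (simp add: algebra_simps scaleR_2)
    ultimately have "(x, f x - e) \<in> affine hull S" by simp
    moreover have "(x, f x - e) \<in> cball (x, f x) e"
      using e0 by (simp add: dist_Pair_Pair dist_real_def)
    ultimately have "(x, f x - e) \<in> S" using sub by blast
    then show False using e0 by (simp add: S_def)
  qed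
  obtain a where a0: "a \<noteq> 0" and sup: "\<And>y. y \<in> S \<Longrightarrow> a \<bullet> (x, f x) \<le> a \<bullet> y"
    and "\<And>y. y \<in> rel_interior S \<Longrightarrow> a \<bullet> (x, f x) < a \<bullet> y"
    using supporting_hyperplane_rel_boundary[OF cS xS notri] by metis
  obtain a1 a2 where aa: "a = (a1, a2)" by (cases a)
  have ineq: "a1 \<bullet> x + a2 * f x \<le> a1 \<bullet> y + a2 * r" if "f y \<le> r" for y r
    using sup[of "(y, r)"] that by (simp add: S_def aa)
  have a2nn: "a2 \<ge> 0"
    using ineq[of x "f x + 1"] by (simp add: algebra_simps)
  have a2pos: "a2 > 0"
  proof (rule ccontr)
    assume "\<not> a2 > 0"
    then have a20: "a2 = 0" using a2nn by simp
    have "a1 \<bullet> x \<le> a1 \<bullet> (x - a1)" using ineq[of "x - a1" "f (x - a1)"] a20 by simp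
    then have "a1 \<bullet> a1 \<le> 0" by (simp add: inner_diff_right)
    then have "a1 = 0" using inner_gt_zero_iff[of a1] by linarith
    then show False using a0 aa a20 by (simp add: zero_prod_def)
  qed
  show ?thesis
  proof (intro exI allI)
    fix y
    have "a1 \<bullet> x + a2 * f x \<le> a1 \<bullet> y + a2 * f y" using ineq[of y "f y"] by simp
    then have "a2 * (f x - (1 / a2) * (a1 \<bullet> (y - x))) \<le> a2 * f y"
      using a2pos by (simp add: algebra_simps inner_diff_right)
    then have "f x - (1 / a2) * (a1 \<bullet> (y - x)) \<le> f y" using a2pos by simp
    then show "f x + (- (1 / a2) *\<^sub>R a1) \<bullet> (y - x) \<le> f y" by simp
  qed
qed

lemma subgrad_bound_lipschitz:
  fixes g :: "'a::euclidean_space \<Rightarrow> real"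
  assumes cv: "convex_on UNIV g"
    and bd: "\<forall>x sg. (\<forall>y. g x + sg \<bullet> (y - x) \<le> g y) \<longrightarrow> norm sg \<le> Lb"
  shows "\<bar>g x - g y\<bar> \<le> Lb * norm (x - y)" "0 \<le> Lb"
proof -
  obtain sx where sx: "\<forall>z. g x + sx \<bullet> (z - x) \<le> g z" using convex_subgradient_exists[OF cv] by blast
  obtain sy where sy: "\<forall>z. g y + sy \<bullet> (z - y) \<le> g z" using convex_subgradient_exists[OF cv] by blast
  have nx: "norm sx \<le> Lb" using bd sx by blast
  have ny: "norm sy \<le> Lb" using bd sy by blast
  show "0 \<le> Lb" using nx norm_ge_zero order_trans by blast
  have "- (sx \<bullet> (y - x)) \<le> norm sx * norm (y - x)"
    using norm_cauchy_schwarz[of "-sx" "y - x"] by simp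
  also have "\<dots> \<le> Lb * norm (x - y)" using nx by (simp add: norm_minus_commute mult_right_mono)
  finally have 1: "g x - g y \<le> Lb * norm (x - y)" using sx[rule_format, of y] by simp
  have "- (sy \<bullet> (x - y)) \<le> norm sy * norm (x - y)"
    using norm_cauchy_schwarz[of "-sy" "x - y"] by simp
  also have "\<dots> \<le> Lb * norm (x - y)" using ny by (simp add: mult_right_mono)
  finally have 2: "g y - g x \<le> Lb * norm (x - y)" using sy[rule_format, of x] by simp
  show "\<bar>g x - g y\<bar> \<le> Lb * norm (x - y)" using 1 2 by simp
qed

lemma coercive_min:
  fixes F :: "'a::euclidean_space \<Rightarrow> real"
  assumes cont: "continuous_on UNIV F" and co: "\<And>x. R < norm x \<Longrightarrow> F 0 < F x"
  shows "\<exists>x. \<forall>y. F x \<le> F y"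
proof -
  have "compact (cball (0::'a) (max R 0))" by simp
  moreover have "cball (0::'a) (max R 0) \<noteq> {}" by simp
  moreover have "continuous_on (cball 0 (max R 0)) F" using cont by (rule continuous_on_subset) simp
  ultimately obtain x where xin: "x \<in> cball 0 (max R 0)" and xm: "\<forall>y\<in>cball 0 (max R 0). F x \<le> F y"
    using continuous_attains_inf by blast
  have "F x \<le> F y" for y
  proof (cases "y \<in> cball 0 (max R 0)")
    case True then show ?thesis using xm by blast
  next
    case False
    then have "R < norm y" by auto
    then have "F 0 < F y" by (rule co)
    moreover have "F x \<le> F 0" using xm by simp
    ultimately show ?thesis by simp
  qed
  then show ?thesis by blast
qed

lemma lipschitz_lower:
  fixes \<phi> :: "real \<Rightarrow> real"
  assumes "M-lipschitz_on UNIV \<phi>"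
  shows "\<phi> 0 - M * \<bar>y\<bar> \<le> \<phi> y" "0 \<le> M"
proof -
  have "dist (\<phi> y) (\<phi> 0) \<le> M * dist y 0" using assms unfolding lipschitz_on_def by blast
  then show "\<phi> 0 - M * \<bar>y\<bar> \<le> \<phi> y" by (simp add: dist_real_def)
  show "0 \<le> M" using assms unfolding lipschitz_on_def by blast
qed

lemma prox1d:
  fixes \<phi> :: "real \<Rightarrow> real"
  assumes cvx: "convex_on UNIV \<phi>" and lip: "M-lipschitz_on UNIV \<phi>" and lam: "0 < lam"
  shows "\<exists>a. \<forall>y. \<phi> a + (z' - lam * a) * (y - a) \<le> \<phi> y"
proof -
  define \<psi> where "\<psi> y = \<phi> y + lam / 2 * y\<^sup>2 - z' * y" for y
  have cphi: "continuous_on UNIV \<phi>" using convex_on_continuous[OF open_UNIV cvx] .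
  have cpsi: "continuous_on UNIV \<psi>" unfolding \<psi>_def by (intro continuous_intros cphi)
  define R where "R = 2 * (M + \<bar>z'\<bar>) / lam"
  have M0: "0 \<le> M" using lipschitz_lower(2)[OF lip] .
  have co: "\<psi> 0 < \<psi> y" if "R < norm y" for y
  proof -
    have ay: "R < \<bar>y\<bar>" using that by simp
    have R0: "0 \<le> R" using M0 lam by (simp add: R_def)
    have ypos: "0 < \<bar>y\<bar>" using ay R0 by linarith
    have "2 * (M + \<bar>z'\<bar>) < lam * \<bar>y\<bar>" using ay lam by (simp add: R_def field_simps)
    then have "2 * (M + \<bar>z'\<bar>) * \<bar>y\<bar> < lam * \<bar>y\<bar> * \<bar>y\<bar>"
      using ypos by (rule mult_strict_right_mono)
    moreover have "\<bar>y\<bar> * \<bar>y\<bar> = y\<^sup>2" by (simp add: power2_eq_square abs_mult_self_eq)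
    ultimately have lt: "(M + \<bar>z'\<bar>) * \<bar>y\<bar> < lam / 2 * y\<^sup>2"
      by (simp add: algebra_simps)
    have "z' * y \<le> \<bar>z'\<bar> * \<bar>y\<bar>" by (metis abs_ge_self abs_mult)
    then have "M * \<bar>y\<bar> + z' * y < lam / 2 * y\<^sup>2" using lt by (simp add: algebra_simps)
    then show ?thesis using lipschitz_lower(1)[OF lip, of y] unfolding \<psi>_def by simp
  qed
  obtain a where am: "\<forall>y. \<psi> a \<le> \<psi> y" using coercive_min[OF cpsi co] by blast
  show ?thesis
  proof (intro exI allI)
    fix y
    have "\<phi> a + (z' - lam * a) * (y - a) \<le> \<phi> y + t * (lam / 2 * (y - a)\<^sup>2)" if t0: "0 < t" and t1: "t \<le> 1" for t
    proof -
      have "\<psi> a \<le> \<psi> (a + t * (y - a))" using am by blast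
      moreover have "\<phi> (a + t * (y - a)) \<le> (1 - t) * \<phi> a + t * \<phi> y"
      proof -
        have "\<phi> ((1 - t) *\<^sub>R a + t *\<^sub>R y) \<le> (1 - t) * \<phi> a + t * \<phi> y"
          using cvx t0 t1 unfolding convex_on_def by simp
        moreover have "(1 - t) *\<^sub>R a + t *\<^sub>R y = a + t * (y - a)" by (simp add: algebra_simps)
        ultimately show ?thesis by simp
      qed
      ultimately have "\<phi> a + lam / 2 * a\<^sup>2 - z' * a \<le> (1 - t) * \<phi> a + t * \<phi> y + lam / 2 * (a + t * (y - a))\<^sup>2 - z' * (a + t * (y - a))"
        unfolding \<psi>_def by simp
      moreover have "((1 - t) * \<phi> a + t * \<phi> y + lam / 2 * (a + t * (y - a))\<^sup>2 - z' * (a + t * (y - a)))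
          - (\<phi> a + lam / 2 * a\<^sup>2 - z' * a)
          = t * (\<phi> y + t * (lam / 2 * (y - a)\<^sup>2)) - t * (\<phi> a + (z' - lam * a) * (y - a))"
        by (simp add: power2_eq_square algebra_simps)
      ultimately have "t * (\<phi> a + (z' - lam * a) * (y - a)) \<le> t * (\<phi> y + t * (lam / 2 * (y - a)\<^sup>2))"
        by linarith
      then show ?thesis using t0 by simp
    qed
    then show "\<phi> a + (z' - lam * a) * (y - a) \<le> \<phi> y" by (rule le_of_small_slack)
  qed
qed

lemma conj_lower:
  "ereal (w * a - \<phi> a) \<le> conjugate \<phi> w"
  unfolding conjugate_def by (rule SUP_upper2[of a]) auto

lemma conj_not_minf: "conjugate \<phi> w \<noteq> -\<infinity>"
  using conj_lower[of w 0 \<phi>] by auto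

lemma conj_at_subgrad:
  assumes "\<forall>y. \<phi> a + s * (y - a) \<le> \<phi> y"
  shows "conjugate \<phi> s = ereal (s * a - \<phi> a)"
proof (rule antisym)
  show "conjugate \<phi> s \<le> ereal (s * a - \<phi> a)"
    unfolding conjugate_def
  proof (rule SUP_least)
    fix y
    have "s * y - \<phi> y \<le> s * a - \<phi> a" using assms[rule_format, of y] by (simp add: algebra_simps)
    then show "ereal (s * y - \<phi> y) \<le> ereal (s * a - \<phi> a)" by simp
  qed
  show "ereal (s * a - \<phi> a) \<le> conjugate \<phi> s" by (rule conj_lower)
qed

lemma conj_convex2:
  assumes l0: "0 \<le> l" and l1: "l \<le> 1"
  shows "conjugate \<phi> (l * a + (1 - l) * b) \<le> ereal l * conjugate \<phi> a + ereal (1 - l) * conjugate \<phi> b"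
  unfolding conjugate_def[of \<phi> "l * a + (1 - l) * b"]
proof (rule SUP_least)
  fix y
  have e: "(l * a + (1 - l) * b) * y - \<phi> y = l * (a * y - \<phi> y) + (1 - l) * (b * y - \<phi> y)"
    by (simp add: algebra_simps)
  have "ereal (l * (a * y - \<phi> y)) \<le> ereal l * conjugate \<phi> a"
    using ereal_mult_left_mono[OF conj_lower[of a y \<phi>], of "ereal l"] l0 by (simp add: mult.commute)
  moreover have "ereal ((1 - l) * (b * y - \<phi> y)) \<le> ereal (1 - l) * conjugate \<phi> b"
    using ereal_mult_left_mono[OF conj_lower[of b y \<phi>], of "ereal (1 - l)"] l1 by (simp add: mult.commute)
  ultimately have "ereal (l * (a * y - \<phi> y)) + ereal ((1 - l) * (b * y - \<phi> y)) \<le> ereal l * conjugate \<phi> a + ereal (1 - l) * conjugate \<phi> b"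
    by (rule add_mono)
  then show "ereal ((l * a + (1 - l) * b) * y - \<phi> y) \<le> ereal l * conjugate \<phi> a + ereal (1 - l) * conjugate \<phi> b"
    unfolding e by simp
qed


lemma sum_lessThan_add_nat:
  "(\<Sum>i<a+b. F i) = (\<Sum>i<a. F i) + (\<Sum>j<b. F (a+j))" for F :: "nat \<Rightarrow> 'a::comm_monoid_add"
  by (induction b) (simp_all add: add.assoc)

lemma sum_split3:
  "(\<Sum>i<a+b+c. F i) = (\<Sum>i<a. F i) + (\<Sum>j<b. F (a+j)) + (\<Sum>i<c. F (a+b+i))" for F :: "nat \<Rightarrow> 'a::comm_monoid_add"
  by (simp add: sum_lessThan_add_nat)

lemma sum_upd_mult:
  fixes f g :: "nat \<Rightarrow> real"
  assumes "i \<in> A" "finite A"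
  shows "(\<Sum>j\<in>A. (f(i := a)) j * g j) = (\<Sum>j\<in>A. f j * g j) + (a - f i) * g i"
proof -
  have "(\<Sum>j\<in>A. (f(i := a)) j * g j) = (f(i := a)) i * g i + (\<Sum>j\<in>A - {i}. (f(i := a)) j * g j)"
    by (rule sum.remove[OF assms(2,1)])
  then have "(\<Sum>j\<in>A. (f(i := a)) j * g j) = a * g i + (\<Sum>j\<in>A - {i}. (f(i := a)) j * g j)"
    by simp
  also have "(\<Sum>j\<in>A - {i}. (f(i := a)) j * g j) = (\<Sum>j\<in>A - {i}. f j * g j)"
    by (rule sum.cong) auto
  also have "(\<Sum>j\<in>A. f j * g j) = f i * g i + (\<Sum>j\<in>A - {i}. f j * g j)"
    by (rule sum.remove[OF assms(2,1)])
  ultimately show ?thesis by (simp add: algebra_simps)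
qed

definition cf :: "'t::finite prob \<Rightarrow> nat \<Rightarrow> real^'t \<Rightarrow> real" where
  "cf P i x = (if i < nn P then (Acol P i \<bullet> x) / real (nn P)
     else if i < nn P + pp P then Brow P (i - nn P) \<bullet> x + bv P (i - nn P)
     else gc P (i - nn P - pp P) x)"

definition lc :: "'t::finite prob \<Rightarrow> nat \<Rightarrow> real" where
  "lc P i = (if i < nn P then norm (Acol P i) / real (nn P)
     else if i < nn P + pp P then norm (Brow P (i - nn P))
     else Lg P (i - nn P - pp P))"

lemma Lagr_alt: "Lagr P x u = fobj P x + (\<Sum>i<nhat P. u i * cf P i x)"
  unfolding Lagr_def nhat_def sum_split3 by (simp add: cf_def)

lemma gradd_alt: "gradd P u i = - cf P i (xstar P u)"
  by (simp add: gradd_def cf_def Let_def)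

lemma Lc_nonneg: "0 \<le> Lc P i" if "0 < mu P"
  using that by (simp add: Lc_def)

lemma affine_convex_on:
  assumes "\<And>x y u. F (u *\<^sub>R x + (1 - u) *\<^sub>R y) = u * F x + (1 - u) * F y"
  shows "convex_on UNIV F"
  unfolding convex_on_def
proof (intro conjI ballI allI impI)
  show "convex (UNIV :: 'a set)" by simp
  fix x y :: 'a and u v :: real
  assume "0 \<le> u" "0 \<le> v" "u + v = 1"
  then have "v = 1 - u" by simp
  then show "F (u *\<^sub>R x + v *\<^sub>R y) \<le> u * F x + v * F y" using assms by simp
qed

lemma convex_sum_fun:
  assumes "finite I" "\<And>i. i \<in> I \<Longrightarrow> convex_on UNIV (F i)"
  shows "convex_on UNIV (\<lambda>x. \<Sum>i\<in>I. F i x)"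
  using assms
proof (induction I rule: finite_induct)
  case empty
  then show ?case by (simp add: convex_on_const)
next
  case (insert a I)
  then show ?case by (simp add: convex_on_add)
qed

lemma sc_add:
  assumes "strongly_convex c F" "convex_on UNIV G"
  shows "strongly_convex c (\<lambda>x. F x + G x)"
  unfolding strongly_convex_def
proof (intro allI impI)
  fix x y :: 'a and s :: real
  assume s: "0 \<le> s \<and> s \<le> 1"
  have "F ((1 - s) *\<^sub>R x + s *\<^sub>R y) \<le> (1 - s) * F x + s * F y - c / 2 * s * (1 - s) * (norm (x - y))\<^sup>2"
    using assms(1) s unfolding strongly_convex_def by blast
  moreover have "G ((1 - s) *\<^sub>R x + s *\<^sub>R y) \<le> (1 - s) * G x + s * G y"
    using assms(2) s unfolding convex_on_def by auto
  ultimately show "F ((1 - s) *\<^sub>R x + s *\<^sub>R y) + G ((1 - s) *\<^sub>R x + s *\<^sub>R y)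
      \<le> (1 - s) * (F x + G x) + s * (F y + G y) - c / 2 * s * (1 - s) * (norm (x - y))\<^sup>2"
    by (simp add: algebra_simps)
qed

lemma sc_convex:
  assumes "0 \<le> c" "strongly_convex c F"
  shows "convex_on UNIV F"
  unfolding convex_on_def
proof (intro conjI ballI allI impI)
  show "convex (UNIV :: 'a set)" by simp
  fix x y :: 'a and u v :: real
  assume uv: "0 \<le> u" "0 \<le> v" "u + v = 1"
  then have u: "u = 1 - v" by simp
  have "F ((1 - v) *\<^sub>R x + v *\<^sub>R y) \<le> (1 - v) * F x + v * F y - c / 2 * v * (1 - v) * (norm (x - y))\<^sup>2"
    using assms(2) uv unfolding strongly_convex_def by simp
  moreover have "0 \<le> c / 2 * v * (1 - v) * (norm (x - y))\<^sup>2" using uv assms(1) by simp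
  ultimately show "F (u *\<^sub>R x + v *\<^sub>R y) \<le> u * F x + v * F y" using u by simp
qed

lemma sc_lower_min:
  assumes sc: "strongly_convex c F" and c0: "0 \<le> c" and mn: "\<forall>y. F x0 \<le> F y"
  shows "F x0 + c / 2 * (norm (y - x0))\<^sup>2 \<le> F y"
proof -
  define r where "r = (norm (y - x0))\<^sup>2"
  have "F x0 + c / 2 * r \<le> F y + s * (c / 2 * r)" if s0: "0 < s" and s1: "s \<le> 1" for s
  proof -
    have "F x0 \<le> F ((1 - s) *\<^sub>R x0 + s *\<^sub>R y)" using mn by blast
    also have "\<dots> \<le> (1 - s) * F x0 + s * F y - c / 2 * s * (1 - s) * (norm (x0 - y))\<^sup>2"
      using sc s0 s1 unfolding strongly_convex_def by simp
    finally have "s * F x0 \<le> s * F y - s * (c / 2 * (1 - s) * r)"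
      by (simp add: r_def norm_minus_commute algebra_simps)
    moreover have "s * (F y + s * (c / 2 * r)) - s * (F x0 + c / 2 * r) = (s * F y - s * (c / 2 * (1 - s) * r)) - s * F x0"
      by (simp add: field_simps)
    ultimately have "s * (F x0 + c / 2 * r) \<le> s * (F y + s * (c / 2 * r))"
      by linarith
    then show ?thesis using s0 by simp
  qed
  then have "F x0 + c / 2 * r \<le> F y" by (rule le_of_small_slack)
  then show ?thesis by (simp add: r_def)
qed

lemma sc_has_min:
  fixes F :: "'a::euclidean_space \<Rightarrow> real"
  assumes sc: "strongly_convex c F" and c0: "0 < c"
  shows "\<exists>x. \<forall>y. F x \<le> F y"
proof -
  have cv: "convex_on UNIV F" using sc_convex[OF _ sc] c0 by simp
  have cont: "continuous_on UNIV F" using convex_on_continuous[OF open_UNIV cv] .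
  obtain sg where sg: "\<forall>y. F 0 + sg \<bullet> (y - 0) \<le> F y" using convex_subgradient_exists[OF cv] by blast
  have low: "F 0 + sg \<bullet> x + c / 4 * (norm x)\<^sup>2 \<le> F x" for x
  proof -
    have "F ((1 - 1/2) *\<^sub>R 0 + (1/2) *\<^sub>R x) \<le> (1 - 1/2) * F 0 + (1/2) * F x - c / 2 * (1/2) * (1 - 1/2) * (norm (0 - x))\<^sup>2"
      using sc unfolding strongly_convex_def by (metis (no_types, lifting) field_sum_of_halves le_add_same_cancel2 less_eq_real_def zero_less_divide_1_iff zero_less_numeral)
    moreover have "F 0 + sg \<bullet> ((1/2) *\<^sub>R x) \<le> F ((1/2) *\<^sub>R x)" using sg[rule_format, of "(1/2) *\<^sub>R x"] by simp
    ultimately show ?thesis by (simp add: algebra_simps)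
  qed
  define R where "R = 4 * norm sg / c"
  have co: "F 0 < F x" if "R < norm x" for x
  proof -
    have R0: "0 \<le> R" using c0 by (simp add: R_def)
    have "4 * norm sg < c * norm x" using that c0 by (simp add: R_def field_simps)
    then have "4 * norm sg * norm x < c * norm x * norm x"
      using R0 that by (intro mult_strict_right_mono) auto
    then have "norm sg * norm x < c / 4 * (norm x)\<^sup>2" by (simp add: power2_eq_square)
    moreover have "- (norm sg * norm x) \<le> sg \<bullet> x" using norm_cauchy_schwarz[of "-sg" x] by simp
    ultimately show ?thesis using low[of x] by linarith
  qed
  show ?thesis by (rule coercive_min[OF cont co])
qed

locale setting =
  fixes P :: "'t::finite prob" and M :: real
  assumes n_pos: "1 \<le> nn P" and mu_pos: "0 < mu P"
    and f_sc: "strongly_convex (mu P) (fobj P)"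
    and phi_cvx: "\<forall>i < nn P. convex_on UNIV (phi P i) \<and> M-lipschitz_on UNIV (phi P i)"
    and g_cvx: "\<forall>i < mm P. convex_on UNIV (gc P i) \<and>
        (\<forall>x sg. (\<forall>y. gc P i x + sg \<bullet> (y - x) \<le> gc P i y) \<longrightarrow> norm sg \<le> Lg P i)"
    and slater: "\<exists>x. (\<forall>j < pp P. Brow P j \<bullet> x + bv P j = 0) \<and> (\<forall>i < mm P. gc P i x < 0)"
begin

lemma N_ge1: "1 \<le> nhat P" using n_pos by (simp add: nhat_def)

lemma Lc_nn: "0 \<le> Lc P i" using Lc_nonneg mu_pos by blast

lemma f_convex: "convex_on UNIV (fobj P)"
  using sc_convex[OF _ f_sc] mu_pos by simp

lemma g_lip:
  assumes "i < mm P"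
  shows "\<bar>gc P i x - gc P i y\<bar> \<le> Lg P i * norm (x - y)" "0 \<le> Lg P i"
  using subgrad_bound_lipschitz[of "gc P i" "Lg P i"] g_cvx assms by auto

lemma cf_lip:
  assumes "i < nhat P"
  shows "\<bar>cf P i x - cf P i y\<bar> \<le> lc P i * norm (x - y)"
proof -
  consider (a) "i < nn P" | (b) "nn P \<le> i" "i < nn P + pp P" | (c) "nn P + pp P \<le> i" by linarith
  then show ?thesis
  proof cases
    case a
    have "\<bar>Acol P i \<bullet> (x - y)\<bar> \<le> norm (Acol P i) * norm (x - y)" by (rule Cauchy_Schwarz_ineq2)
    then have "\<bar>Acol P i \<bullet> x - Acol P i \<bullet> y\<bar> / real (nn P) \<le> norm (Acol P i) * norm (x - y) / real (nn P)"
      by (simp add: inner_diff_right divide_right_mono)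
    then show ?thesis using a n_pos by (simp add: cf_def lc_def diff_divide_distrib[symmetric])
  next
    case b
    have "\<bar>Brow P (i - nn P) \<bullet> (x - y)\<bar> \<le> norm (Brow P (i - nn P)) * norm (x - y)" by (rule Cauchy_Schwarz_ineq2)
    then show ?thesis using b by (simp add: cf_def lc_def inner_diff_right)
  next
    case c
    have "i - nn P - pp P < mm P" using c assms by (simp add: nhat_def)
    then show ?thesis using c g_lip(1)[of "i - nn P - pp P" x y] by (simp add: cf_def lc_def)
  qed
qed

lemma lc_nonneg:
  assumes "i < nhat P"
  shows "0 \<le> lc P i"
proof -
  have "i - nn P - pp P < mm P" if "nn P + pp P \<le> i" using that assms by (simp add: nhat_def)
  then show ?thesis using g_lip(2) by (auto simp: lc_def)
qed

lemma Lc_lc: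
  assumes "i < nhat P"
  shows "Lc P i = (lc P i)\<^sup>2 / mu P"
  by (simp add: Lc_def lc_def power_divide)

lemma rest_convex:
  assumes dom: "in_dom P v"
  shows "convex_on UNIV (\<lambda>x. \<Sum>i<nhat P. v i * cf P i x)"
proof (rule convex_sum_fun)
  fix i assume "i \<in> {..<nhat P}"
  then have i: "i < nhat P" by simp
  consider (a) "i < nn P" | (b) "nn P \<le> i" "i < nn P + pp P" | (c) "nn P + pp P \<le> i" by linarith
  then show "convex_on UNIV (\<lambda>x. v i * cf P i x)"
  proof cases
    case a
    define cc where "cc = v i / real (nn P)"
    have e: "(\<lambda>x. v i * cf P i x) = (\<lambda>x. cc * (Acol P i \<bullet> x))" using a by (auto simp: cf_def cc_def)
    show ?thesis
      unfolding e by (rule affine_convex_on) (simp add: inner_add_right algebra_simps)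
  next
    case b
    define bb where "bb = Brow P (i - nn P)"
    define b0 where "b0 = bv P (i - nn P)"
    have e: "(\<lambda>x. v i * cf P i x) = (\<lambda>x. v i * (bb \<bullet> x + b0))" using b by (auto simp: cf_def bb_def b0_def)
    show ?thesis
      unfolding e by (rule affine_convex_on) (simp add: inner_add_right algebra_simps)
  next
    case c
    have v0: "0 \<le> v i" using dom c i by (simp add: in_dom_def)
    have "i - nn P - pp P < mm P" using c i by (simp add: nhat_def)
    then have "convex_on UNIV (gc P (i - nn P - pp P))" using g_cvx by blast
    then have "convex_on UNIV (\<lambda>x. v i * gc P (i - nn P - pp P) x)" using v0 by (rule convex_on_cmul[rotated])
    then show ?thesis using c by (simp add: cf_def)
  qed
qed simp

lemma Lagr_sc:
  assumes "in_dom P v"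
  shows "strongly_convex (mu P) (\<lambda>x. Lagr P x v)"
  unfolding Lagr_alt by (rule sc_add[OF f_sc rest_convex[OF assms]])

lemma xstar_min:
  assumes "in_dom P v"
  shows "Lagr P (xstar P v) v \<le> Lagr P y v"
proof -
  have "\<exists>x. \<forall>y. Lagr P x v \<le> Lagr P y v" by (rule sc_has_min[OF Lagr_sc[OF assms] mu_pos])
  then have "\<forall>y. Lagr P (xstar P v) v \<le> Lagr P y v" unfolding xstar_def by (rule someI_ex)
  then show ?thesis by blast
qed

lemma xstar_sc:
  assumes "in_dom P v"
  shows "Lagr P (xstar P v) v + mu P / 2 * (norm (y - xstar P v))\<^sup>2 \<le> Lagr P y v"
  using sc_lower_min[OF Lagr_sc[OF assms], of "xstar P v" y] mu_pos xstar_min[OF assms] by auto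

lemma d_identity:
  "dfun P v + (\<Sum>i<nhat P. gradd P v i * (w i - v i)) = - Lagr P (xstar P v) w"
proof -
  have "(\<Sum>i<nhat P. w i * cf P i (xstar P v)) = (\<Sum>i<nhat P. v i * cf P i (xstar P v)) + (\<Sum>i<nhat P. cf P i (xstar P v) * (w i - v i))"
    by (simp add: sum.distrib[symmetric] algebra_simps)
  then show ?thesis
    by (simp add: dfun_def Lagr_alt gradd_alt sum_negf)
qed

lemma d_lower:
  assumes "in_dom P w"
  shows "- Lagr P x w \<le> dfun P w"
  using xstar_min[OF assms, of x] by (simp add: dfun_def)

lemma d_convex:
  assumes "in_dom P w"
  shows "dfun P v + (\<Sum>i<nhat P. gradd P v i * (w i - v i)) \<le> dfun P w"
  unfolding d_identity by (rule d_lower[OF assms])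

lemma d_smooth:
  assumes dom: "in_dom P v" and i: "i < nhat P"
  shows "dfun P (v(i := v i + t)) \<le> dfun P v + gradd P v i * t + Lc P i / 2 * t\<^sup>2"
proof -
  define w where "w = v(i := v i + t)"
  define x0 where "x0 = xstar P v"
  define x1 where "x1 = xstar P w"
  define r where "r = norm (x1 - x0)"
  have Lw: "Lagr P x1 w = Lagr P x1 v + t * cf P i x1"
    unfolding Lagr_alt w_def using sum_upd_mult[of i "{..<nhat P}" v "v i + t" "\<lambda>j. cf P j x1"] i
    by simp
  have sc: "Lagr P x0 v + mu P / 2 * r\<^sup>2 \<le> Lagr P x1 v"
    using xstar_sc[OF dom, of x1] by (simp add: x0_def r_def)
  have lip: "\<bar>cf P i x1 - cf P i x0\<bar> \<le> lc P i * r" using cf_lip[OF i] by (simp add: r_def)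
  have lc0: "0 \<le> lc P i" by (rule lc_nonneg[OF i])
  have "- (t * (cf P i x1 - cf P i x0)) \<le> \<bar>t\<bar> * (lc P i * r)"
    using lip by (metis abs_ge_minus_self abs_mult abs_ge_zero mult_left_mono order_trans)
  also have "\<dots> \<le> (lc P i)\<^sup>2 / (2 * mu P) * t\<^sup>2 + mu P / 2 * r\<^sup>2"
  proof -
    have "0 \<le> (\<bar>t\<bar> * lc P i - mu P * r)\<^sup>2" by simp
    then have "2 * mu P * (\<bar>t\<bar> * (lc P i * r)) \<le> (lc P i)\<^sup>2 * t\<^sup>2 + (mu P)\<^sup>2 * r\<^sup>2"
      by (simp add: power2_eq_square algebra_simps)
    then have "(2 * mu P * (\<bar>t\<bar> * (lc P i * r))) / (2 * mu P) \<le> ((lc P i)\<^sup>2 * t\<^sup>2 + (mu P)\<^sup>2 * r\<^sup>2) / (2 * mu P)"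
      using mu_pos by (intro divide_right_mono) auto
    moreover have "(2 * mu P * (\<bar>t\<bar> * (lc P i * r))) / (2 * mu P) = \<bar>t\<bar> * (lc P i * r)" using mu_pos by simp
    moreover have "((lc P i)\<^sup>2 * t\<^sup>2 + (mu P)\<^sup>2 * r\<^sup>2) / (2 * mu P) = (lc P i)\<^sup>2 / (2 * mu P) * t\<^sup>2 + mu P / 2 * r\<^sup>2"
      using mu_pos by (simp add: field_simps power2_eq_square)
    ultimately show ?thesis by simp
  qed
  finally have key: "- (t * (cf P i x1 - cf P i x0)) \<le> (lc P i)\<^sup>2 / (2 * mu P) * t\<^sup>2 + mu P / 2 * r\<^sup>2" .
  have "dfun P w = - Lagr P x1 v - t * cf P i x1" unfolding dfun_def x1_def[symmetric] Lw by simp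
  also have "\<dots> \<le> - Lagr P x0 v - mu P / 2 * r\<^sup>2 - t * cf P i x1" using sc by simp
  also have "\<dots> = dfun P v + gradd P v i * t - mu P / 2 * r\<^sup>2 - t * (cf P i x1 - cf P i x0)"
    by (simp add: dfun_def gradd_alt x0_def algebra_simps)
  also have "\<dots> \<le> dfun P v + gradd P v i * t + (lc P i)\<^sup>2 / (2 * mu P) * t\<^sup>2" using key by simp
  also have "(lc P i)\<^sup>2 / (2 * mu P) = Lc P i / 2" by (simp add: Lc_lc[OF i])
  finally show ?thesis by (simp only: w_def)
qed

end


definition Hf :: "'t::finite prob \<Rightarrow> nat \<Rightarrow> real \<Rightarrow> real" where
  "Hf P j w = real_of_ereal (hfun P j w)"

definition Qf :: "'t::finite prob \<Rightarrow> nat \<Rightarrow> (nat \<Rightarrow> real) \<Rightarrow> (nat \<Rightarrow> real) \<Rightarrow> nat \<Rightarrow> real \<Rightarrow> ereal" where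
  "Qf P k v z j w = ereal (real (nhat P) * theta P k * Lc P j * (w - z j)\<^sup>2 + gradd P v j * (w - z j)) + hfun P j w"

lemma ztil_Qf: "j < nhat P \<Longrightarrow> ztil P k v z j = (SOME w. \<forall>w'. Qf P k v z j w \<le> Qf P k v z j w')"
  by (simp add: ztil_def Qf_def)

lemma ztil_min:
  assumes "j < nhat P" "\<exists>w0. \<forall>w'. Qf P k v z j w0 \<le> Qf P k v z j w'"
  shows "Qf P k v z j (ztil P k v z j) \<le> Qf P k v z j w'"
proof -
  have "\<forall>w'. Qf P k v z j (SOME w. \<forall>w'. Qf P k v z j w \<le> Qf P k v z j w') \<le> Qf P k v z j w'"
    using assms(2) by (rule someI_ex)
  then show ?thesis using ztil_Qf[OF assms(1)] by simp
qed

lemma ereal_div_pos: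
  fixes x :: ereal
  assumes "x \<noteq> -\<infinity>" "0 < n"
  shows "x / ereal n = (if x = \<infinity> then \<infinity> else ereal (real_of_ereal x / n))"
  using assms by (cases x) auto

lemma hfun_phi: "j < nn P \<Longrightarrow> hfun P j w = conjugate (phi P j) w / ereal (real (nn P))"
  by (simp add: hfun_def)

lemma hfun_eqc: "nn P \<le> j \<Longrightarrow> j < nn P + pp P \<Longrightarrow> hfun P j w = 0"
  by (simp add: hfun_def)

lemma hfun_ineq: "nn P + pp P \<le> j \<Longrightarrow> hfun P j w = (if 0 \<le> w then 0 else \<infinity>)"
  by (simp add: hfun_def)

context setting
begin

lemma hfun_phi':
  assumes "j < nn P"
  shows "hfun P j w = (if conjugate (phi P j) w = \<infinity> then \<infinity> else ereal (real_of_ereal (conjugate (phi P j) w) / real (nn P)))"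
  using hfun_phi[OF assms] ereal_div_pos[OF conj_not_minf, of "real (nn P)" "phi P j" w] n_pos by simp

lemma hfun_not_minf: "hfun P j w \<noteq> -\<infinity>"
proof -
  consider (a) "j < nn P" | (b) "nn P \<le> j" "j < nn P + pp P" | (c) "nn P + pp P \<le> j" by linarith
  then show ?thesis
    by cases (simp_all add: hfun_phi' hfun_eqc hfun_ineq)
qed

lemma hfun_fin: "hfun P j w < \<infinity> \<Longrightarrow> hfun P j w = ereal (Hf P j w)"
  using hfun_not_minf[of j w] by (cases "hfun P j w") (auto simp: Hf_def)

lemma hfun_ge_real: "ereal x \<le> hfun P j w \<Longrightarrow> hfun P j w < \<infinity> \<Longrightarrow> x \<le> Hf P j w"
  using hfun_fin by fastforce

lemma h_convex2:
  assumes fa: "hfun P j a < \<infinity>" and fb: "hfun P j b < \<infinity>" and l0: "0 \<le> l" and l1: "l \<le> 1"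
  shows "hfun P j (l * a + (1 - l) * b) < \<infinity> \<and> Hf P j (l * a + (1 - l) * b) \<le> l * Hf P j a + (1 - l) * Hf P j b"
proof -
  consider (a) "j < nn P" | (b) "nn P \<le> j" "j < nn P + pp P" | (c) "nn P + pp P \<le> j" by linarith
  then show ?thesis
  proof cases
    case a
    define C where "C = conjugate (phi P j)"
    have Ca: "C a \<noteq> \<infinity>" using fa a by (simp add: hfun_phi' C_def split: if_splits)
    have Cb: "C b \<noteq> \<infinity>" using fb a by (simp add: hfun_phi' C_def split: if_splits)
    have Ca': "C a = ereal (real_of_ereal (C a))" using Ca conj_not_minf[of "phi P j" a] by (cases "C a") (auto simp: C_def)
    have Cb': "C b = ereal (real_of_ereal (C b))" using Cb conj_not_minf[of "phi P j" b] by (cases "C b") (auto simp: C_def)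
    have le: "C (l * a + (1 - l) * b) \<le> ereal l * C a + ereal (1 - l) * C b"
      unfolding C_def by (rule conj_convex2[OF l0 l1])
    also have "\<dots> = ereal (l * real_of_ereal (C a) + (1 - l) * real_of_ereal (C b))"
      by (subst Ca', subst Cb') simp
    finally have le2: "C (l * a + (1 - l) * b) \<le> ereal (l * real_of_ereal (C a) + (1 - l) * real_of_ereal (C b))" .
    then have fin: "C (l * a + (1 - l) * b) \<noteq> \<infinity>" by auto
    have rl: "real_of_ereal (C (l * a + (1 - l) * b)) \<le> l * real_of_ereal (C a) + (1 - l) * real_of_ereal (C b)"
      using le2 fin conj_not_minf[of "phi P j" "l * a + (1 - l) * b"]
      by (cases "C (l * a + (1 - l) * b)") (auto simp: C_def)
    have np: "0 < real (nn P)" using n_pos by simp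
    have "real_of_ereal (C (l * a + (1 - l) * b)) / real (nn P) \<le> (l * real_of_ereal (C a) + (1 - l) * real_of_ereal (C b)) / real (nn P)"
      using rl np by (simp add: divide_right_mono)
    then show ?thesis using a fin Ca Cb
      by (simp add: hfun_phi' Hf_def C_def[symmetric] add_divide_distrib)
  next
    case b
    then show ?thesis by (simp add: hfun_eqc Hf_def)
  next
    case c
    have "0 \<le> a" "0 \<le> b" using fa fb c by (simp_all add: hfun_ineq split: if_splits)
    then have "0 \<le> l * a + (1 - l) * b" using l0 l1 by simp
    then show ?thesis using c \<open>0 \<le> a\<close> \<open>0 \<le> b\<close> by (simp add: hfun_ineq Hf_def)
  qed
qed

lemma theta_pos': "0 < theta P k" using theta_pos[OF N_ge1] .

lemma cpos_iff: "0 < real (nhat P) * theta P k * Lc P j \<longleftrightarrow> 0 < Lc P j"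
proof -
  have "0 < real (nhat P) * theta P k" using N_ge1 theta_pos' by simp
  then show ?thesis using Lc_nn[of j] by (simp add: zero_less_mult_iff)
qed

lemma c_zero_iff: "real (nhat P) * theta P k * Lc P j = 0 \<longleftrightarrow> Lc P j = 0"
proof -
  have "nhat P \<noteq> 0" "theta P k \<noteq> 0" using N_ge1 theta_pos'[of k] by auto
  then show ?thesis by simp
qed

lemma prox_phi:
  fixes k :: nat and v z :: "nat \<Rightarrow> real"
  assumes j: "j < nn P"
  defines "zt \<equiv> ztil P k v z j"
    and "y \<equiv> - 2 * (real (nhat P) * theta P k * Lc P j) * (ztil P k v z j - z j) - gradd P v j"
  shows "hfun P j zt < \<infinity> \<and> (\<forall>w. ereal (Hf P j zt + y * (w - zt)) \<le> hfun P j w)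
     \<and> Hf P j zt = y * zt - phi P j (real (nn P) * y) / real (nn P)"
proof -
  define c where "c = real (nhat P) * theta P k * Lc P j"
  define g where "g = gradd P v j"
  define n' where "n' = real (nn P)"
  define \<phi> where "\<phi> = phi P j"
  define C where "C = conjugate \<phi>"
  have jN: "j < nhat P" using j by (simp add: nhat_def)
  have n'0: "0 < n'" using n_pos by (simp add: n'_def)
  have n'nz: "n' \<noteq> 0" using n'0 by simp
  have cvx: "convex_on UNIV \<phi>" and lip: "M-lipschitz_on UNIV \<phi>" using phi_cvx j by (auto simp: \<phi>_def)
  have hC: "hfun P j w = C w / ereal n'" for w by (simp add: hfun_phi[OF j] C_def \<phi>_def n'_def)
  have Qf_eq: "Qf P k v z j w = ereal (c * (w - z j)\<^sup>2 + g * (w - z j)) + hfun P j w" for w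
    by (simp add: Qf_def c_def g_def)
  have c0: "0 \<le> c" using Lc_nn[of j] N_ge1 theta_pos'[of k] by (simp add: c_def)
  show ?thesis
  proof (cases "c = 0")
    case False
    then have cp: "0 < c" using c0 by simp
    define lam where "lam = 1 / (2 * n' * c)"
    have lam0: "0 < lam" using cp n'0 by (simp add: lam_def)
    define z' where "z' = z j - g / (2 * c)"
    obtain a where a: "\<forall>t. \<phi> a + (z' - lam * a) * (t - a) \<le> \<phi> t" using prox1d[OF cvx lip lam0] by blast
    define ws where "ws = z' - lam * a"
    have Cws: "C ws = ereal (ws * a - \<phi> a)" unfolding C_def ws_def by (rule conj_at_subgrad) (use a in simp)
    have Clow: "ereal (w * a - \<phi> a) \<le> C w" for w unfolding C_def by (rule conj_lower)
    define R where "R w = c * (w - z j)\<^sup>2 + g * (w - z j) + (w * a - \<phi> a) / n'" for w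
    have hlow: "ereal ((w * a - \<phi> a) / n') \<le> hfun P j w" for w
    proof -
      have "ereal (w * a - \<phi> a) / ereal n' \<le> C w / ereal n'"
        using Clow[of w] n'0 by (intro ereal_divide_right_mono) auto
      then show ?thesis using n'0 by (simp add: hC)
    qed
    have Qlow: "ereal (R w) \<le> Qf P k v z j w" for w
    proof -
      have "ereal (c * (w - z j)\<^sup>2 + g * (w - z j)) + ereal ((w * a - \<phi> a) / n') \<le> Qf P k v z j w"
        unfolding Qf_eq by (rule add_left_mono[OF hlow])
      then show ?thesis by (simp add: R_def)
    qed
    have hws: "hfun P j ws = ereal ((ws * a - \<phi> a) / n')" using n'0 by (simp add: hC Cws)
    have Qws: "Qf P k v z j ws = ereal (R ws)" by (simp add: Qf_eq hws R_def)
    have deriv0: "2 * c * (ws - z j) + g + a / n' = 0"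
      using cp n'0 by (simp add: ws_def z'_def lam_def field_simps)
    have Rid: "R w = R ws + c * (w - ws)\<^sup>2" for w
    proof -
      have "R w - R ws - c * (w - ws)\<^sup>2 = (w - ws) * (2 * c * (ws - z j) + g + a / n')"
        using n'nz by (simp add: R_def power2_eq_square field_simps)
      then show ?thesis using deriv0 by simp
    qed
    have wsmin: "\<forall>w'. Qf P k v z j ws \<le> Qf P k v z j w'"
    proof
      fix w'
      have "ereal (R ws) \<le> ereal (R w')" using Rid[of w'] cp by simp
      then show "Qf P k v z j ws \<le> Qf P k v z j w'" using Qws Qlow[of w'] by (metis order_trans)
    qed
    have ztmin: "Qf P k v z j zt \<le> Qf P k v z j ws"
      unfolding zt_def by (rule ztil_min[OF jN]) (use wsmin in blast)
    have "ereal (R zt) \<le> ereal (R ws)" using Qlow[of zt] ztmin Qws by (metis order_trans)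
    then have "c * (zt - ws)\<^sup>2 \<le> 0" using Rid[of zt] by simp
    then have ztws: "zt = ws" using cp by (simp add: mult_le_0_iff)
    have yval: "y = a / n'"
    proof -
      have "y = - 2 * c * (ws - z j) - g" by (simp add: y_def c_def g_def ztws[unfolded zt_def])
      then show ?thesis using deriv0 by simp
    qed
    have fin: "hfun P j zt < \<infinity>" using hws ztws by simp
    have Hzt: "Hf P j zt = (ws * a - \<phi> a) / n'" using hws ztws by (simp add: Hf_def)
    have a_eq: "a = n' * y" using yval n'0 by simp
    have part2: "\<forall>w. ereal (Hf P j zt + y * (w - zt)) \<le> hfun P j w"
    proof
      fix w
      have "Hf P j zt + y * (w - zt) = (w * a - \<phi> a) / n'"
      proof -
        have n'ne: "n' \<noteq> 0" using n'0 by simp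
        have "Hf P j zt + y * (w - zt) = (ws * a - \<phi> a) / n' + (a / n') * (w - ws)" using Hzt ztws yval by simp
        also have "\<dots> = (w * a - \<phi> a) / n'" using n'ne by (simp add: field_simps)
        finally show ?thesis .
      qed
      then show "ereal (Hf P j zt + y * (w - zt)) \<le> hfun P j w" using hlow[of w] by simp
    qed
    have part3: "Hf P j zt = y * zt - phi P j (real (nn P) * y) / real (nn P)"
      using Hzt ztws a_eq n'0 by (simp add: \<phi>_def n'_def[symmetric] field_simps)
    show ?thesis using fin part2 part3 by blast
  next
    case True
    then have L0: "Lc P j = 0" using c_zero_iff by (simp add: c_def)
    then have "norm (Acol P j) = 0" using j mu_pos n_pos by (simp add: Lc_def)
    then have A0: "Acol P j = 0" by simp
    have g0: "g = 0" by (simp add: g_def gradd_alt cf_def j A0)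
    have y0: "y = 0" using True g0 by (simp add: y_def c_def[symmetric] g_def[symmetric])
    have QfE: "Qf P k v z j w = hfun P j w" for w by (simp add: Qf_eq True g0)
    have cvx': "convex_on UNIV \<phi>" by (rule cvx)
    obtain s where s: "\<forall>t. \<phi> 0 + s \<bullet> (t - 0) \<le> \<phi> t" using convex_subgradient_exists[OF cvx'] by blast
    have Cs: "C s = ereal (s * 0 - \<phi> 0)" unfolding C_def by (rule conj_at_subgrad) (use s in simp)
    have Clow: "ereal (w * 0 - \<phi> 0) \<le> C w" for w unfolding C_def by (rule conj_lower)
    have hlow: "ereal (- \<phi> 0 / n') \<le> hfun P j w" for w
    proof -
      have "ereal (- \<phi> 0) / ereal n' \<le> C w / ereal n'"
        using Clow[of w] n'0 by (intro ereal_divide_right_mono) auto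
      then show ?thesis using n'0 by (simp add: hC)
    qed
    have hs: "hfun P j s = ereal (- \<phi> 0 / n')" using n'0 by (simp add: hC Cs)
    have smin: "\<forall>w'. Qf P k v z j s \<le> Qf P k v z j w'" using hs hlow by (simp add: QfE)
    have "hfun P j zt \<le> hfun P j s"
      using ztil_min[OF jN, of k v z s] smin unfolding QfE zt_def by blast
    then have hzt: "hfun P j zt = ereal (- \<phi> 0 / n')" using hs hlow[of zt] by simp
    show ?thesis using hzt hlow y0 by (simp add: Hf_def \<phi>_def n'_def)
  qed
qed

lemma prox_eq:
  fixes k :: nat and v z :: "nat \<Rightarrow> real"
  assumes j1: "nn P \<le> j" and j2: "j < nn P + pp P"
  shows "- 2 * (real (nhat P) * theta P k * Lc P j) * (ztil P k v z j - z j) - gradd P v j = 0"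
proof -
  define c where "c = real (nhat P) * theta P k * Lc P j"
  define g where "g = gradd P v j"
  define zt where "zt = ztil P k v z j"
  have jN: "j < nhat P" using j2 by (simp add: nhat_def)
  have c0: "0 \<le> c" using Lc_nn[of j] N_ge1 theta_pos'[of k] by (simp add: c_def)
  have Qf_eq: "Qf P k v z j w = ereal (c * (w - z j)\<^sup>2 + g * (w - z j))" for w
    by (simp add: Qf_def c_def g_def hfun_eqc[OF j1 j2])
  show ?thesis
  proof (cases "c = 0")
    case False
    then have cp: "0 < c" using c0 by simp
    define ws where "ws = z j - g / (2 * c)"
    define q where "q w = c * (w - z j)\<^sup>2 + g * (w - z j)" for w
    have d0: "2 * c * (ws - z j) + g = 0" using cp by (simp add: ws_def field_simps)
    have qid: "q w = q ws + c * (w - ws)\<^sup>2 + (w - ws) * (2 * c * (ws - z j) + g)" for w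
      by (simp add: q_def power2_eq_square algebra_simps)
    have qlow: "q ws + c * (w - ws)\<^sup>2 \<le> q w" for w using qid[of w] d0 by simp
    have wsmin: "\<forall>w'. Qf P k v z j ws \<le> Qf P k v z j w'"
    proof
      fix w'
      have "0 \<le> c * (w' - ws)\<^sup>2" using cp by simp
      then have "q ws \<le> q w'" using qlow[of w'] by linarith
      then show "Qf P k v z j ws \<le> Qf P k v z j w'" unfolding Qf_eq q_def by simp
    qed
    have "Qf P k v z j zt \<le> Qf P k v z j ws"
      unfolding zt_def by (rule ztil_min[OF jN]) (use wsmin in blast)
    then have "q zt \<le> q ws" unfolding Qf_eq q_def by simp
    then have "c * (zt - ws)\<^sup>2 \<le> 0" using qlow[of zt] by simp
    then have "zt = ws" using cp by (simp add: mult_le_0_iff)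
    then show ?thesis using d0 by (simp add: zt_def[symmetric] c_def[symmetric] g_def[symmetric])
  next
    case True
    then have "Lc P j = 0" using c_zero_iff by (simp add: c_def)
    then have "norm (Brow P (j - nn P)) = 0" using j1 j2 mu_pos by (simp add: Lc_def)
    then have B0: "Brow P (j - nn P) = 0" by simp
    obtain xs where xs: "\<forall>i < pp P. Brow P i \<bullet> xs + bv P i = 0" using slater by blast
    have ji: "j - nn P < pp P" using j1 j2 by simp
    then have "Brow P (j - nn P) \<bullet> xs + bv P (j - nn P) = 0" using xs by blast
    then have "bv P (j - nn P) = 0" using B0 by simp
    then have "g = 0" using B0 j1 j2 by (simp add: g_def gradd_alt cf_def)
    then show ?thesis using True by (simp add: c_def[symmetric] g_def[symmetric])
  qed
qed

lemma prox_ineq: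
  fixes k :: nat and v z :: "nat \<Rightarrow> real"
  assumes j1: "nn P + pp P \<le> j" and j2: "j < nhat P"
  defines "y \<equiv> - 2 * (real (nhat P) * theta P k * Lc P j) * (ztil P k v z j - z j) - gradd P v j"
  shows "y \<le> 0 \<and> y * ztil P k v z j = 0 \<and> 0 \<le> ztil P k v z j"
proof -
  define c where "c = real (nhat P) * theta P k * Lc P j"
  define g where "g = gradd P v j"
  define zt where "zt = ztil P k v z j"
  have c0: "0 \<le> c" using Lc_nn[of j] N_ge1 theta_pos'[of k] by (simp add: c_def)
  define q where "q w = c * (w - z j)\<^sup>2 + g * (w - z j)" for w
  have Qf_eq: "Qf P k v z j w = (if 0 \<le> w then ereal (q w) else \<infinity>)" for w
    by (simp add: Qf_def c_def g_def q_def hfun_ineq[OF j1])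
  have yeq: "y = - 2 * c * (zt - z j) - g" by (simp add: y_def c_def g_def zt_def)
  show ?thesis
  proof (cases "c = 0")
    case False
    then have cp: "0 < c" using c0 by simp
    define ws where "ws = max 0 (z j - g / (2 * c))"
    have ws0: "0 \<le> ws" by (simp add: ws_def)
    have qid: "q w = q ws + c * (w - ws)\<^sup>2 + (w - ws) * (2 * c * (ws - z j) + g)" for w
      by (simp add: q_def power2_eq_square algebra_simps)
    have signs: "0 \<le> (w - ws) * (2 * c * (ws - z j) + g)" if "0 \<le> w" for w
    proof (cases "z j - g / (2 * c) \<le> 0")
      case True
      then have "ws = 0" by (simp add: ws_def)
      moreover have "0 \<le> 2 * c * (0 - z j) + g" using True cp by (simp add: field_simps)
      ultimately show ?thesis using that by simp
    next
      case False
      then have "ws = z j - g / (2 * c)" by (simp add: ws_def)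
      then have "2 * c * (ws - z j) + g = 0" using cp by (simp add: field_simps)
      then show ?thesis by simp
    qed
    have qlow: "q ws + c * (w - ws)\<^sup>2 \<le> q w" if "0 \<le> w" for w
      using qid[of w] signs[OF that] by simp
    have wsmin: "\<forall>w'. Qf P k v z j ws \<le> Qf P k v z j w'"
    proof
      fix w'
      show "Qf P k v z j ws \<le> Qf P k v z j w'"
      proof (cases "0 \<le> w'")
        case True
        have "0 \<le> c * (w' - ws)\<^sup>2" using cp by simp
        then have "q ws \<le> q w'" using qlow[OF True] by linarith
        then show ?thesis using True ws0 unfolding Qf_eq by simp
      qed (simp add: Qf_eq)
    qed
    have zle: "Qf P k v z j zt \<le> Qf P k v z j ws"
      unfolding zt_def by (rule ztil_min[OF j2]) (use wsmin in blast)
    then have zt0: "0 \<le> zt" using ws0 unfolding Qf_eq by (auto split: if_splits)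
    then have "q zt \<le> q ws" using zle ws0 unfolding Qf_eq by simp
    then have "c * (zt - ws)\<^sup>2 \<le> 0" using qlow[OF zt0] by simp
    then have ztws: "zt = ws" using cp by (simp add: mult_le_0_iff)
    have yval: "y \<le> 0 \<and> y * zt = 0"
    proof (cases "z j - g / (2 * c) \<le> 0")
      case True
      then have "ws = 0" by (simp add: ws_def)
      moreover have "0 \<le> 2 * c * (0 - z j) + g" using True cp by (simp add: field_simps)
      ultimately show ?thesis using yeq ztws by simp
    next
      case False
      then have "ws = z j - g / (2 * c)" by (simp add: ws_def)
      then have "y = 0" using yeq ztws cp by (simp add: field_simps)
      then show ?thesis by simp
    qed
    then show ?thesis using zt0 by (simp add: zt_def)
  next
    case True
    then have "Lc P j = 0" using c_zero_iff by (simp add: c_def)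
    then have L0: "Lg P (j - nn P - pp P) = 0" using j1 mu_pos by (simp add: Lc_def)
    have jm: "j - nn P - pp P < mm P" using j1 j2 by (simp add: nhat_def)
    obtain xs where xs: "\<forall>i < mm P. gc P i xs < 0" using slater by blast
    have "\<bar>gc P (j - nn P - pp P) (xstar P v) - gc P (j - nn P - pp P) xs\<bar> \<le> 0"
      using g_lip(1)[OF jm, of "xstar P v" xs] L0 by simp
    then have "gc P (j - nn P - pp P) (xstar P v) < 0" using xs jm by simp
    then have gp: "0 < g" using j1 by (simp add: g_def gradd_alt cf_def)
    have q0: "q w = g * (w - z j)" for w by (simp add: q_def True)
    have zmin: "\<forall>w'. Qf P k v z j 0 \<le> Qf P k v z j w'"
      using gp by (auto simp: Qf_eq q0 algebra_simps)
    have zle: "Qf P k v z j zt \<le> Qf P k v z j 0"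
      unfolding zt_def by (rule ztil_min[OF j2]) (use zmin in blast)
    then have zt0: "0 \<le> zt" unfolding Qf_eq by (auto split: if_splits)
    then have "g * (zt - z j) \<le> g * (0 - z j)" using zle unfolding Qf_eq q0 by simp
    then have "g * zt \<le> 0" by (simp add: algebra_simps)
    then have "zt = 0" using zt0 gp by (simp add: mult_le_0_iff)
    then show ?thesis using yeq True gp by (simp add: zt_def)
  qed
qed

lemma prox_all:
  fixes k :: nat and v z :: "nat \<Rightarrow> real"
  assumes jN: "j < nhat P"
  defines "zt \<equiv> ztil P k v z j"
    and "y \<equiv> - 2 * (real (nhat P) * theta P k * Lc P j) * (ztil P k v z j - z j) - gradd P v j"
  shows "hfun P j zt < \<infinity>"
    and "ereal (Hf P j zt + y * (w - zt)) \<le> hfun P j w"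
    and "j < nn P \<Longrightarrow> Hf P j zt = y * zt - phi P j (real (nn P) * y) / real (nn P)"
    and "nn P \<le> j \<Longrightarrow> j < nn P + pp P \<Longrightarrow> y = 0 \<and> Hf P j zt = 0"
    and "nn P + pp P \<le> j \<Longrightarrow> y \<le> 0 \<and> y * zt = 0 \<and> Hf P j zt = 0 \<and> 0 \<le> zt"
proof -
  consider (a) "j < nn P" | (b) "nn P \<le> j" "j < nn P + pp P" | (c) "nn P + pp P \<le> j" by linarith
  note cs = this
  show "hfun P j zt < \<infinity>"
    using cs prox_phi[of j k v z] prox_ineq[of j k v z] jN
    by cases (auto simp: zt_def y_def hfun_eqc hfun_ineq)
  show "ereal (Hf P j zt + y * (w - zt)) \<le> hfun P j w"
  proof (cases rule: cs)
    case a then show ?thesis using prox_phi[of j k v z] unfolding zt_def y_def by blast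
  next
    case b then show ?thesis using prox_eq[of j k v z] by (simp add: zt_def y_def hfun_eqc Hf_def)
  next
    case c
    have pi: "y \<le> 0 \<and> y * zt = 0 \<and> 0 \<le> zt" using prox_ineq[OF c jN, of k v z] by (simp add: zt_def y_def)
    show ?thesis
    proof (cases "0 \<le> w")
      case True
      have "y * w \<le> 0" using pi True by (simp add: mult_nonpos_nonneg)
      moreover have "y * zt = 0" using pi by simp
      moreover have "y * (w - zt) = y * w - y * zt" by (simp add: right_diff_distrib)
      ultimately have "y * (w - zt) \<le> 0" by linarith
      then show ?thesis using c True pi by (simp add: hfun_ineq Hf_def)
    qed (simp add: hfun_ineq c)
  qed
  show "j < nn P \<Longrightarrow> Hf P j zt = y * zt - phi P j (real (nn P) * y) / real (nn P)"
    using prox_phi[of j k v z] unfolding zt_def y_def by blast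
  show "nn P \<le> j \<Longrightarrow> j < nn P + pp P \<Longrightarrow> y = 0 \<and> Hf P j zt = 0"
    using prox_eq[of j k v z] by (simp add: zt_def y_def hfun_eqc Hf_def)
  show "nn P + pp P \<le> j \<Longrightarrow> y \<le> 0 \<and> y * zt = 0 \<and> Hf P j zt = 0 \<and> 0 \<le> zt"
    using prox_ineq[OF _ jN, of k v z] by (simp add: zt_def y_def hfun_ineq Hf_def)
qed

end


lemma sum_PiE_swap:
  fixes X :: "(nat \<Rightarrow> nat) \<Rightarrow> real"
  assumes kI: "k \<in> I" and fI: "finite I" and fB: "finite B"
  shows "(\<Sum>s\<in>PiE I (\<lambda>_. B). \<Sum>i\<in>B. X (s(k := i))) = real (card B) * (\<Sum>s\<in>PiE I (\<lambda>_. B). X s)"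
proof -
  define J where "J = I - {k}"
  have IJ: "I = insert k J" and kJ: "k \<notin> J" using kI by (auto simp: J_def)
  have fJ: "finite J" using fI by (simp add: J_def)
  have eq: "PiE I (\<lambda>_. B) = (\<lambda>(y, g). g(k := y)) ` (B \<times> PiE J (\<lambda>_. B))"
    unfolding IJ by (rule PiE_insert_eq)
  have inj: "inj_on (\<lambda>(y, g). g(k := y)) (B \<times> PiE J (\<lambda>_. B))"
    using inj_combinator[OF kJ, of "\<lambda>_. B"] by simp
  have re: "(\<Sum>s\<in>PiE I (\<lambda>_. B). F s) = (\<Sum>(y, g)\<in>B \<times> PiE J (\<lambda>_. B). F (g(k := y)))" for F :: "(nat \<Rightarrow> nat) \<Rightarrow> real"
    unfolding eq by (subst sum.reindex[OF inj]) (simp add: case_prod_unfold)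
  have "(\<Sum>s\<in>PiE I (\<lambda>_. B). \<Sum>i\<in>B. X (s(k := i))) = (\<Sum>(y, g)\<in>B \<times> PiE J (\<lambda>_. B). \<Sum>i\<in>B. X (g(k := i)))"
    by (simp add: re)
  also have "\<dots> = (\<Sum>y\<in>B. \<Sum>g\<in>PiE J (\<lambda>_. B). \<Sum>i\<in>B. X (g(k := i)))"
    by (rule sum.cartesian_product[symmetric])
  also have "\<dots> = real (card B) * (\<Sum>g\<in>PiE J (\<lambda>_. B). \<Sum>i\<in>B. X (g(k := i)))" by simp
  also have "(\<Sum>g\<in>PiE J (\<lambda>_. B). \<Sum>i\<in>B. X (g(k := i))) = (\<Sum>i\<in>B. \<Sum>g\<in>PiE J (\<lambda>_. B). X (g(k := i)))"
    by (rule sum.swap)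
  also have "\<dots> = (\<Sum>(y, g)\<in>B \<times> PiE J (\<lambda>_. B). X (g(k := y)))"
    by (rule sum.cartesian_product)
  also have "\<dots> = (\<Sum>s\<in>PiE I (\<lambda>_. B). X s)" by (simp add: re)
  finally show ?thesis .
qed

lemma seqs_swap:
  fixes X :: "(nat \<Rightarrow> nat) \<Rightarrow> real"
  assumes "k \<le> K" "1 \<le> nhat P"
  shows "(\<Sum>s\<in>seqs P K. (1 / real (nhat P)) * (\<Sum>i<nhat P. X (s(k := i)))) = (\<Sum>s\<in>seqs P K. X s)"
proof -
  have "(\<Sum>s\<in>seqs P K. (1 / real (nhat P)) * (\<Sum>i<nhat P. X (s(k := i)))) = (1 / real (nhat P)) * (\<Sum>s\<in>seqs P K. \<Sum>i<nhat P. X (s(k := i)))"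
    by (simp add: sum_distrib_left)
  also have "(\<Sum>s\<in>seqs P K. \<Sum>i<nhat P. X (s(k := i))) = real (nhat P) * (\<Sum>s\<in>seqs P K. X s)"
    unfolding seqs_def using sum_PiE_swap[of k "{0..K}" "{..<nhat P}" X] assms by simp
  also have "(1 / real (nhat P)) * (real (nhat P) * (\<Sum>s\<in>seqs P K. X s)) = (\<Sum>s\<in>seqs P K. X s)"
    using assms by simp
  finally show ?thesis .
qed

lemma card_seqs: "card (seqs P K) = nhat P ^ Suc K"
  by (simp add: seqs_def card_PiE)

lemma finite_seqs: "finite (seqs P K)"
  by (simp add: seqs_def finite_PiE)

lemma seqs_upd: "s \<in> seqs P K \<Longrightarrow> k \<le> K \<Longrightarrow> i < nhat P \<Longrightarrow> s(k := i) \<in> seqs P K"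
  by (auto simp: seqs_def PiE_def extensional_def Pi_def)

lemma seqs_range: "s \<in> seqs P K \<Longrightarrow> k \<le> K \<Longrightarrow> s k < nhat P"
  by (auto simp: seqs_def PiE_def Pi_def)

lemma ardca_dep:
  "(\<And>j. j < k \<Longrightarrow> s j = s' j) \<Longrightarrow> ardca P u0 s k = ardca P u0 s' k"
proof (induction k)
  case 0
  then show ?case by simp
next
  case (Suc k)
  then have "ardca P u0 s k = ardca P u0 s' k" by simp
  moreover have "s k = s' k" using Suc by simp
  ultimately show ?case by (simp add: Let_def)
qed

lemma z_it_dep: "(\<And>j. j < k \<Longrightarrow> s j = s' j) \<Longrightarrow> z_it P u0 s k = z_it P u0 s' k"
  using ardca_dep[of k s s' P u0] by (simp add: z_it_def)

lemma u_it_dep: "(\<And>j. j < k \<Longrightarrow> s j = s' j) \<Longrightarrow> u_it P u0 s k = u_it P u0 s' k"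
  using ardca_dep[of k s s' P u0] by (simp add: u_it_def)

lemma z_it_0: "z_it P u0 s 0 = u0" by (simp add: z_it_def)
lemma u_it_0: "u_it P u0 s 0 = u0" by (simp add: u_it_def)

lemma z_it_Suc: "z_it P u0 s (Suc k) = (z_it P u0 s k)(s k := zt_it P u0 s k (s k))"
  by (simp add: z_it_def zt_it_def v_it_def u_it_def Let_def split: prod.split)

lemma u_it_Suc: "u_it P u0 s (Suc k) = (\<lambda>i. v_it P u0 s k i + real (nhat P) * theta P k * (z_it P u0 s (Suc k) i - z_it P u0 s k i))"
  by (simp add: z_it_def zt_it_def v_it_def u_it_def Let_def split: prod.split)

fun hh :: "'t::finite prob \<Rightarrow> (nat \<Rightarrow> real) \<Rightarrow> (nat \<Rightarrow> nat) \<Rightarrow> nat \<Rightarrow> nat \<Rightarrow> real" where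
  "hh P u0 s 0 j = Hf P j (u0 j)"
| "hh P u0 s (Suc k) j = (1 - theta P k) * hh P u0 s k j
     + theta P k * (real (nhat P) * Hf P j (z_it P u0 s (Suc k) j) - (real (nhat P) - 1) * Hf P j (z_it P u0 s k j))"

lemma hh_dep: "(\<And>j. j < k \<Longrightarrow> s j = s' j) \<Longrightarrow> hh P u0 s k = hh P u0 s' k"
proof (induction k)
  case 0
  then show ?case by (simp add: fun_eq_iff)
next
  case (Suc k)
  then have "hh P u0 s k = hh P u0 s' k" by simp
  moreover have "z_it P u0 s (Suc k) = z_it P u0 s' (Suc k)" by (rule z_it_dep) (use Suc in simp)
  moreover have "z_it P u0 s k = z_it P u0 s' k" by (rule z_it_dep) (use Suc in simp)
  ultimately show ?case by (simp add: fun_eq_iff)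
qed

lemma Lnorm_upd:
  assumes "i < nhat P"
  shows "Lnorm_sq P (\<lambda>j. (z(i := a)) j - w j) = Lnorm_sq P (\<lambda>j. z j - w j) - Lc P i * (z i - w i)\<^sup>2 + Lc P i * (a - w i)\<^sup>2"
proof -
  have "Lnorm_sq P (\<lambda>j. (z(i := a)) j - w j) = Lc P i * ((z(i := a)) i - w i)\<^sup>2 + (\<Sum>j\<in>{..<nhat P} - {i}. Lc P j * ((z(i := a)) j - w j)\<^sup>2)"
    unfolding Lnorm_sq_def by (rule sum.remove) (use assms in auto)
  then have "Lnorm_sq P (\<lambda>j. (z(i := a)) j - w j) = Lc P i * (a - w i)\<^sup>2 + (\<Sum>j\<in>{..<nhat P} - {i}. Lc P j * ((z(i := a)) j - w j)\<^sup>2)"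
    by simp
  also have "(\<Sum>j\<in>{..<nhat P} - {i}. Lc P j * ((z(i := a)) j - w j)\<^sup>2) = (\<Sum>j\<in>{..<nhat P} - {i}. Lc P j * (z j - w j)\<^sup>2)"
    by (rule sum.cong) auto
  also have "Lnorm_sq P (\<lambda>j. z j - w j) = Lc P i * (z i - w i)\<^sup>2 + (\<Sum>j\<in>{..<nhat P} - {i}. Lc P j * (z j - w j)\<^sup>2)"
    unfolding Lnorm_sq_def by (rule sum.remove) (use assms in auto)
  ultimately show ?thesis by simp
qed

lemma avg_Lnorm_upd:
  assumes N: "1 \<le> nhat P"
  shows "(1 / real (nhat P)) * (\<Sum>i<nhat P. Lnorm_sq P (\<lambda>j. (z(i := a i)) j - w j))
       = (1 - 1 / real (nhat P)) * Lnorm_sq P (\<lambda>j. z j - w j) + (1 / real (nhat P)) * Lnorm_sq P (\<lambda>j. a j - w j)"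
proof -
  have "(\<Sum>i<nhat P. Lnorm_sq P (\<lambda>j. (z(i := a i)) j - w j))
      = (\<Sum>i<nhat P. Lnorm_sq P (\<lambda>j. z j - w j) - Lc P i * (z i - w i)\<^sup>2 + Lc P i * (a i - w i)\<^sup>2)"
    by (rule sum.cong[OF refl], rule Lnorm_upd) simp
  also have "\<dots> = real (nhat P) * Lnorm_sq P (\<lambda>j. z j - w j) - Lnorm_sq P (\<lambda>j. z j - w j) + Lnorm_sq P (\<lambda>j. a j - w j)"
    by (simp add: sum.distrib sum_subtractf Lnorm_sq_def)
  finally show ?thesis using N by (simp add: field_simps)
qed

lemma Lnorm_commute: "Lnorm_sq P (\<lambda>j. a j - b j) = Lnorm_sq P (\<lambda>j. b j - a j)"
  unfolding Lnorm_sq_def by (rule sum.cong) (auto simp: power2_commute)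

lemma Lnorm_nonneg: "0 < mu P \<Longrightarrow> 0 \<le> Lnorm_sq P w"
  unfolding Lnorm_sq_def by (intro sum_nonneg mult_nonneg_nonneg Lc_nonneg) auto

lemma Lnorm_triangle:
  assumes "0 < mu P"
  shows "Lnorm_sq P (\<lambda>j. a j - b j) \<le> 2 * Lnorm_sq P (\<lambda>j. a j - c j) + 2 * Lnorm_sq P (\<lambda>j. c j - b j)"
  unfolding Lnorm_sq_def sum_distrib_left sum.distrib[symmetric]
proof (rule sum_mono)
  fix j
  have "(a j - b j)\<^sup>2 \<le> 2 * (a j - c j)\<^sup>2 + 2 * (c j - b j)\<^sup>2"
  proof -
    have "0 \<le> ((a j - c j) - (c j - b j))\<^sup>2" by simp
    then show ?thesis by (simp add: power2_eq_square algebra_simps)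
  qed
  then have "Lc P j * (a j - b j)\<^sup>2 \<le> Lc P j * (2 * (a j - c j)\<^sup>2 + 2 * (c j - b j)\<^sup>2)"
    using Lc_nonneg[OF assms] by (rule mult_left_mono)
  then show "Lc P j * (a j - b j)\<^sup>2 \<le> 2 * (Lc P j * (a j - c j)\<^sup>2) + 2 * (Lc P j * (c j - b j)\<^sup>2)"
    by (simp add: algebra_simps)
qed


definition Hs :: "'t::finite prob \<Rightarrow> (nat \<Rightarrow> real) \<Rightarrow> real" where
  "Hs P x = (\<Sum>j<nhat P. Hf P j (x j))"

definition yv :: "'t::finite prob \<Rightarrow> nat \<Rightarrow> (nat \<Rightarrow> real) \<Rightarrow> (nat \<Rightarrow> real) \<Rightarrow> nat \<Rightarrow> real" where
  "yv P k v z j = - 2 * (real (nhat P) * theta P k * Lc P j) * (ztil P k v z j - z j) - gradd P v j"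

definition ellf :: "'t::finite prob \<Rightarrow> nat \<Rightarrow> (nat \<Rightarrow> real) \<Rightarrow> (nat \<Rightarrow> real) \<Rightarrow> (nat \<Rightarrow> real) \<Rightarrow> real" where
  "ellf P k v z w = (\<Sum>j<nhat P. Hf P j (ztil P k v z j) + yv P k v z j * (w j - ztil P k v z j))"

lemma sum_upd_gen:
  fixes F :: "nat \<Rightarrow> real \<Rightarrow> real"
  assumes "i \<in> A" "finite A"
  shows "(\<Sum>j\<in>A. F j ((z(i := a)) j)) = (\<Sum>j\<in>A. F j (z j)) - F i (z i) + F i a"
proof -
  have "(\<Sum>j\<in>A. F j ((z(i := a)) j)) = F i ((z(i := a)) i) + (\<Sum>j\<in>A - {i}. F j ((z(i := a)) j))"
    by (rule sum.remove) (use assms in auto)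
  also have "(\<Sum>j\<in>A - {i}. F j ((z(i := a)) j)) = (\<Sum>j\<in>A - {i}. F j (z j))"
    by (rule sum.cong) auto
  also have "(\<Sum>j\<in>A. F j (z j)) = F i (z i) + (\<Sum>j\<in>A - {i}. F j (z j))"
    by (rule sum.remove) (use assms in auto)
  ultimately show ?thesis by simp
qed

context setting
begin

lemma in_dom_comb:
  assumes "in_dom P a" "in_dom P b" "0 \<le> t" "t \<le> 1"
  shows "in_dom P (\<lambda>i. t * a i + (1 - t) * b i)"
  using assms unfolding in_dom_def by (auto intro!: add_nonneg_nonneg mult_nonneg_nonneg)

lemma step_core:
  fixes u z v w :: "nat \<Rightarrow> real" and hsc :: real and k :: nat
  assumes udom: "in_dom P u" and zdom: "in_dom P z"
    and vdef: "v = (\<lambda>i. theta P k * z i + (1 - theta P k) * u i)"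
  shows "(1 / real (nhat P)) * (\<Sum>i<nhat P. dfun P (\<lambda>j. v j + real (nhat P) * theta P k * ((z(i := ztil P k v z i)) j - z j))
          + ((1 - theta P k) * hsc + theta P k * (real (nhat P) * Hs P (z(i := ztil P k v z i)) - (real (nhat P) - 1) * Hs P z)))
    \<le> (1 - theta P k) * (dfun P u + hsc) + theta P k * (- Lagr P (xstar P v) w + ellf P k v z w)
      + real (nhat P) * (theta P k)\<^sup>2 * (Lnorm_sq P (\<lambda>j. w j - z j) - Lnorm_sq P (\<lambda>j. w j - ztil P k v z j))
      - real (nhat P) * (theta P k)\<^sup>2 / 2 * Lnorm_sq P (\<lambda>j. ztil P k v z j - z j)"
proof -
  define th where "th = theta P k"
  define NN where "NN = real (nhat P)"
  define zt where "zt = ztil P k v z"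
  define g where "g = gradd P v"
  define y where "y = yv P k v z"
  have th0: "0 < th" using theta_pos' by (simp add: th_def)
  have th1: "th \<le> 1" using theta_le1[OF N_ge1] by (simp add: th_def)
  have NN1: "1 \<le> NN" using N_ge1 by (simp add: NN_def)
  have vdom: "in_dom P v" unfolding vdef using in_dom_comb[OF zdom udom] theta_pos'[of k] theta_le1[OF N_ge1, of k] by simp
  define LZ where "LZ = Lnorm_sq P (\<lambda>j. zt j - z j)"
  define LWZ where "LWZ = Lnorm_sq P (\<lambda>j. w j - z j)"
  define LWT where "LWT = Lnorm_sq P (\<lambda>j. w j - zt j)"
  define GZ where "GZ = (\<Sum>j<nhat P. g j * (zt j - z j))"
  define GW where "GW = (\<Sum>j<nhat P. g j * (w j - z j))"
  have dsm: "dfun P (\<lambda>j. v j + NN * th * ((z(i := zt i)) j - z j))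
      \<le> dfun P v + g i * (NN * th * (zt i - z i)) + Lc P i / 2 * (NN * th * (zt i - z i))\<^sup>2" if i: "i < nhat P" for i
  proof -
    have e: "(\<lambda>j. v j + NN * th * ((z(i := zt i)) j - z j)) = v(i := v i + NN * th * (zt i - z i))"
      by (auto simp: fun_eq_iff)
    show ?thesis unfolding e g_def by (rule d_smooth[OF vdom i])
  qed
  have sumA: "(\<Sum>i<nhat P. dfun P (\<lambda>j. v j + NN * th * ((z(i := zt i)) j - z j)))
      \<le> NN * dfun P v + NN * th * GZ + (NN * th)\<^sup>2 / 2 * LZ"
  proof -
    have "(\<Sum>i<nhat P. dfun P (\<lambda>j. v j + NN * th * ((z(i := zt i)) j - z j)))
        \<le> (\<Sum>i<nhat P. dfun P v + g i * (NN * th * (zt i - z i)) + Lc P i / 2 * (NN * th * (zt i - z i))\<^sup>2)"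
      by (rule sum_mono) (use dsm in simp)
    also have "\<dots> = (\<Sum>i<nhat P. dfun P v + (NN * th) * (g i * (zt i - z i)) + ((NN * th)\<^sup>2 / 2) * (Lc P i * (zt i - z i)\<^sup>2))"
      by (rule sum.cong[OF refl]) (simp add: power_mult_distrib)
    also have "\<dots> = NN * dfun P v + NN * th * GZ + (NN * th)\<^sup>2 / 2 * LZ"
      by (simp add: sum.distrib sum_distrib_left[symmetric] GZ_def LZ_def Lnorm_sq_def NN_def del: times_divide_eq_left)
    finally show ?thesis .
  qed
  have Hupd: "Hs P (z(i := zt i)) = Hs P z - Hf P i (z i) + Hf P i (zt i)" if "i < nhat P" for i
    unfolding Hs_def using sum_upd_gen[of i "{..<nhat P}" "\<lambda>j x. Hf P j x" z "zt i"] that by simp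
  have sumB: "(\<Sum>i<nhat P. (1 - th) * hsc + th * (NN * Hs P (z(i := zt i)) - (NN - 1) * Hs P z))
      = NN * (1 - th) * hsc + NN * th * Hs P zt"
  proof -
    have "(\<Sum>i<nhat P. (1 - th) * hsc + th * (NN * Hs P (z(i := zt i)) - (NN - 1) * Hs P z))
        = (\<Sum>i<nhat P. (1 - th) * hsc + th * (Hs P z + NN * (Hf P i (zt i) - Hf P i (z i))))"
      by (rule sum.cong) (auto simp: Hupd algebra_simps)
    also have "\<dots> = NN * (1 - th) * hsc + th * (NN * Hs P z + NN * (Hs P zt - Hs P z))"
      by (simp add: sum.distrib sum_distrib_left sum_subtractf Hs_def NN_def algebra_simps)
    finally show ?thesis by (simp add: algebra_simps)
  qed
  have ident: "GZ + Hs P zt = NN * th * LWZ + GW + ellf P k v z w - NN * th * LZ - NN * th * LWT"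
  proof -
    have pj: "g j * (zt j - z j) + Hf P j (zt j)
       = NN * th * (Lc P j * (w j - z j)\<^sup>2) + g j * (w j - z j) + (Hf P j (zt j) + y j * (w j - zt j))
         - NN * th * (Lc P j * (zt j - z j)\<^sup>2) - NN * th * (Lc P j * (w j - zt j)\<^sup>2)" for j
      by (simp add: y_def yv_def zt_def[symmetric] g_def[symmetric] NN_def[symmetric] th_def[symmetric]
          power2_eq_square algebra_simps)
    have "GZ + Hs P zt = (\<Sum>j<nhat P. g j * (zt j - z j) + Hf P j (zt j))"
      by (simp add: GZ_def Hs_def sum.distrib)
    also have "\<dots> = (\<Sum>j<nhat P. NN * th * (Lc P j * (w j - z j)\<^sup>2) + g j * (w j - z j) + (Hf P j (zt j) + y j * (w j - zt j))
         - NN * th * (Lc P j * (zt j - z j)\<^sup>2) - NN * th * (Lc P j * (w j - zt j)\<^sup>2))"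
      by (rule sum.cong[OF refl]) (rule pj)
    also have "\<dots> = NN * th * LWZ + GW + ellf P k v z w - NN * th * LZ - NN * th * LWT"
      by (simp add: sum.distrib sum_subtractf sum_distrib_left LWZ_def GW_def LZ_def LWT_def Lnorm_sq_def
          ellf_def y_def zt_def)
    finally show ?thesis .
  qed
  have split: "dfun P v + th * GW = th * (dfun P v + (\<Sum>j<nhat P. g j * (w j - v j))) + (1 - th) * (dfun P v + (\<Sum>j<nhat P. g j * (u j - v j)))"
  proof -
    have "th * GW = (\<Sum>j<nhat P. th * (g j * (w j - v j)) + (1 - th) * (g j * (u j - v j)))"
      unfolding GW_def sum_distrib_left
      by (rule sum.cong) (auto simp: vdef th_def algebra_simps)
    also have "\<dots> = th * (\<Sum>j<nhat P. g j * (w j - v j)) + (1 - th) * (\<Sum>j<nhat P. g j * (u j - v j))"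
      by (simp only: sum.distrib sum_distrib_left)
    finally show ?thesis by (simp add: algebra_simps)
  qed
  have did: "dfun P v + (\<Sum>j<nhat P. g j * (w j - v j)) = - Lagr P (xstar P v) w"
    unfolding g_def by (rule d_identity)
  have dcv: "dfun P v + (\<Sum>j<nhat P. g j * (u j - v j)) \<le> dfun P u"
    unfolding g_def by (rule d_convex[OF udom])
  have c1: "(1 - th) * (dfun P v + (\<Sum>j<nhat P. g j * (u j - v j))) \<le> (1 - th) * dfun P u"
    using dcv th1 by (intro mult_left_mono) auto
  have L: "(1 / NN) * (\<Sum>i<nhat P. dfun P (\<lambda>j. v j + NN * th * ((z(i := zt i)) j - z j))
          + ((1 - th) * hsc + th * (NN * Hs P (z(i := zt i)) - (NN - 1) * Hs P z)))
      = (1 / NN) * ((\<Sum>i<nhat P. dfun P (\<lambda>j. v j + NN * th * ((z(i := zt i)) j - z j)))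
          + (\<Sum>i<nhat P. (1 - th) * hsc + th * (NN * Hs P (z(i := zt i)) - (NN - 1) * Hs P z)))"
    by (simp add: sum.distrib)
  have "(1 / NN) * ((\<Sum>i<nhat P. dfun P (\<lambda>j. v j + NN * th * ((z(i := zt i)) j - z j)))
          + (\<Sum>i<nhat P. (1 - th) * hsc + th * (NN * Hs P (z(i := zt i)) - (NN - 1) * Hs P z)))
      \<le> (1 / NN) * (NN * dfun P v + NN * th * GZ + (NN * th)\<^sup>2 / 2 * LZ + (NN * (1 - th) * hsc + NN * th * Hs P zt))"
    using sumA sumB NN1 by (intro mult_left_mono) auto
  also have "\<dots> = dfun P v + th * (GZ + Hs P zt) + NN * th\<^sup>2 / 2 * LZ + (1 - th) * hsc"
    using NN1 by (simp add: field_simps power2_eq_square)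
  also have "\<dots> = (dfun P v + th * GW) + th * ellf P k v z w + NN * th\<^sup>2 * (LWZ - LWT) - NN * th\<^sup>2 / 2 * LZ + (1 - th) * hsc"
    unfolding ident by (simp add: power2_eq_square algebra_simps)
  also have "\<dots> \<le> th * (- Lagr P (xstar P v) w) + (1 - th) * dfun P u + th * ellf P k v z w + NN * th\<^sup>2 * (LWZ - LWT) - NN * th\<^sup>2 / 2 * LZ + (1 - th) * hsc"
  proof -
    have "dfun P v + th * GW = th * (- Lagr P (xstar P v) w) + (1 - th) * (dfun P v + (\<Sum>j<nhat P. g j * (u j - v j)))"
      using split did by simp
    then show ?thesis using c1 by linarith
  qed
  also have "\<dots> = (1 - th) * (dfun P u + hsc) + th * (- Lagr P (xstar P v) w + ellf P k v z w)
      + NN * th\<^sup>2 * (LWZ - LWT) - NN * th\<^sup>2 / 2 * LZ"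
    by (simp add: algebra_simps)
  finally show ?thesis
    unfolding L[unfolded NN_def th_def zt_def] LWZ_def LWT_def LZ_def zt_def th_def NN_def .
qed

lemma T_star:
  assumes wdom: "in_dom P w" and wfin: "\<And>j. j < nhat P \<Longrightarrow> hfun P j (w j) < \<infinity>"
  shows "- Lagr P (xstar P v) w + ellf P k v z w \<le> dfun P w + Hs P w"
proof -
  have "- Lagr P (xstar P v) w \<le> dfun P w" by (rule d_lower[OF wdom])
  moreover have "ellf P k v z w \<le> Hs P w"
    unfolding ellf_def Hs_def
  proof (rule sum_mono)
    fix j assume "j \<in> {..<nhat P}"
    then have j: "j < nhat P" by simp
    have "ereal (Hf P j (ztil P k v z j) + yv P k v z j * (w j - ztil P k v z j)) \<le> hfun P j (w j)"
      using prox_all(2)[OF j, of k v z "w j"] by (simp add: yv_def)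
    then show "Hf P j (ztil P k v z j) + yv P k v z j * (w j - ztil P k v z j) \<le> Hf P j (w j)"
      using hfun_ge_real wfin[OF j] by blast
  qed
  ultimately show ?thesis by simp
qed

lemma T_gap:
  assumes wdom: "in_dom P w"
  shows "- Lagr P (xstar P v) w + ellf P k v z w
     \<le> - (delta_inner P (xstar P v) (\<lambda>i. real (nn P) * yv P k v z i) w + fobj P (xstar P v)
          + phisum P (\<lambda>i. real (nn P) * yv P k v z i) / real (nn P))"
proof -
  define x where "x = xstar P v"
  define y where "y = yv P k v z"
  define zt where "zt = ztil P k v z"
  define n' where "n' = real (nn P)"
  have n'0: "n' \<noteq> 0" using n_pos by (simp add: n'_def)
  define E where "E j = Hf P j (zt j) + y j * (w j - zt j)" for j
  have ellf_split: "ellf P k v z w = (\<Sum>i<nn P. E i) + (\<Sum>j<pp P. E (nn P + j)) + (\<Sum>i<mm P. E (nn P + pp P + i))"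
    unfolding ellf_def nhat_def sum_split3 E_def zt_def y_def ..
  have E1: "E i = y i * w i - phi P i (n' * y i) / n'" if "i < nn P" for i
  proof -
    have "i < nhat P" using that by (simp add: nhat_def)
    then have "Hf P i (zt i) = y i * zt i - phi P i (n' * y i) / n'"
      using prox_all(3)[of i k v z] that by (simp add: zt_def y_def yv_def n'_def)
    then show ?thesis by (simp add: E_def algebra_simps)
  qed
  have E2: "E (nn P + j) = 0" if "j < pp P" for j
  proof -
    have "nn P + j < nhat P" using that by (simp add: nhat_def)
    then have "y (nn P + j) = 0 \<and> Hf P (nn P + j) (zt (nn P + j)) = 0"
      using prox_all(4)[of "nn P + j" k v z] that by (simp add: zt_def y_def yv_def)
    then show ?thesis by (simp add: E_def)
  qed
  have E3: "E (nn P + pp P + i) = y (nn P + pp P + i) * w (nn P + pp P + i)"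
       "y (nn P + pp P + i) * w (nn P + pp P + i) \<le> 0" if "i < mm P" for i
  proof -
    have jN: "nn P + pp P + i < nhat P" using that by (simp add: nhat_def)
    then have h: "y (nn P + pp P + i) \<le> 0 \<and> y (nn P + pp P + i) * zt (nn P + pp P + i) = 0 \<and> Hf P (nn P + pp P + i) (zt (nn P + pp P + i)) = 0"
      using prox_all(5)[of "nn P + pp P + i" k v z] by (simp add: zt_def y_def yv_def)
    have "E (nn P + pp P + i) = y (nn P + pp P + i) * w (nn P + pp P + i) - y (nn P + pp P + i) * zt (nn P + pp P + i)"
      using h by (simp add: E_def algebra_simps)
    then show "E (nn P + pp P + i) = y (nn P + pp P + i) * w (nn P + pp P + i)" using h by simp
    have "0 \<le> w (nn P + pp P + i)" using wdom jN by (simp add: in_dom_def)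
    then show "y (nn P + pp P + i) * w (nn P + pp P + i) \<le> 0" using h by (simp add: mult_nonpos_nonneg)
  qed
  have S1: "(\<Sum>i<nn P. E i) = (\<Sum>i<nn P. y i * w i - phi P i (n' * y i) / n')"
    by (rule sum.cong) (auto simp: E1)
  have S2: "(\<Sum>j<pp P. E (nn P + j)) = 0" by (simp add: E2)
  have S3: "(\<Sum>i<mm P. E (nn P + pp P + i)) \<le> 0"
    by (rule sum_nonpos) (use E3 in auto)
  have Lg: "Lagr P x w = fobj P x + (\<Sum>i<nn P. w i * ((Acol P i \<bullet> x) / n'))
     + (\<Sum>j<pp P. w (nn P + j) * (Brow P j \<bullet> x + bv P j))
     + (\<Sum>i<mm P. w (nn P + pp P + i) * gc P i x)"
    by (simp add: Lagr_def n'_def)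
  have Dl: "delta_inner P x (\<lambda>i. n' * y i) w = (\<Sum>i<nn P. ((Acol P i \<bullet> x - n' * y i) / n') * w i)
     + (\<Sum>j<pp P. (Brow P j \<bullet> x + bv P j) * w (nn P + j))
     + (\<Sum>i<mm P. gc P i x * w (nn P + pp P + i))"
    by (simp add: delta_inner_def n'_def)
  have Ph: "phisum P (\<lambda>i. n' * y i) / n' = (\<Sum>i<nn P. phi P i (n' * y i) / n')"
    by (simp add: phisum_def sum_divide_distrib)
  have key: "(\<Sum>i<nn P. y i * w i - phi P i (n' * y i) / n') - (\<Sum>i<nn P. w i * ((Acol P i \<bullet> x) / n'))
      = - (\<Sum>i<nn P. ((Acol P i \<bullet> x - n' * y i) / n') * w i) - (\<Sum>i<nn P. phi P i (n' * y i) / n')"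
  proof -
    have "(\<Sum>i<nn P. y i * w i - phi P i (n' * y i) / n') - (\<Sum>i<nn P. w i * ((Acol P i \<bullet> x) / n'))
        = (\<Sum>i<nn P. y i * w i - phi P i (n' * y i) / n' - w i * ((Acol P i \<bullet> x) / n'))"
      by (simp only: sum_subtractf)
    also have "\<dots> = (\<Sum>i<nn P. - (((Acol P i \<bullet> x - n' * y i) / n') * w i) - phi P i (n' * y i) / n')"
      by (rule sum.cong[OF refl]) (use n'0 in \<open>simp add: field_simps\<close>)
    also have "\<dots> = - (\<Sum>i<nn P. ((Acol P i \<bullet> x - n' * y i) / n') * w i) - (\<Sum>i<nn P. phi P i (n' * y i) / n')"
      by (simp only: sum_subtractf sum_negf)
    finally show ?thesis .
  qed
  have eqB: "(\<Sum>j<pp P. w (nn P + j) * (Brow P j \<bullet> x + bv P j)) = (\<Sum>j<pp P. (Brow P j \<bullet> x + bv P j) * w (nn P + j))"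
    by (simp add: mult.commute)
  have eqC: "(\<Sum>i<mm P. w (nn P + pp P + i) * gc P i x) = (\<Sum>i<mm P. gc P i x * w (nn P + pp P + i))"
    by (simp add: mult.commute)
  show ?thesis
    unfolding x_def[symmetric] y_def[symmetric] n'_def[symmetric]
    using ellf_split S1 S2 S3 Lg Dl Ph key eqB eqC by (simp add: y_def zt_def)
qed

end


definition hS :: "'t::finite prob \<Rightarrow> (nat \<Rightarrow> real) \<Rightarrow> (nat \<Rightarrow> nat) \<Rightarrow> nat \<Rightarrow> real" where
  "hS P u0 s k = (\<Sum>j<nhat P. hh P u0 s k j)"

definition Inv :: "'t::finite prob \<Rightarrow> (nat \<Rightarrow> real) \<Rightarrow> (nat \<Rightarrow> nat) \<Rightarrow> nat \<Rightarrow> bool" where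
  "Inv P u0 s k \<longleftrightarrow> in_dom P (z_it P u0 s k)
     \<and> (1 \<le> k \<longrightarrow> (\<forall>j<nhat P. hfun P j (z_it P u0 s k j) < \<infinity>))
     \<and> (\<forall>j<nhat P. \<exists>r \<rho>. u_it P u0 s k j = (1 - alph P k) * r + alph P k * z_it P u0 s k j
            \<and> hh P u0 s k j = (1 - alph P k) * \<rho> + alph P k * Hf P j (z_it P u0 s k j)
            \<and> hfun P j r < \<infinity> \<and> Hf P j r \<le> \<rho>)"

locale setting2 = setting P M for P :: "'t::finite prob" and M :: real +
  fixes u0 ustar :: "nat \<Rightarrow> real"
  assumes u0_dom: "in_dom P u0" and us_dom: "in_dom P ustar"
    and us_fin: "\<And>j. j < nhat P \<Longrightarrow> hfun P j (ustar j) < \<infinity>"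
    and good: "(\<forall>j<nhat P. hfun P j (u0 j) < \<infinity>) \<or> nhat P = 1"
begin

lemma fin_dom: "hfun P j r < \<infinity> \<Longrightarrow> nn P + pp P \<le> j \<Longrightarrow> 0 \<le> r"
  by (simp add: hfun_ineq split: if_splits)

lemma Inv_0: "Inv P u0 s 0"
  unfolding Inv_def
proof (intro conjI allI impI)
  show "in_dom P (z_it P u0 s 0)" using u0_dom by (simp add: z_it_0)
  show "1 \<le> (0::nat) \<Longrightarrow> j < nhat P \<Longrightarrow> hfun P j (z_it P u0 s 0 j) < \<infinity>" for j by simp
  fix j assume j: "j < nhat P"
  show "\<exists>r \<rho>. u_it P u0 s 0 j = (1 - alph P 0) * r + alph P 0 * z_it P u0 s 0 j
            \<and> hh P u0 s 0 j = (1 - alph P 0) * \<rho> + alph P 0 * Hf P j (z_it P u0 s 0 j)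
            \<and> hfun P j r < \<infinity> \<and> Hf P j r \<le> \<rho>"
    by (rule exI[of _ "ustar j"], rule exI[of _ "Hf P j (ustar j)"]) (use us_fin[OF j] in \<open>simp add: alph_def z_it_0 u_it_0\<close>)
qed

lemma Inv_u_dom:
  assumes "Inv P u0 s k"
  shows "in_dom P (u_it P u0 s k)"
  unfolding in_dom_def
proof (intro allI impI)
  fix j assume j: "nn P + pp P \<le> j \<and> j < nhat P"
  obtain r \<rho> where u: "u_it P u0 s k j = (1 - alph P k) * r + alph P k * z_it P u0 s k j"
    and fr: "hfun P j r < \<infinity>"
    using assms j unfolding Inv_def by blast
  have "0 \<le> r" using fin_dom fr j by blast
  moreover have "0 \<le> z_it P u0 s k j" using assms j unfolding Inv_def in_dom_def by blast
  ultimately show "0 \<le> u_it P u0 s k j"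
    using u alph_bounds[OF N_ge1, of k] by simp
qed

lemma Inv_u_fin:
  assumes inv: "Inv P u0 s k" and k: "1 \<le> k" and j: "j < nhat P"
  shows "hfun P j (u_it P u0 s k j) < \<infinity> \<and> Hf P j (u_it P u0 s k j) \<le> hh P u0 s k j"
proof -
  obtain r \<rho> where u: "u_it P u0 s k j = (1 - alph P k) * r + alph P k * z_it P u0 s k j"
    and h: "hh P u0 s k j = (1 - alph P k) * \<rho> + alph P k * Hf P j (z_it P u0 s k j)"
    and fr: "hfun P j r < \<infinity>" and rr: "Hf P j r \<le> \<rho>"
    using inv j unfolding Inv_def by blast
  have fz: "hfun P j (z_it P u0 s k j) < \<infinity>" using inv k j unfolding Inv_def by blast
  have a0: "0 \<le> alph P k" and a1: "alph P k \<le> 1" using alph_bounds[OF N_ge1] by auto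
  have c: "hfun P j ((1 - alph P k) * r + (1 - (1 - alph P k)) * z_it P u0 s k j) < \<infinity> \<and>
        Hf P j ((1 - alph P k) * r + (1 - (1 - alph P k)) * z_it P u0 s k j) \<le> (1 - alph P k) * Hf P j r + (1 - (1 - alph P k)) * Hf P j (z_it P u0 s k j)"
    by (rule h_convex2[OF fr fz]) (use a0 a1 in auto)
  have "(1 - alph P k) * Hf P j r \<le> (1 - alph P k) * \<rho>" using rr a1 by (intro mult_left_mono) auto
  then show ?thesis using c u h by simp
qed

lemma Inv_Suc:
  assumes inv: "Inv P u0 s k" and sk: "s k < nhat P"
  shows "Inv P u0 s (Suc k)"
proof -
  define z where "z = z_it P u0 s k"
  define u where "u = u_it P u0 s k"
  define v where "v = v_it P u0 s k"
  define zt where "zt = zt_it P u0 s k"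
  define i where "i = s k"
  define th where "th = theta P k"
  define NN where "NN = real (nhat P)"
  define al where "al = alph P k"
  have zS: "z_it P u0 s (Suc k) = z(i := zt i)" by (simp add: z_it_Suc z_def zt_def i_def)
  have uS: "u_it P u0 s (Suc k) j = (1 - th) * u j - (NN - 1) * th * z j + NN * th * (z(i := zt i)) j" for j
    by (simp add: u_it_Suc z_it_Suc v_it_def u_def z_def zt_def i_def th_def NN_def algebra_simps)
  have hS: "hh P u0 s (Suc k) j = (1 - th) * hh P u0 s k j + th * (NN * Hf P j ((z(i := zt i)) j) - (NN - 1) * Hf P j (z j))" for j
    by (simp add: zS z_def th_def NN_def)
  have alS: "alph P (Suc k) = NN * th" by (simp add: alph_Suc NN_def th_def)
  have zt_eq: "zt j = ztil P k v z j" for j by (simp add: zt_def zt_it_def v_def z_def)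
  have ztfin: "hfun P j (zt j) < \<infinity>" if "j < nhat P" for j
    using prox_all(1)[OF that, of k v z] by (simp add: zt_eq)
  have ztdom: "0 \<le> zt j" if "nn P + pp P \<le> j" "j < nhat P" for j
    using prox_all(5)[OF that(2), of k v z] that(1) by (simp add: zt_eq)
  have th0: "0 < th" and th1: "th \<le> 1" using theta_pos' theta_le1[OF N_ge1] by (auto simp: th_def)
  have Nth: "NN * th \<le> 1" using theta_Nle1[OF N_ge1] by (simp add: NN_def th_def)
  have NN1: "1 \<le> NN" using N_ge1 by (simp add: NN_def)
  have al0: "0 \<le> al" and al1: "al \<le> 1" using alph_bounds[OF N_ge1] by (auto simp: al_def)
  have bcond: "0 \<le> (1 - th) * al - (NN - 1) * th" using alph_cond[OF N_ge1, of k] by (simp add: al_def NN_def th_def)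
  have I1: "in_dom P (z(i := zt i))"
    using inv ztdom unfolding Inv_def in_dom_def by (auto simp: z_def)
  have zfin_k: "1 \<le> k \<Longrightarrow> j < nhat P \<Longrightarrow> hfun P j (z j) < \<infinity>" for j
    using inv unfolding Inv_def z_def by blast
  have I2: "\<forall>j<nhat P. hfun P j ((z(i := zt i)) j) < \<infinity>"
  proof (intro allI impI)
    fix j assume j: "j < nhat P"
    show "hfun P j ((z(i := zt i)) j) < \<infinity>"
    proof (cases "j = i")
      case True then show ?thesis using ztfin[OF j] by simp
    next
      case False
      show ?thesis
      proof (cases "k = 0")
        case True
        have "hfun P j (u0 j) < \<infinity>"
        proof (cases "nhat P = 1")
          case True
          then have "j = 0" "i = 0" using j sk by (auto simp: i_def)
          then show ?thesis using \<open>j \<noteq> i\<close> by simp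
        next
          case False then show ?thesis using good j by blast
        qed
        then show ?thesis using False True by (simp add: z_def z_it_0)
      next
        case False
        then show ?thesis using zfin_k[of j] j \<open>j \<noteq> i\<close> by simp
      qed
    qed
  qed
  have I3: "\<exists>r \<rho>. u_it P u0 s (Suc k) j = (1 - alph P (Suc k)) * r + alph P (Suc k) * (z(i := zt i)) j
            \<and> hh P u0 s (Suc k) j = (1 - alph P (Suc k)) * \<rho> + alph P (Suc k) * Hf P j ((z(i := zt i)) j)
            \<and> hfun P j r < \<infinity> \<and> Hf P j r \<le> \<rho>" if j: "j < nhat P" for j
  proof -
    obtain r \<rho> where u: "u j = (1 - al) * r + al * z j"
      and h: "hh P u0 s k j = (1 - al) * \<rho> + al * Hf P j (z j)"
      and fr: "hfun P j r < \<infinity>" and rr: "Hf P j r \<le> \<rho>"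
      using inv j unfolding Inv_def u_def z_def al_def by blast
    define a where "a = (1 - th) * (1 - al)"
    define b where "b = (1 - th) * al - (NN - 1) * th"
    have a0: "0 \<le> a" using th1 al1 by (simp add: a_def)
    have b0: "0 \<le> b" using bcond by (simp add: b_def)
    have ab: "a + b = 1 - NN * th" by (simp add: a_def b_def algebra_simps)
    have uS': "u_it P u0 s (Suc k) j = a * r + b * z j + NN * th * (z(i := zt i)) j"
      by (simp add: uS u a_def b_def algebra_simps)
    have hS': "hh P u0 s (Suc k) j = a * \<rho> + b * Hf P j (z j) + NN * th * Hf P j ((z(i := zt i)) j)"
      unfolding hS h by (simp add: a_def b_def algebra_simps)
    show ?thesis
    proof (cases "a + b = 0")
      case True
      then have "a = 0" "b = 0" using a0 b0 by auto
      then show ?thesis using True ab uS' hS' fr rr alS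
        by (intro exI[of _ r] exI[of _ \<rho>]) simp
    next
      case False
      then have abp: "0 < a + b" using a0 b0 by simp
      define l where "l = a / (a + b)"
      have l0: "0 \<le> l" and l1: "l \<le> 1" using a0 b0 abp by (auto simp: l_def)
      have oml: "1 - l = b / (a + b)" using abp by (simp add: l_def field_simps)
      define r' where "r' = l * r + (1 - l) * z j"
      define \<rho>' where "\<rho>' = l * \<rho> + (1 - l) * Hf P j (z j)"
      have fr': "hfun P j r' < \<infinity> \<and> Hf P j r' \<le> \<rho>'"
      proof (cases "b = 0")
        case True
        then have "l = 1" using abp by (simp add: l_def)
        then show ?thesis using fr rr by (simp add: r'_def \<rho>'_def)
      next
        case False
        have k1: "1 \<le> k"
        proof (rule ccontr)
          assume "\<not> 1 \<le> k"
          then have "k = 0" by simp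
          then have "b = 0" using NN1 by (simp add: b_def th_def al_def alph_def NN_def field_simps)
          then show False using False by simp
        qed
        have fz: "hfun P j (z j) < \<infinity>" using zfin_k[OF k1 j] .
        have c: "hfun P j r' < \<infinity> \<and> Hf P j r' \<le> l * Hf P j r + (1 - l) * Hf P j (z j)"
          unfolding r'_def by (rule h_convex2[OF fr fz l0 l1])
        have "l * Hf P j r \<le> l * \<rho>" using rr l0 by (rule mult_left_mono)
        then show ?thesis using c by (simp add: \<rho>'_def)
      qed
      have la: "(a + b) * l = a" using abp by (simp add: l_def)
      have lb: "(a + b) * (1 - l) = b" using abp oml by simp
      have "(a + b) * r' = ((a + b) * l) * r + ((a + b) * (1 - l)) * z j" by (simp add: r'_def algebra_simps)
      then have e1: "(a + b) * r' = a * r + b * z j" using la lb by simp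
      have "(a + b) * \<rho>' = ((a + b) * l) * \<rho> + ((a + b) * (1 - l)) * Hf P j (z j)" by (simp add: \<rho>'_def algebra_simps)
      then have e2: "(a + b) * \<rho>' = a * \<rho> + b * Hf P j (z j)" using la lb by simp
      show ?thesis
        by (rule exI[of _ r'], rule exI[of _ \<rho>'])
           (use fr' e1 e2 uS' hS' ab alS in \<open>simp add: algebra_simps\<close>)
    qed
  qed
  show ?thesis
    unfolding Inv_def zS[symmetric]
    using I1 I2 I3 zS by simp
qed

lemma Inv_all: "(\<And>j. j < k \<Longrightarrow> s j < nhat P) \<Longrightarrow> Inv P u0 s k"
proof (induction k)
  case 0
  show ?case by (rule Inv_0)
next
  case (Suc k)
  then show ?case using Inv_Suc by simp
qed

end


definition Fv :: "'t::finite prob \<Rightarrow> (nat \<Rightarrow> real) \<Rightarrow> real \<Rightarrow> (nat \<Rightarrow> nat) \<Rightarrow> nat \<Rightarrow> real" where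
  "Fv P u0 Ds s k = dfun P (u_it P u0 s k) + hS P u0 s k - Ds"

definition Zw :: "'t::finite prob \<Rightarrow> (nat \<Rightarrow> real) \<Rightarrow> (nat \<Rightarrow> real) \<Rightarrow> (nat \<Rightarrow> nat) \<Rightarrow> nat \<Rightarrow> real" where
  "Zw P u0 w s k = Lnorm_sq P (\<lambda>j. z_it P u0 s k j - w j)"

definition Dl :: "'t::finite prob \<Rightarrow> (nat \<Rightarrow> real) \<Rightarrow> (nat \<Rightarrow> nat) \<Rightarrow> nat \<Rightarrow> real" where
  "Dl P u0 s k = Lnorm_sq P (\<lambda>j. z_it P u0 s (Suc k) j - z_it P u0 s k j)"

definition Tk :: "'t::finite prob \<Rightarrow> (nat \<Rightarrow> real) \<Rightarrow> (nat \<Rightarrow> real) \<Rightarrow> (nat \<Rightarrow> nat) \<Rightarrow> nat \<Rightarrow> real" where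
  "Tk P u0 w s k = - Lagr P (xstar P (v_it P u0 s k)) w + ellf P k (v_it P u0 s k) (z_it P u0 s k) w"

context setting2
begin

lemma step_s:
  fixes w :: "nat \<Rightarrow> real" and Ds :: real
  assumes inv: "Inv P u0 s k"
  shows "(1 / real (nhat P)) * (\<Sum>i<nhat P. inv_theta_sq_prev P (Suc k) * Fv P u0 Ds (s(k := i)) (Suc k)
            + (real (nhat P))\<^sup>2 * Zw P u0 w (s(k := i)) (Suc k) + (real (nhat P))\<^sup>2 / 2 * Dl P u0 (s(k := i)) k)
     \<le> inv_theta_sq_prev P k * Fv P u0 Ds s k + (real (nhat P))\<^sup>2 * Zw P u0 w s k + (1 / theta P k) * (Tk P u0 w s k - Ds)"
proof -
  define z where "z = z_it P u0 s k"
  define u where "u = u_it P u0 s k"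
  define v where "v = v_it P u0 s k"
  define zt where "zt = ztil P k v z"
  define hsc where "hsc = hS P u0 s k"
  define th where "th = theta P k"
  define NN where "NN = real (nhat P)"
  have th0: "0 < th" using theta_pos' by (simp add: th_def)
  have NN1: "1 \<le> NN" using N_ge1 by (simp add: NN_def)
  have udom: "in_dom P u" using Inv_u_dom[OF inv] by (simp add: u_def)
  have zdom: "in_dom P z" using inv by (simp add: Inv_def z_def)
  have vdef: "v = (\<lambda>i. theta P k * z i + (1 - theta P k) * u i)" by (simp add: v_def v_it_def z_def u_def fun_eq_iff)
  have dep: "\<And>j. j < k \<Longrightarrow> (s(k := i)) j = s j" for i by simp
  have ztit: "zt_it P u0 (s(k := i)) k = zt" for i
    by (simp add: zt_it_def v_it_def z_it_dep[OF dep] u_it_dep[OF dep] zt_def v_def z_def)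
  have zk: "z_it P u0 (s(k := i)) k = z" for i by (simp add: z_it_dep[OF dep] z_def)
  have zS: "z_it P u0 (s(k := i)) (Suc k) = z(i := zt i)" for i
    by (simp add: z_it_Suc ztit z_it_dep[OF dep] z_def)
  have uS: "u_it P u0 (s(k := i)) (Suc k) = (\<lambda>j. v j + NN * th * ((z(i := zt i)) j - z j))" for i
    unfolding u_it_Suc zS by (simp add: v_it_def z_it_dep[OF dep] u_it_dep[OF dep] v_def z_def NN_def th_def)
  have hSS: "hS P u0 (s(k := i)) (Suc k) = (1 - th) * hsc + th * (NN * Hs P (z(i := zt i)) - (NN - 1) * Hs P z)" for i
  proof -
    have "hS P u0 (s(k := i)) (Suc k) = (\<Sum>j<nhat P. (1 - th) * hh P u0 s k j + th * (NN * Hf P j ((z(i := zt i)) j) - (NN - 1) * Hf P j (z j)))"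
      unfolding hS_def by (simp add: zS hh_dep[OF dep] z_it_dep[OF dep] z_def th_def NN_def del: fun_upd_apply)
    also have "\<dots> = (1 - th) * hsc + th * (NN * Hs P (z(i := zt i)) - (NN - 1) * Hs P z)"
      by (simp add: sum.distrib sum_subtractf sum_distrib_left hsc_def hS_def Hs_def algebra_simps)
    finally show ?thesis .
  qed
  note core = step_core[OF udom zdom vdef, of hsc w]
  define A where "A = (1 / NN) * (\<Sum>i<nhat P. dfun P (\<lambda>j. v j + NN * th * ((z(i := zt i)) j - z j))
          + ((1 - th) * hsc + th * (NN * Hs P (z(i := zt i)) - (NN - 1) * Hs P z)))"
  define T where "T = - Lagr P (xstar P v) w + ellf P k v z w"
  define LWZ where "LWZ = Lnorm_sq P (\<lambda>j. z j - w j)"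
  define LWT where "LWT = Lnorm_sq P (\<lambda>j. zt j - w j)"
  define LZ where "LZ = Lnorm_sq P (\<lambda>j. zt j - z j)"
  have core': "A \<le> (1 - th) * (dfun P u + hsc) + th * T + NN * th\<^sup>2 * (LWZ - LWT) - NN * th\<^sup>2 / 2 * LZ"
    using core unfolding A_def T_def LWZ_def LWT_def LZ_def zt_def th_def NN_def
    by (simp add: Lnorm_commute[of P w])
  have B: "(1 / NN) * (\<Sum>i<nhat P. Zw P u0 w (s(k := i)) (Suc k)) = (1 - 1 / NN) * LWZ + (1 / NN) * LWT"
    unfolding Zw_def zS LWZ_def LWT_def NN_def by (rule avg_Lnorm_upd[OF N_ge1])
  have C: "(1 / NN) * (\<Sum>i<nhat P. Dl P u0 (s(k := i)) k) = (1 / NN) * LZ"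
  proof -
    have "(1 / NN) * (\<Sum>i<nhat P. Dl P u0 (s(k := i)) k) = (1 - 1 / NN) * Lnorm_sq P (\<lambda>j. z j - z j) + (1 / NN) * LZ"
      unfolding Dl_def zS zk LZ_def NN_def by (rule avg_Lnorm_upd[OF N_ge1])
    then show ?thesis by (simp add: Lnorm_sq_def)
  qed
  have Aeq: "(1 / NN) * (\<Sum>i<nhat P. Fv P u0 Ds (s(k := i)) (Suc k)) = A - Ds"
  proof -
    have "(\<Sum>i<nhat P. Fv P u0 Ds (s(k := i)) (Suc k)) = (\<Sum>i<nhat P. dfun P (\<lambda>j. v j + NN * th * ((z(i := zt i)) j - z j))
          + ((1 - th) * hsc + th * (NN * Hs P (z(i := zt i)) - (NN - 1) * Hs P z))) - NN * Ds"
      by (simp add: Fv_def uS hSS sum_subtractf NN_def)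
    then show ?thesis using NN1 by (simp add: A_def right_diff_distrib)
  qed
  have LHS: "(1 / NN) * (\<Sum>i<nhat P. inv_theta_sq_prev P (Suc k) * Fv P u0 Ds (s(k := i)) (Suc k)
            + NN\<^sup>2 * Zw P u0 w (s(k := i)) (Suc k) + NN\<^sup>2 / 2 * Dl P u0 (s(k := i)) k)
      = (1 / th\<^sup>2) * (A - Ds) + NN\<^sup>2 * ((1 - 1 / NN) * LWZ + (1 / NN) * LWT) + NN\<^sup>2 / 2 * ((1 / NN) * LZ)"
  proof -
    have "(1 / NN) * (\<Sum>i<nhat P. inv_theta_sq_prev P (Suc k) * Fv P u0 Ds (s(k := i)) (Suc k)
            + NN\<^sup>2 * Zw P u0 w (s(k := i)) (Suc k) + NN\<^sup>2 / 2 * Dl P u0 (s(k := i)) k)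
        = inv_theta_sq_prev P (Suc k) * ((1 / NN) * (\<Sum>i<nhat P. Fv P u0 Ds (s(k := i)) (Suc k)))
          + NN\<^sup>2 * ((1 / NN) * (\<Sum>i<nhat P. Zw P u0 w (s(k := i)) (Suc k)))
          + NN\<^sup>2 / 2 * ((1 / NN) * (\<Sum>i<nhat P. Dl P u0 (s(k := i)) k))"
      by (simp add: sum.distrib sum_distrib_left[symmetric] sum_divide_distrib[symmetric] algebra_simps)
    then show ?thesis unfolding Aeq B C by (simp add: itsp_Suc th_def)
  qed
  have ck: "inv_theta_sq_prev P k = (1 - th) / th\<^sup>2" by (simp add: itsp_eq[OF N_ge1] th_def)
  have scaled: "(1 / th\<^sup>2) * A \<le> (1 / th\<^sup>2) * ((1 - th) * (dfun P u + hsc) + th * T + NN * th\<^sup>2 * (LWZ - LWT) - NN * th\<^sup>2 / 2 * LZ)"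
    using core' th0 by (intro mult_left_mono) auto
  have ex: "(1 / th\<^sup>2) * ((1 - th) * (dfun P u + hsc) + th * T + NN * th\<^sup>2 * (LWZ - LWT) - NN * th\<^sup>2 / 2 * LZ)
      = ((1 - th) / th\<^sup>2) * (dfun P u + hsc) + (1 / th) * T + NN * LWZ - NN * LWT - NN / 2 * LZ"
    using th0 by (simp add: field_simps power2_eq_square)
  have ex2: "(1 / th\<^sup>2) * (A - Ds) = (1 / th\<^sup>2) * A - ((1 - th) / th\<^sup>2) * Ds - (1 / th) * Ds"
    using th0 by (simp add: field_simps power2_eq_square)
  have ex3: "NN\<^sup>2 * ((1 - 1 / NN) * LWZ + (1 / NN) * LWT) + NN\<^sup>2 / 2 * ((1 / NN) * LZ)
      = NN\<^sup>2 * LWZ - NN * LWZ + NN * LWT + NN / 2 * LZ"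
    using NN1 by (simp add: field_simps power2_eq_square)
  have R: "inv_theta_sq_prev P k * Fv P u0 Ds s k + NN\<^sup>2 * Zw P u0 w s k + (1 / th) * (Tk P u0 w s k - Ds)
      = ((1 - th) / th\<^sup>2) * (dfun P u + hsc) - ((1 - th) / th\<^sup>2) * Ds + NN\<^sup>2 * LWZ + (1 / th) * T - (1 / th) * Ds"
    by (simp add: ck Fv_def Zw_def Tk_def u_def hsc_def z_def[symmetric] LWZ_def T_def v_def algebra_simps)
  show ?thesis
    unfolding NN_def[symmetric] th_def[symmetric] LHS R
    using scaled ex ex2 ex3 by linarith
qed

lemma Inv_seqs: "s \<in> seqs P K \<Longrightarrow> k \<le> Suc K \<Longrightarrow> Inv P u0 s k"
  by (rule Inv_all) (auto intro: seqs_range)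

lemma sum_step:
  fixes w :: "nat \<Rightarrow> real" and Ds :: real
  assumes kK: "k \<le> K"
  shows "(\<Sum>s\<in>seqs P K. inv_theta_sq_prev P (Suc k) * Fv P u0 Ds s (Suc k)
            + (real (nhat P))\<^sup>2 * Zw P u0 w s (Suc k) + (real (nhat P))\<^sup>2 / 2 * Dl P u0 s k)
     \<le> (\<Sum>s\<in>seqs P K. inv_theta_sq_prev P k * Fv P u0 Ds s k + (real (nhat P))\<^sup>2 * Zw P u0 w s k
            + (1 / theta P k) * (Tk P u0 w s k - Ds))"
proof -
  define X where "X s = inv_theta_sq_prev P (Suc k) * Fv P u0 Ds s (Suc k)
            + (real (nhat P))\<^sup>2 * Zw P u0 w s (Suc k) + (real (nhat P))\<^sup>2 / 2 * Dl P u0 s k" for s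
  have "(\<Sum>s\<in>seqs P K. X s) = (\<Sum>s\<in>seqs P K. (1 / real (nhat P)) * (\<Sum>i<nhat P. X (s(k := i))))"
    by (rule seqs_swap[OF kK N_ge1, symmetric])
  also have "\<dots> \<le> (\<Sum>s\<in>seqs P K. inv_theta_sq_prev P k * Fv P u0 Ds s k + (real (nhat P))\<^sup>2 * Zw P u0 w s k
            + (1 / theta P k) * (Tk P u0 w s k - Ds))"
  proof (rule sum_mono)
    fix s assume s: "s \<in> seqs P K"
    have inv: "Inv P u0 s k" using Inv_seqs[OF s] kK by simp
    show "(1 / real (nhat P)) * (\<Sum>i<nhat P. X (s(k := i))) \<le> inv_theta_sq_prev P k * Fv P u0 Ds s k
        + (real (nhat P))\<^sup>2 * Zw P u0 w s k + (1 / theta P k) * (Tk P u0 w s k - Ds)"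
      unfolding X_def by (rule step_s[OF inv])
  qed
  finally show ?thesis unfolding X_def .
qed

definition Dst where "Dst = dfun P ustar + Hs P ustar"

lemma T_le_Dst: "Tk P u0 ustar s k \<le> Dst"
  unfolding Tk_def Dst_def by (rule T_star[OF us_dom us_fin])

lemma tele_star:
  assumes "k1 \<le> k2" "k2 \<le> Suc K"
  shows "(\<Sum>s\<in>seqs P K. inv_theta_sq_prev P k2 * Fv P u0 Dst s k2 + (real (nhat P))\<^sup>2 * Zw P u0 ustar s k2)
     + (real (nhat P))\<^sup>2 / 2 * (\<Sum>k\<in>{k1..<k2}. \<Sum>s\<in>seqs P K. Dl P u0 s k)
     \<le> (\<Sum>s\<in>seqs P K. inv_theta_sq_prev P k1 * Fv P u0 Dst s k1 + (real (nhat P))\<^sup>2 * Zw P u0 ustar s k1)"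
  using assms
proof (induction k2)
  case 0
  then show ?case by simp
next
  case (Suc k2)
  show ?case
  proof (cases "k1 = Suc k2")
    case True
    then show ?thesis by simp
  next
    case False
    then have k12: "k1 \<le> k2" using Suc by simp
    have kK: "k2 \<le> K" using Suc by simp
    have IH: "(\<Sum>s\<in>seqs P K. inv_theta_sq_prev P k2 * Fv P u0 Dst s k2 + (real (nhat P))\<^sup>2 * Zw P u0 ustar s k2)
     + (real (nhat P))\<^sup>2 / 2 * (\<Sum>k\<in>{k1..<k2}. \<Sum>s\<in>seqs P K. Dl P u0 s k)
     \<le> (\<Sum>s\<in>seqs P K. inv_theta_sq_prev P k1 * Fv P u0 Dst s k1 + (real (nhat P))\<^sup>2 * Zw P u0 ustar s k1)"
      using Suc k12 by simp
    have st: "(\<Sum>s\<in>seqs P K. inv_theta_sq_prev P (Suc k2) * Fv P u0 Dst s (Suc k2)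
            + (real (nhat P))\<^sup>2 * Zw P u0 ustar s (Suc k2) + (real (nhat P))\<^sup>2 / 2 * Dl P u0 s k2)
     \<le> (\<Sum>s\<in>seqs P K. inv_theta_sq_prev P k2 * Fv P u0 Dst s k2 + (real (nhat P))\<^sup>2 * Zw P u0 ustar s k2
            + (1 / theta P k2) * (Tk P u0 ustar s k2 - Dst))"
      by (rule sum_step[OF kK])
    also have "\<dots> \<le> (\<Sum>s\<in>seqs P K. inv_theta_sq_prev P k2 * Fv P u0 Dst s k2 + (real (nhat P))\<^sup>2 * Zw P u0 ustar s k2)"
    proof (rule sum_mono)
      fix s
      have "(1 / theta P k2) * (Tk P u0 ustar s k2 - Dst) \<le> 0"
        using T_le_Dst[of s k2] theta_pos'[of k2] by (simp add: divide_nonpos_pos)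
      then show "inv_theta_sq_prev P k2 * Fv P u0 Dst s k2 + (real (nhat P))\<^sup>2 * Zw P u0 ustar s k2
            + (1 / theta P k2) * (Tk P u0 ustar s k2 - Dst) \<le> inv_theta_sq_prev P k2 * Fv P u0 Dst s k2 + (real (nhat P))\<^sup>2 * Zw P u0 ustar s k2"
        by simp
    qed
    finally have st2: "(\<Sum>s\<in>seqs P K. inv_theta_sq_prev P (Suc k2) * Fv P u0 Dst s (Suc k2) + (real (nhat P))\<^sup>2 * Zw P u0 ustar s (Suc k2))
      + (real (nhat P))\<^sup>2 / 2 * (\<Sum>s\<in>seqs P K. Dl P u0 s k2)
      \<le> (\<Sum>s\<in>seqs P K. inv_theta_sq_prev P k2 * Fv P u0 Dst s k2 + (real (nhat P))\<^sup>2 * Zw P u0 ustar s k2)"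
      by (simp add: sum.distrib sum_distrib_left)
    have "{k1..<Suc k2} = insert k2 {k1..<k2}" using k12 by auto
    then have sp: "(\<Sum>k\<in>{k1..<Suc k2}. \<Sum>s\<in>seqs P K. Dl P u0 s k) = (\<Sum>s\<in>seqs P K. Dl P u0 s k2) + (\<Sum>k\<in>{k1..<k2}. \<Sum>s\<in>seqs P K. Dl P u0 s k)"
      by simp
    show ?thesis using IH st2 unfolding sp by (simp add: distrib_left)
  qed
qed

lemma tele_gap:
  assumes wdom: "in_dom P w" and "K0 \<le> k2" "k2 \<le> K"
  shows "(\<Sum>k=K0..k2. \<Sum>s\<in>seqs P K. (1 / theta P k) * (Dst - Tk P u0 w s k))
     + (\<Sum>s\<in>seqs P K. inv_theta_sq_prev P (Suc k2) * Fv P u0 Dst s (Suc k2) + (real (nhat P))\<^sup>2 * Zw P u0 w s (Suc k2))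
     \<le> (\<Sum>s\<in>seqs P K. inv_theta_sq_prev P K0 * Fv P u0 Dst s K0 + (real (nhat P))\<^sup>2 * Zw P u0 w s K0)"
  using assms(2,3)
proof (induction k2)
  case 0
  then have K00: "K0 = 0" by simp
  have st: "(\<Sum>s\<in>seqs P K. inv_theta_sq_prev P (Suc 0) * Fv P u0 Dst s (Suc 0)
            + (real (nhat P))\<^sup>2 * Zw P u0 w s (Suc 0) + (real (nhat P))\<^sup>2 / 2 * Dl P u0 s 0)
     \<le> (\<Sum>s\<in>seqs P K. inv_theta_sq_prev P 0 * Fv P u0 Dst s 0 + (real (nhat P))\<^sup>2 * Zw P u0 w s 0
            + (1 / theta P 0) * (Tk P u0 w s 0 - Dst))"
    by (rule sum_step) simp
  have dl: "0 \<le> (\<Sum>s\<in>seqs P K. (real (nhat P))\<^sup>2 / 2 * Dl P u0 s 0)"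
    by (intro sum_nonneg mult_nonneg_nonneg) (auto simp: Dl_def Lnorm_nonneg mu_pos)
  have e: "(\<Sum>s\<in>seqs P K. (1 / theta P 0) * (Dst - Tk P u0 w s 0)) = - (\<Sum>s\<in>seqs P K. (1 / theta P 0) * (Tk P u0 w s 0 - Dst))"
    by (simp add: sum_negf[symmetric] algebra_simps)
  show ?case using st dl e K00 by (simp add: sum.distrib)
next
  case (Suc k2)
  have kK: "Suc k2 \<le> K" using Suc by simp
  have st: "(\<Sum>s\<in>seqs P K. inv_theta_sq_prev P (Suc (Suc k2)) * Fv P u0 Dst s (Suc (Suc k2))
            + (real (nhat P))\<^sup>2 * Zw P u0 w s (Suc (Suc k2)) + (real (nhat P))\<^sup>2 / 2 * Dl P u0 s (Suc k2))
     \<le> (\<Sum>s\<in>seqs P K. inv_theta_sq_prev P (Suc k2) * Fv P u0 Dst s (Suc k2) + (real (nhat P))\<^sup>2 * Zw P u0 w s (Suc k2)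
            + (1 / theta P (Suc k2)) * (Tk P u0 w s (Suc k2) - Dst))"
    by (rule sum_step[OF kK])
  have dl: "0 \<le> (\<Sum>s\<in>seqs P K. (real (nhat P))\<^sup>2 / 2 * Dl P u0 s (Suc k2))"
    by (intro sum_nonneg mult_nonneg_nonneg) (auto simp: Dl_def Lnorm_nonneg mu_pos)
  have e: "(\<Sum>s\<in>seqs P K. (1 / theta P (Suc k2)) * (Dst - Tk P u0 w s (Suc k2))) = - (\<Sum>s\<in>seqs P K. (1 / theta P (Suc k2)) * (Tk P u0 w s (Suc k2) - Dst))"
    by (simp add: sum_negf[symmetric] algebra_simps)
  show ?case
  proof (cases "K0 = Suc k2")
    case True
    then show ?thesis using st dl e by (simp add: sum.distrib)
  next
    case False
    then have "K0 \<le> k2" "k2 \<le> K" using Suc by auto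
    then have IH: "(\<Sum>k=K0..k2. \<Sum>s\<in>seqs P K. (1 / theta P k) * (Dst - Tk P u0 w s k))
     + (\<Sum>s\<in>seqs P K. inv_theta_sq_prev P (Suc k2) * Fv P u0 Dst s (Suc k2) + (real (nhat P))\<^sup>2 * Zw P u0 w s (Suc k2))
     \<le> (\<Sum>s\<in>seqs P K. inv_theta_sq_prev P K0 * Fv P u0 Dst s K0 + (real (nhat P))\<^sup>2 * Zw P u0 w s K0)"
      using Suc.IH by simp
    have sp: "(\<Sum>k=K0..Suc k2. \<Sum>s\<in>seqs P K. (1 / theta P k) * (Dst - Tk P u0 w s k))
       = (\<Sum>k=K0..k2. \<Sum>s\<in>seqs P K. (1 / theta P k) * (Dst - Tk P u0 w s k)) + (\<Sum>s\<in>seqs P K. (1 / theta P (Suc k2)) * (Dst - Tk P u0 w s (Suc k2)))"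
      using \<open>K0 \<le> k2\<close> by simp
    show ?thesis using IH st dl e unfolding sp by (simp add: sum.distrib)
  qed
qed

end


lemma Exp_ereal:
  assumes "1 \<le> nhat P"
  shows "Exp P K (\<lambda>s. ereal (X s)) = ereal ((\<Sum>s\<in>seqs P K. X s) / real (card (seqs P K)))"
proof -
  have "card (seqs P K) > 0" using assms by (simp add: card_seqs)
  then show ?thesis by (simp add: Exp_def sum_ereal)
qed

context setting
begin

lemma gap_jensen:
  fixes I :: "nat set" and a :: "nat \<Rightarrow> real" and x :: "nat \<Rightarrow> real^'t" and t :: "nat \<Rightarrow> nat \<Rightarrow> real"
  assumes fI: "finite I" and ne: "I \<noteq> {}" and a0: "\<And>k. k \<in> I \<Longrightarrow> 0 \<le> a k" and a1: "sum a I = 1"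
    and wdom: "in_dom P w"
  shows "delta_inner P (\<Sum>k\<in>I. a k *\<^sub>R x k) (\<lambda>i. \<Sum>k\<in>I. a k * t k i) w + fobj P (\<Sum>k\<in>I. a k *\<^sub>R x k)
          + phisum P (\<lambda>i. \<Sum>k\<in>I. a k * t k i) / real (nn P)
     \<le> (\<Sum>k\<in>I. a k * (delta_inner P (x k) (t k) w + fobj P (x k) + phisum P (t k) / real (nn P)))"
proof -
  define X where "X = (\<Sum>k\<in>I. a k *\<^sub>R x k)"
  define n' where "n' = real (nn P)"
  have n'0: "0 < n'" using n_pos by (simp add: n'_def)
  have F: "fobj P X \<le> (\<Sum>k\<in>I. a k * fobj P (x k))"
    unfolding X_def by (rule convex_on_sum[OF fI ne f_convex a1 a0]) auto
  have Ph: "phisum P (\<lambda>i. \<Sum>k\<in>I. a k * t k i) \<le> (\<Sum>k\<in>I. a k * phisum P (t k))"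
  proof -
    have "phisum P (\<lambda>i. \<Sum>k\<in>I. a k * t k i) \<le> (\<Sum>i<nn P. \<Sum>k\<in>I. a k * phi P i (t k i))"
      unfolding phisum_def
    proof (rule sum_mono)
      fix i assume "i \<in> {..<nn P}"
      then have "convex_on UNIV (phi P i)" using phi_cvx by auto
      then show "phi P i (\<Sum>k\<in>I. a k * t k i) \<le> (\<Sum>k\<in>I. a k * phi P i (t k i))"
        using convex_on_sum[OF fI ne _ a1 a0, of UNIV "phi P i" "\<lambda>k. t k i"] by simp
    qed
    also have "\<dots> = (\<Sum>k\<in>I. a k * phisum P (t k))"
      by (simp add: phisum_def sum_distrib_left sum.swap[of _ "{..<nn P}"])
    finally show ?thesis .
  qed
  have dA: "(\<Sum>i<nn P. ((Acol P i \<bullet> X - (\<Sum>k\<in>I. a k * t k i)) / n') * w i)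
       = (\<Sum>k\<in>I. a k * (\<Sum>i<nn P. ((Acol P i \<bullet> x k - t k i) / n') * w i))"
  proof -
    have "(\<Sum>i<nn P. ((Acol P i \<bullet> X - (\<Sum>k\<in>I. a k * t k i)) / n') * w i)
        = (\<Sum>i<nn P. \<Sum>k\<in>I. a k * (((Acol P i \<bullet> x k - t k i) / n') * w i))"
    proof (rule sum.cong[OF refl])
      fix i
      have "Acol P i \<bullet> X = (\<Sum>k\<in>I. a k * (Acol P i \<bullet> x k))" by (simp add: X_def inner_sum_right)
      then have "Acol P i \<bullet> X - (\<Sum>k\<in>I. a k * t k i) = (\<Sum>k\<in>I. a k * (Acol P i \<bullet> x k - t k i))"
        by (simp add: sum_subtractf right_diff_distrib)
      then have "((Acol P i \<bullet> X - (\<Sum>k\<in>I. a k * t k i)) / n') * w i = (\<Sum>k\<in>I. a k * (Acol P i \<bullet> x k - t k i)) * (w i / n')"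
        by simp
      also have "\<dots> = (\<Sum>k\<in>I. a k * (Acol P i \<bullet> x k - t k i) * (w i / n'))"
        by (rule sum_distrib_right)
      also have "\<dots> = (\<Sum>k\<in>I. a k * (((Acol P i \<bullet> x k - t k i) / n') * w i))"
        by (rule sum.cong) auto
      finally show "((Acol P i \<bullet> X - (\<Sum>k\<in>I. a k * t k i)) / n') * w i = (\<Sum>k\<in>I. a k * (((Acol P i \<bullet> x k - t k i) / n') * w i))" .
    qed
    also have "\<dots> = (\<Sum>k\<in>I. a k * (\<Sum>i<nn P. ((Acol P i \<bullet> x k - t k i) / n') * w i))"
      by (simp add: sum_distrib_left sum.swap[of _ "{..<nn P}"])
    finally show ?thesis .
  qed
  have dB: "(\<Sum>j<pp P. (Brow P j \<bullet> X + bv P j) * w (nn P + j))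
       = (\<Sum>k\<in>I. a k * (\<Sum>j<pp P. (Brow P j \<bullet> x k + bv P j) * w (nn P + j)))"
  proof -
    have "(\<Sum>j<pp P. (Brow P j \<bullet> X + bv P j) * w (nn P + j))
        = (\<Sum>j<pp P. \<Sum>k\<in>I. a k * ((Brow P j \<bullet> x k + bv P j) * w (nn P + j)))"
    proof (rule sum.cong[OF refl])
      fix j
      have "Brow P j \<bullet> X + bv P j = (\<Sum>k\<in>I. a k * (Brow P j \<bullet> x k)) + (\<Sum>k\<in>I. a k) * bv P j"
        using a1 by (simp add: X_def inner_sum_right)
      also have "\<dots> = (\<Sum>k\<in>I. a k * (Brow P j \<bullet> x k + bv P j))"
        by (simp add: sum.distrib sum_distrib_right distrib_left)
      finally show "(Brow P j \<bullet> X + bv P j) * w (nn P + j) = (\<Sum>k\<in>I. a k * ((Brow P j \<bullet> x k + bv P j) * w (nn P + j)))"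
        by (simp add: sum_distrib_right mult.assoc)
    qed
    also have "\<dots> = (\<Sum>k\<in>I. a k * (\<Sum>j<pp P. (Brow P j \<bullet> x k + bv P j) * w (nn P + j)))"
      by (simp add: sum_distrib_left sum.swap[of _ "{..<pp P}"])
    finally show ?thesis .
  qed
  have dC: "(\<Sum>i<mm P. gc P i X * w (nn P + pp P + i))
       \<le> (\<Sum>k\<in>I. a k * (\<Sum>i<mm P. gc P i (x k) * w (nn P + pp P + i)))"
  proof -
    have "(\<Sum>i<mm P. gc P i X * w (nn P + pp P + i))
        \<le> (\<Sum>i<mm P. \<Sum>k\<in>I. a k * (gc P i (x k) * w (nn P + pp P + i)))"
    proof (rule sum_mono)
      fix i assume i: "i \<in> {..<mm P}"
      have w0: "0 \<le> w (nn P + pp P + i)" using wdom i by (simp add: in_dom_def nhat_def)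
      have "convex_on UNIV (gc P i)" using g_cvx i by auto
      then have "gc P i X \<le> (\<Sum>k\<in>I. a k * gc P i (x k))"
        unfolding X_def by (rule convex_on_sum[OF fI ne _ a1 a0]) auto
      then have "gc P i X * w (nn P + pp P + i) \<le> (\<Sum>k\<in>I. a k * gc P i (x k)) * w (nn P + pp P + i)"
        using w0 by (rule mult_right_mono)
      then show "gc P i X * w (nn P + pp P + i) \<le> (\<Sum>k\<in>I. a k * (gc P i (x k) * w (nn P + pp P + i)))"
        by (simp add: sum_distrib_right mult.assoc)
    qed
    also have "\<dots> = (\<Sum>k\<in>I. a k * (\<Sum>i<mm P. gc P i (x k) * w (nn P + pp P + i)))"
      by (simp add: sum_distrib_left sum.swap[of _ "{..<mm P}"])
    finally show ?thesis .
  qed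
  have D: "delta_inner P X (\<lambda>i. \<Sum>k\<in>I. a k * t k i) w \<le> (\<Sum>k\<in>I. a k * delta_inner P (x k) (t k) w)"
    unfolding delta_inner_def n'_def[symmetric]
    using dA dB dC by (simp add: sum.distrib distrib_left)
  have Ph': "phisum P (\<lambda>i. \<Sum>k\<in>I. a k * t k i) / n' \<le> (\<Sum>k\<in>I. a k * (phisum P (t k) / n'))"
    using Ph n'0 by (simp add: sum_divide_distrib[symmetric] divide_right_mono)
  show ?thesis
    unfolding X_def[symmetric] n'_def[symmetric]
    using D F Ph' by (simp add: sum.distrib distrib_left)
qed

end


lemma y_it_eq: "y_it P u0 s k i = yv P k (v_it P u0 s k) (z_it P u0 s k) i"
  by (simp add: y_it_def yv_def zt_it_def algebra_simps)

context setting
begin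

lemma Dfun_fin:
  assumes "\<And>j. j < nhat P \<Longrightarrow> hfun P j (x j) < \<infinity>"
  shows "Dfun P x = ereal (dfun P x + Hs P x)"
proof -
  have "(\<Sum>i<nhat P. hfun P i (x i)) = (\<Sum>i<nhat P. ereal (Hf P i (x i)))"
    by (rule sum.cong) (auto intro: hfun_fin assms)
  then show ?thesis by (simp add: Dfun_def Hs_def sum_ereal)
qed

lemma Dfun_lt_inf:
  assumes "Dfun P x < \<infinity>" "j < nhat P"
  shows "hfun P j (x j) < \<infinity>"
proof (rule ccontr)
  assume "\<not> hfun P j (x j) < \<infinity>"
  then have "hfun P j (x j) = \<infinity>" by (simp add: top.not_eq_extremum)
  then have "(\<Sum>i<nhat P. hfun P i (x i)) = \<infinity>" using assms(2) by (auto simp: sum_Pinfty)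
  then have "Dfun P x = \<infinity>" by (simp add: Dfun_def)
  then show False using assms(1) by simp
qed

lemma Dfun_inf:
  assumes "j < nhat P" "hfun P j (x j) = \<infinity>"
  shows "Dfun P x = \<infinity>"
proof -
  have "(\<Sum>i<nhat P. hfun P i (x i)) = \<infinity>" using assms by (auto simp: sum_Pinfty)
  then show ?thesis by (simp add: Dfun_def)
qed

lemma exists_fin_point: "\<exists>w0. Dfun P w0 < \<infinity>"
proof -
  have ex: "\<exists>sg. \<forall>t. phi P j 0 + sg * t \<le> phi P j t" if "j < nn P" for j
  proof -
    have "convex_on UNIV (phi P j)" using phi_cvx that by auto
    from convex_subgradient_exists[OF this, of 0] show ?thesis by auto
  qed
  define w0 where "w0 j = (if j < nn P then (SOME sg. \<forall>t. phi P j 0 + sg * t \<le> phi P j t) else 0)" for j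
  have fin: "hfun P j (w0 j) < \<infinity>" if "j < nhat P" for j
  proof (cases "j < nn P")
    case True
    have "\<forall>t. phi P j 0 + w0 j * t \<le> phi P j t" unfolding w0_def using True someI_ex[OF ex[OF True]] by simp
    then have "\<forall>t. phi P j 0 + w0 j * (t - 0) \<le> phi P j t" by simp
    then have "conjugate (phi P j) (w0 j) = ereal (w0 j * 0 - phi P j 0)" by (rule conj_at_subgrad)
    then show ?thesis using True by (simp add: hfun_phi')
  next
    case False
    then show ?thesis by (auto simp: hfun_def w0_def)
  qed
  have "Dfun P w0 < \<infinity>" using Dfun_fin[OF fin] by simp
  then show ?thesis by blast
qed

end

context setting2
begin

lemma Dfun_us: "Dfun P ustar = ereal Dst"
  unfolding Dst_def by (rule Dfun_fin[OF us_fin])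

lemma F_nonneg:
  assumes us_min: "\<forall>w. Dfun P ustar \<le> Dfun P w" and s: "s \<in> seqs P K" and k1: "1 \<le> k" and kK: "k \<le> Suc K"
  shows "0 \<le> Fv P u0 Dst s k"
proof -
  have inv: "Inv P u0 s k" using Inv_seqs[OF s kK] .
  have uf: "hfun P j (u_it P u0 s k j) < \<infinity> \<and> Hf P j (u_it P u0 s k j) \<le> hh P u0 s k j" if "j < nhat P" for j
    using Inv_u_fin[OF inv k1 that] .
  have "Dfun P (u_it P u0 s k) = ereal (dfun P (u_it P u0 s k) + Hs P (u_it P u0 s k))"
    using Dfun_fin uf by blast
  then have "Dst \<le> dfun P (u_it P u0 s k) + Hs P (u_it P u0 s k)" using us_min Dfun_us by (metis ereal_less_eq(3))
  moreover have "Hs P (u_it P u0 s k) \<le> hS P u0 s k" unfolding Hs_def hS_def by (rule sum_mono) (use uf in auto)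
  ultimately show ?thesis by (simp add: Fv_def)
qed

definition Psi0 where "Psi0 = inv_theta_sq_prev P 0 * (dfun P u0 + Hs P u0 - Dst) + (real (nhat P))\<^sup>2 * Lnorm_sq P (\<lambda>j. u0 j - ustar j)"

lemma Psi_0: "inv_theta_sq_prev P 0 * Fv P u0 Dst s 0 + (real (nhat P))\<^sup>2 * Zw P u0 ustar s 0 = Psi0"
  by (simp add: Psi0_def Fv_def Zw_def u_it_0 z_it_0 hS_def Hs_def)

lemma cF_nonneg:
  assumes us_min: "\<forall>w. Dfun P ustar \<le> Dfun P w" and s: "s \<in> seqs P K" and kK: "k \<le> Suc K"
  shows "0 \<le> inv_theta_sq_prev P k * Fv P u0 Dst s k"
proof (cases "k = 0")
  case False
  then show ?thesis using F_nonneg[OF us_min s _ kK] itsp_nonneg[OF N_ge1, of k] by simp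
next
  case True
  show ?thesis
  proof (cases "nhat P = 1")
    case True
    then show ?thesis using \<open>k = 0\<close> by (simp add: inv_theta_sq_prev_def)
  next
    case False
    then have fin: "\<forall>j<nhat P. hfun P j (u0 j) < \<infinity>" using good by blast
    have "Dfun P u0 = ereal (dfun P u0 + Hs P u0)" using Dfun_fin fin by blast
    then have "Dst \<le> dfun P u0 + Hs P u0" using us_min Dfun_us by (metis ereal_less_eq(3))
    then have "0 \<le> Fv P u0 Dst s 0" by (simp add: Fv_def hS_def Hs_def u_it_0)
    then show ?thesis using True itsp_nonneg[OF N_ge1, of 0] by simp
  qed
qed

lemma Psi_bound:
  assumes us_min: "\<forall>w. Dfun P ustar \<le> Dfun P w" and k2: "k2 \<le> Suc K"
  shows "(\<Sum>s\<in>seqs P K. inv_theta_sq_prev P k2 * Fv P u0 Dst s k2 + (real (nhat P))\<^sup>2 * Zw P u0 ustar s k2)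
     + (real (nhat P))\<^sup>2 / 2 * (\<Sum>k\<in>{0..<k2}. \<Sum>s\<in>seqs P K. Dl P u0 s k)
     \<le> real (card (seqs P K)) * Psi0"
  using tele_star[of 0 k2 K] k2 by (simp add: Psi_0)

lemma Dl_nonneg: "0 \<le> Dl P u0 s k" by (simp add: Dl_def Lnorm_nonneg mu_pos)
lemma Zw_nonneg: "0 \<le> Zw P u0 w s k" by (simp add: Zw_def Lnorm_nonneg mu_pos)

lemma R3:
  assumes us_min: "\<forall>w. Dfun P ustar \<le> Dfun P w"
  shows "(real (nhat P))\<^sup>2 * (\<Sum>s\<in>seqs P K. Zw P u0 ustar s (Suc K)) \<le> real (card (seqs P K)) * Psi0"
proof -
  have a: "0 \<le> (\<Sum>s\<in>seqs P K. inv_theta_sq_prev P (Suc K) * Fv P u0 Dst s (Suc K))"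
    by (rule sum_nonneg) (use cF_nonneg[OF us_min] in auto)
  have b: "0 \<le> (real (nhat P))\<^sup>2 / 2 * (\<Sum>k\<in>{0..<Suc K}. \<Sum>s\<in>seqs P K. Dl P u0 s k)"
    by (intro mult_nonneg_nonneg sum_nonneg Dl_nonneg) auto
  show ?thesis using Psi_bound[OF us_min, of "Suc K" K] a b by (simp add: sum.distrib sum_distrib_left)
qed

lemma R2:
  assumes us_min: "\<forall>w. Dfun P ustar \<le> Dfun P w"
  shows "(real (nhat P))\<^sup>2 / 2 * (\<Sum>k=K0..K. \<Sum>s\<in>seqs P K. Dl P u0 s k) \<le> real (card (seqs P K)) * Psi0"
proof -
  have a: "0 \<le> (\<Sum>s\<in>seqs P K. inv_theta_sq_prev P (Suc K) * Fv P u0 Dst s (Suc K) + (real (nhat P))\<^sup>2 * Zw P u0 ustar s (Suc K))"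
    by (rule sum_nonneg) (use cF_nonneg[OF us_min] Zw_nonneg in \<open>auto intro!: add_nonneg_nonneg\<close>)
  have "(\<Sum>k=K0..K. \<Sum>s\<in>seqs P K. Dl P u0 s k) \<le> (\<Sum>k\<in>{0..<Suc K}. \<Sum>s\<in>seqs P K. Dl P u0 s k)"
    by (rule sum_mono2) (auto intro!: sum_nonneg Dl_nonneg)
  then have "(real (nhat P))\<^sup>2 / 2 * (\<Sum>k=K0..K. \<Sum>s\<in>seqs P K. Dl P u0 s k) \<le> (real (nhat P))\<^sup>2 / 2 * (\<Sum>k\<in>{0..<Suc K}. \<Sum>s\<in>seqs P K. Dl P u0 s k)"
    by (rule mult_left_mono) simp
  then show ?thesis using Psi_bound[OF us_min, of "Suc K" K] a by simp
qed

lemma R4: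
  assumes us_min: "\<forall>w. Dfun P ustar \<le> Dfun P w"
  shows "(\<Sum>s\<in>seqs P K. (1 / (theta P K)\<^sup>2) * (dfun P (u_it P u0 s (Suc K)) + Hs P (u_it P u0 s (Suc K)) - Dst)
           + (real (nhat P))\<^sup>2 * Zw P u0 ustar s (Suc K)) \<le> real (card (seqs P K)) * Psi0"
proof -
  have le: "(1 / (theta P K)\<^sup>2) * (dfun P (u_it P u0 s (Suc K)) + Hs P (u_it P u0 s (Suc K)) - Dst)
      \<le> inv_theta_sq_prev P (Suc K) * Fv P u0 Dst s (Suc K)" if s: "s \<in> seqs P K" for s
  proof -
    have inv: "Inv P u0 s (Suc K)" using Inv_seqs[OF s] by simp
    have "Hs P (u_it P u0 s (Suc K)) \<le> hS P u0 s (Suc K)"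
      unfolding Hs_def hS_def by (rule sum_mono) (use Inv_u_fin[OF inv] in auto)
    then show ?thesis by (simp add: itsp_Suc Fv_def divide_right_mono)
  qed
  have b: "0 \<le> (real (nhat P))\<^sup>2 / 2 * (\<Sum>k\<in>{0..<Suc K}. \<Sum>s\<in>seqs P K. Dl P u0 s k)"
    by (intro mult_nonneg_nonneg sum_nonneg Dl_nonneg) auto
  have "(\<Sum>s\<in>seqs P K. (1 / (theta P K)\<^sup>2) * (dfun P (u_it P u0 s (Suc K)) + Hs P (u_it P u0 s (Suc K)) - Dst)
           + (real (nhat P))\<^sup>2 * Zw P u0 ustar s (Suc K))
      \<le> (\<Sum>s\<in>seqs P K. inv_theta_sq_prev P (Suc K) * Fv P u0 Dst s (Suc K) + (real (nhat P))\<^sup>2 * Zw P u0 ustar s (Suc K))"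
    by (rule sum_mono) (use le in auto)
  then show ?thesis using Psi_bound[OF us_min, of "Suc K" K] b by linarith
qed

definition Gap where
  "Gap w K0 K s = delta_inner P (xhat P u0 s K0 K) (yhat P u0 s K0 K) w + fobj P (xhat P u0 s K0 K)
      + phisum P (yhat P u0 s K0 K) / real (nn P)"

lemma R1:
  assumes us_min: "\<forall>w. Dfun P ustar \<le> Dfun P w" and wdom: "in_dom P w" and K0K: "K0 \<le> K"
  shows "(\<Sum>s\<in>seqs P K. (\<Sum>k=K0..K. 1 / theta P k) * (Gap w K0 K s + Dst))
     \<le> real (card (seqs P K)) * (2 * Psi0 + 2 * (real (nhat P))\<^sup>2 * Lnorm_sq P (\<lambda>j. w j - ustar j))"
proof -
  define S where "S = (\<Sum>k=K0..K. 1 / theta P k)"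
  define NN where "NN = real (nhat P)"
  define cs where "cs = real (card (seqs P K))"
  have Spos: "0 < S" unfolding S_def using K0K theta_pos'
    by (intro sum_pos) auto
  define G where "G s k = delta_inner P (xstar P (v_it P u0 s k)) (\<lambda>i. real (nn P) * yv P k (v_it P u0 s k) (z_it P u0 s k) i) w
          + fobj P (xstar P (v_it P u0 s k)) + phisum P (\<lambda>i. real (nn P) * yv P k (v_it P u0 s k) (z_it P u0 s k) i) / real (nn P)" for s k
  have GT: "G s k + Dst \<le> Dst - Tk P u0 w s k" for s k
    using T_gap[OF wdom, of "v_it P u0 s k" k "z_it P u0 s k"] by (simp add: G_def Tk_def)
  have jen: "S * (Gap w K0 K s + Dst) \<le> (\<Sum>k=K0..K. (1 / theta P k) * (G s k + Dst))" for s
  proof -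
    define a where "a k = (1 / theta P k) / S" for k
    have a0: "0 \<le> a k" for k using theta_pos'[of k] Spos by (simp add: a_def)
    have "sum a {K0..K} = (\<Sum>k=K0..K. 1 / theta P k) / S" unfolding a_def by (rule sum_divide_distrib[symmetric])
    then have a1: "sum a {K0..K} = 1" using Spos by (simp add: S_def)
    have xh: "xhat P u0 s K0 K = (\<Sum>k=K0..K. a k *\<^sub>R xstar P (v_it P u0 s k))"
      by (simp add: xhat_def a_def S_def scaleR_sum_right mult.commute)
    have yh: "yhat P u0 s K0 K = (\<lambda>i. \<Sum>k=K0..K. a k * (real (nn P) * yv P k (v_it P u0 s k) (z_it P u0 s k) i))"
      by (simp add: fun_eq_iff yhat_def a_def S_def y_it_eq sum_divide_distrib)
    have "Gap w K0 K s \<le> (\<Sum>k=K0..K. a k * G s k)"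
      unfolding Gap_def xh yh G_def
      by (rule gap_jensen[OF _ _ _ a1 wdom]) (use K0K a0 in auto)
    then have "S * Gap w K0 K s \<le> S * (\<Sum>k=K0..K. a k * G s k)" using Spos by simp
    also have "\<dots> = (\<Sum>k=K0..K. (1 / theta P k) * G s k)"
      using Spos by (simp add: sum_distrib_left a_def)
    finally have "S * Gap w K0 K s \<le> (\<Sum>k=K0..K. (1 / theta P k) * G s k)" .
    moreover have "S * Dst = (\<Sum>k=K0..K. (1 / theta P k) * Dst)" by (simp add: S_def sum_distrib_right)
    ultimately show ?thesis by (simp add: distrib_left sum.distrib)
  qed
  have step1: "(\<Sum>s\<in>seqs P K. S * (Gap w K0 K s + Dst)) \<le> (\<Sum>k=K0..K. \<Sum>s\<in>seqs P K. (1 / theta P k) * (Dst - Tk P u0 w s k))"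
  proof -
    have "(\<Sum>s\<in>seqs P K. S * (Gap w K0 K s + Dst)) \<le> (\<Sum>s\<in>seqs P K. \<Sum>k=K0..K. (1 / theta P k) * (Dst - Tk P u0 w s k))"
    proof (rule sum_mono)
      fix s
      have "(\<Sum>k=K0..K. (1 / theta P k) * (G s k + Dst)) \<le> (\<Sum>k=K0..K. (1 / theta P k) * (Dst - Tk P u0 w s k))"
      proof (rule sum_mono)
        fix k
        have "0 \<le> 1 / theta P k" using theta_pos'[of k] by simp
        then show "(1 / theta P k) * (G s k + Dst) \<le> (1 / theta P k) * (Dst - Tk P u0 w s k)"
          using GT[of s k] by (rule mult_left_mono[rotated])
      qed
      then show "S * (Gap w K0 K s + Dst) \<le> (\<Sum>k=K0..K. (1 / theta P k) * (Dst - Tk P u0 w s k))"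
        using jen[of s] by linarith
    qed
    then show ?thesis by (simp add: sum.swap[of _ "seqs P K"])
  qed
  note tg = tele_gap[OF wdom K0K order_refl]
  have phi_nonneg: "0 \<le> (\<Sum>s\<in>seqs P K. inv_theta_sq_prev P (Suc K) * Fv P u0 Dst s (Suc K) + NN\<^sup>2 * Zw P u0 w s (Suc K))"
    by (rule sum_nonneg) (use cF_nonneg[OF us_min] Zw_nonneg in \<open>auto intro!: add_nonneg_nonneg\<close>)
  have K0b: "(\<Sum>s\<in>seqs P K. inv_theta_sq_prev P K0 * Fv P u0 Dst s K0 + NN\<^sup>2 * Zw P u0 w s K0)
      \<le> (\<Sum>s\<in>seqs P K. 2 * (inv_theta_sq_prev P K0 * Fv P u0 Dst s K0 + NN\<^sup>2 * Zw P u0 ustar s K0) + 2 * NN\<^sup>2 * Lnorm_sq P (\<lambda>j. w j - ustar j))"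
  proof (rule sum_mono)
    fix s assume s: "s \<in> seqs P K"
    have cf: "0 \<le> inv_theta_sq_prev P K0 * Fv P u0 Dst s K0" using cF_nonneg[OF us_min s] K0K by simp
    have "Zw P u0 w s K0 \<le> 2 * Zw P u0 ustar s K0 + 2 * Lnorm_sq P (\<lambda>j. ustar j - w j)"
      unfolding Zw_def by (rule Lnorm_triangle[OF mu_pos])
    then have "NN\<^sup>2 * Zw P u0 w s K0 \<le> NN\<^sup>2 * (2 * Zw P u0 ustar s K0 + 2 * Lnorm_sq P (\<lambda>j. w j - ustar j))"
      by (intro mult_left_mono) (auto simp: Lnorm_commute[of P ustar w])
    then show "inv_theta_sq_prev P K0 * Fv P u0 Dst s K0 + NN\<^sup>2 * Zw P u0 w s K0
      \<le> 2 * (inv_theta_sq_prev P K0 * Fv P u0 Dst s K0 + NN\<^sup>2 * Zw P u0 ustar s K0) + 2 * NN\<^sup>2 * Lnorm_sq P (\<lambda>j. w j - ustar j)"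
      using cf by (simp add: algebra_simps)
  qed
  have PsiK0: "(\<Sum>s\<in>seqs P K. inv_theta_sq_prev P K0 * Fv P u0 Dst s K0 + NN\<^sup>2 * Zw P u0 ustar s K0) \<le> cs * Psi0"
  proof -
    have b: "0 \<le> NN\<^sup>2 / 2 * (\<Sum>k\<in>{0..<K0}. \<Sum>s\<in>seqs P K. Dl P u0 s k)"
      by (intro mult_nonneg_nonneg sum_nonneg Dl_nonneg) auto
    show ?thesis using Psi_bound[OF us_min, of K0 K] K0K b by (simp add: NN_def cs_def)
  qed
  have "(\<Sum>s\<in>seqs P K. S * (Gap w K0 K s + Dst))
      \<le> (\<Sum>s\<in>seqs P K. 2 * (inv_theta_sq_prev P K0 * Fv P u0 Dst s K0 + NN\<^sup>2 * Zw P u0 ustar s K0) + 2 * NN\<^sup>2 * Lnorm_sq P (\<lambda>j. w j - ustar j))"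
    using step1 tg phi_nonneg K0b by (simp add: NN_def)
  also have "\<dots> = 2 * (\<Sum>s\<in>seqs P K. inv_theta_sq_prev P K0 * Fv P u0 Dst s K0 + NN\<^sup>2 * Zw P u0 ustar s K0) + cs * (2 * NN\<^sup>2 * Lnorm_sq P (\<lambda>j. w j - ustar j))"
    by (simp add: sum.distrib sum_distrib_left cs_def)
  also have "\<dots> \<le> 2 * (cs * Psi0) + cs * (2 * NN\<^sup>2 * Lnorm_sq P (\<lambda>j. w j - ustar j))"
    using PsiK0 by simp
  finally show ?thesis by (simp add: S_def NN_def cs_def algebra_simps)
qed

end


theorem lemma5:
  fixes P :: "'t::finite prob" and M :: real
    and ustar u0 u :: "nat \<Rightarrow> real" and K0 K :: nat
  assumes n_pos: "1 \<le> nn P"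
    and mu_pos: "0 < mu P"
    and f_sc: "strongly_convex (mu P) (fobj P)"
    and phi_cvx: "\<forall>i < nn P. convex_on UNIV (phi P i) \<and> M-lipschitz_on UNIV (phi P i)"
    and g_cvx: "\<forall>i < mm P. convex_on UNIV (gc P i) \<and>
        (\<forall>x sg. (\<forall>y. gc P i x + sg \<bullet> (y - x) \<le> gc P i y) \<longrightarrow> norm sg \<le> Lg P i)"
    and slater: "\<exists>x. (\<forall>j < pp P. Brow P j \<bullet> x + bv P j = 0) \<and> (\<forall>i < mm P. gc P i x < 0)"
    and finite_opt: "bdd_below {fobj P x + (\<Sum>i<nn P. phi P i (Acol P i \<bullet> x)) / real (nn P) | x.
        (\<forall>j < pp P. Brow P j \<bullet> x + bv P j = 0) \<and> (\<forall>i < mm P. gc P i x \<le> 0)}"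
    and ustar_min: "\<forall>w. Dfun P ustar \<le> Dfun P w"
    and u0_dom: "in_dom P u0"
    and u_dom: "in_dom P u"
    and K0K: "K0 \<le> K"
  shows
    "(ereal (1 / (theta P K)\<^sup>2 - inv_theta_sq_prev P K0) *
       Exp P K (\<lambda>s. ereal (delta_inner P (xhat P u0 s K0 K) (yhat P u0 s K0 K) u
                           + fobj P (xhat P u0 s K0 K) + phisum P (yhat P u0 s K0 K) / real (nn P))
                    + Dfun P ustar)
     \<le> ereal (2 * ((real (nhat P))\<^sup>2 - real (nhat P))) * (Dfun P u0 - Dfun P ustar)
       + ereal (2 * (real (nhat P))\<^sup>2 * Lnorm_sq P (\<lambda>i. u0 i - ustar i)
                + 2 * (real (nhat P))\<^sup>2 * Lnorm_sq P (\<lambda>i. u i - ustar i)))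
  \<and>
    (ereal (1/2) * (\<Sum>k=K0..K. Exp P K (\<lambda>s. ereal (Lnorm_sq P (\<lambda>i. z_it P u0 s (Suc k) i - z_it P u0 s k i))))
     \<le> ereal (1 - theta P 0) * (Dfun P u0 - Dfun P ustar) + ereal (Lnorm_sq P (\<lambda>i. u0 i - ustar i)))
  \<and>
    (Exp P K (\<lambda>s. ereal (Lnorm_sq P (\<lambda>i. z_it P u0 s (Suc K) i - ustar i)))
     \<le> ereal (1 - theta P 0) * (Dfun P u0 - Dfun P ustar) + ereal (Lnorm_sq P (\<lambda>i. u0 i - ustar i)))
  \<and>
    ((Exp P K (\<lambda>s. Dfun P (u_it P u0 s (Suc K))) - Dfun P ustar) / ereal ((theta P K)\<^sup>2)
       + ereal ((real (nhat P))\<^sup>2) * Exp P K (\<lambda>s. ereal (Lnorm_sq P (\<lambda>i. z_it P u0 s (Suc K) i - ustar i)))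
     \<le> ereal ((real (nhat P))\<^sup>2) *
         (ereal (1 - theta P 0) * (Dfun P u0 - Dfun P ustar) + ereal (Lnorm_sq P (\<lambda>i. u0 i - ustar i))))"
proof -
  interpret S: setting P M using n_pos mu_pos f_sc phi_cvx g_cvx slater by unfold_locales
  define NN where "NN = real (nhat P)"
  have N1: "1 \<le> nhat P" by (rule S.N_ge1)
  have NN1: "1 \<le> NN" using N1 by (simp add: NN_def)
  obtain w0 where w0: "Dfun P w0 < \<infinity>" using S.exists_fin_point by blast
  have Dus_lt: "Dfun P ustar < \<infinity>" using ustar_min w0 by (metis le_less_trans)
  have us_fin: "\<And>j. j < nhat P \<Longrightarrow> hfun P j (ustar j) < \<infinity>" using S.Dfun_lt_inf[OF Dus_lt] .
  have us_dom: "in_dom P ustar"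
    unfolding in_dom_def
  proof (intro allI impI)
    fix i assume i: "nn P + pp P \<le> i \<and> i < nhat P"
    then have "hfun P i (ustar i) < \<infinity>" using us_fin by blast
    then show "0 \<le> ustar i" using i by (simp add: hfun_ineq split: if_splits)
  qed
  define Ds where "Ds = dfun P ustar + Hs P ustar"
  have Dus: "Dfun P ustar = ereal Ds" unfolding Ds_def by (rule S.Dfun_fin[OF us_fin])
  have th0: "theta P 0 = 1 / NN" by (simp add: NN_def)
  have e0: "\<And>x. ereal 0 * x = 0" by (case_tac x) auto
  show ?thesis
  proof (cases "(\<forall>j<nhat P. hfun P j (u0 j) < \<infinity>) \<or> nhat P = 1")
    case False
    then obtain j where j: "j < nhat P" "\<not> hfun P j (u0 j) < \<infinity>" and N2: "nhat P \<noteq> 1" by blast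
    have "hfun P j (u0 j) = \<infinity>" using j(2) by (simp add: top.not_eq_extremum)
    then have Du0: "Dfun P u0 = \<infinity>" by (rule S.Dfun_inf[OF j(1)])
    have NN2: "2 \<le> NN" using N1 N2 by (simp add: NN_def)
    have diff: "Dfun P u0 - Dfun P ustar = \<infinity>" using Du0 Dus by simp
    have p1: "0 < 2 * ((real (nhat P))\<^sup>2 - real (nhat P))"
    proof -
      have "NN < NN\<^sup>2" using NN2 by (simp add: power2_eq_square)
      then show ?thesis by (simp add: NN_def)
    qed
    have "1 / NN < 1" using NN2 by simp
    then have p2: "0 < 1 - theta P 0" using th0 by linarith
    have p3: "0 < (real (nhat P))\<^sup>2" using N1 by simp
    have einf: "\<And>c::real. 0 < c \<Longrightarrow> ereal c * \<infinity> = \<infinity>" by simp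
    have r1: "ereal (2 * ((real (nhat P))\<^sup>2 - real (nhat P))) * (Dfun P u0 - Dfun P ustar) = \<infinity>"
      unfolding diff by (rule einf[OF p1])
    have r2: "ereal (1 - theta P 0) * (Dfun P u0 - Dfun P ustar) = \<infinity>"
      unfolding diff by (rule einf[OF p2])
    show ?thesis using r1 r2 p3 by simp
  next
    case True
    interpret S2: setting2 P M u0 ustar
      using u0_dom us_dom us_fin True by unfold_locales auto
    have DstDs: "S2.Dst = Ds" by (simp add: S2.Dst_def Ds_def)
    define cs where "cs = real (card (seqs P K))"
    have cs0: "0 < cs" using N1 by (simp add: cs_def card_seqs)
    define L0 where "L0 = Lnorm_sq P (\<lambda>i. u0 i - ustar i)"
    define Lu where "Lu = Lnorm_sq P (\<lambda>i. u i - ustar i)"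
    have Psi0_eq: "S2.Psi0 = (NN\<^sup>2 - NN) * (dfun P u0 + Hs P u0 - Ds) + NN\<^sup>2 * L0"
      by (simp add: S2.Psi0_def inv_theta_sq_prev_def NN_def L0_def DstDs)
    have base: "ereal (1 - theta P 0) * (Dfun P u0 - Dfun P ustar) + ereal L0 = ereal (S2.Psi0 / NN\<^sup>2)"
    proof (cases "nhat P = 1")
      case True
      then have "NN = 1" by (simp add: NN_def)
      then show ?thesis using True by (simp add: Psi0_eq e0)
    next
      case False
      then have fin: "\<forall>j<nhat P. hfun P j (u0 j) < \<infinity>" using \<open>(\<forall>j<nhat P. hfun P j (u0 j) < \<infinity>) \<or> nhat P = 1\<close> by blast
      have Du0: "Dfun P u0 = ereal (dfun P u0 + Hs P u0)" using S.Dfun_fin fin by blast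
      have "(1 - 1 / NN) * (dfun P u0 + Hs P u0 - Ds) + L0 = S2.Psi0 / NN\<^sup>2"
        unfolding Psi0_eq using NN1 by (simp add: field_simps power2_eq_square)
      then show ?thesis using Du0 Dus th0 by simp
    qed
    have base1: "ereal (2 * ((real (nhat P))\<^sup>2 - real (nhat P))) * (Dfun P u0 - Dfun P ustar) + ereal (2 * (real (nhat P))\<^sup>2 * L0 + 2 * (real (nhat P))\<^sup>2 * Lu)
        = ereal (2 * S2.Psi0 + 2 * NN\<^sup>2 * Lu)"
    proof (cases "nhat P = 1")
      case True
      then have "NN = 1" by (simp add: NN_def)
      then show ?thesis using True by (simp add: Psi0_eq e0)
    next
      case False
      then have fin: "\<forall>j<nhat P. hfun P j (u0 j) < \<infinity>" using \<open>(\<forall>j<nhat P. hfun P j (u0 j) < \<infinity>) \<or> nhat P = 1\<close> by blast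
      have Du0: "Dfun P u0 = ereal (dfun P u0 + Hs P u0)" using S.Dfun_fin fin by blast
      show ?thesis using Du0 Dus by (simp add: Psi0_eq NN_def algebra_simps)
    qed
    have c1: "ereal (1 / (theta P K)\<^sup>2 - inv_theta_sq_prev P K0) *
       Exp P K (\<lambda>s. ereal (delta_inner P (xhat P u0 s K0 K) (yhat P u0 s K0 K) u
                           + fobj P (xhat P u0 s K0 K) + phisum P (yhat P u0 s K0 K) / real (nn P))
                    + Dfun P ustar)
     \<le> ereal (2 * ((real (nhat P))\<^sup>2 - real (nhat P))) * (Dfun P u0 - Dfun P ustar)
       + ereal (2 * (real (nhat P))\<^sup>2 * Lnorm_sq P (\<lambda>i. u0 i - ustar i)
                + 2 * (real (nhat P))\<^sup>2 * Lnorm_sq P (\<lambda>i. u i - ustar i))"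
    proof -
      define coef where "coef = (\<Sum>k=K0..K. 1 / theta P k)"
      have coef_eq: "1 / (theta P K)\<^sup>2 - inv_theta_sq_prev P K0 = coef"
        unfolding coef_def by (rule sum_inv_theta[OF N1 K0K, symmetric])
      have E: "Exp P K (\<lambda>s. ereal (delta_inner P (xhat P u0 s K0 K) (yhat P u0 s K0 K) u
                           + fobj P (xhat P u0 s K0 K) + phisum P (yhat P u0 s K0 K) / real (nn P))
                    + Dfun P ustar) = ereal ((\<Sum>s\<in>seqs P K. S2.Gap u K0 K s + Ds) / cs)"
        unfolding Dus using Exp_ereal[OF N1, of K "\<lambda>s. S2.Gap u K0 K s + Ds"]
        by (simp add: S2.Gap_def cs_def)
      have R: "(\<Sum>s\<in>seqs P K. coef * (S2.Gap u K0 K s + Ds)) \<le> cs * (2 * S2.Psi0 + 2 * NN\<^sup>2 * Lu)"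
        using S2.R1[OF ustar_min u_dom K0K] by (simp add: coef_def DstDs cs_def NN_def Lu_def)
      have "coef * ((\<Sum>s\<in>seqs P K. S2.Gap u K0 K s + Ds) / cs) = (\<Sum>s\<in>seqs P K. coef * (S2.Gap u K0 K s + Ds)) / cs"
        by (simp add: sum_distrib_left)
      also have "\<dots> \<le> 2 * S2.Psi0 + 2 * NN\<^sup>2 * Lu" using R cs0 by (simp add: divide_le_eq mult.commute)
      finally have "coef * ((\<Sum>s\<in>seqs P K. S2.Gap u K0 K s + Ds) / cs) \<le> 2 * S2.Psi0 + 2 * NN\<^sup>2 * Lu" .
      then show ?thesis unfolding coef_eq E base1[unfolded L0_def Lu_def] by (simp add: Lu_def)
    qed
    have c2: "ereal (1/2) * (\<Sum>k=K0..K. Exp P K (\<lambda>s. ereal (Lnorm_sq P (\<lambda>i. z_it P u0 s (Suc k) i - z_it P u0 s k i))))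
     \<le> ereal (1 - theta P 0) * (Dfun P u0 - Dfun P ustar) + ereal (Lnorm_sq P (\<lambda>i. u0 i - ustar i))"
    proof -
      have E: "Exp P K (\<lambda>s. ereal (Lnorm_sq P (\<lambda>i. z_it P u0 s (Suc k) i - z_it P u0 s k i)))
          = ereal ((\<Sum>s\<in>seqs P K. Dl P u0 s k) / cs)" for k
        using Exp_ereal[OF N1, of K "\<lambda>s. Dl P u0 s k"] by (simp add: Dl_def cs_def)
      have R: "NN\<^sup>2 / 2 * (\<Sum>k=K0..K. \<Sum>s\<in>seqs P K. Dl P u0 s k) \<le> cs * S2.Psi0"
        using S2.R2[OF ustar_min, of K K0] by (simp add: NN_def cs_def)
      have "1 / 2 * (\<Sum>k=K0..K. (\<Sum>s\<in>seqs P K. Dl P u0 s k) / cs) = (NN\<^sup>2 / 2 * (\<Sum>k=K0..K. \<Sum>s\<in>seqs P K. Dl P u0 s k)) / (cs * NN\<^sup>2)"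
        using NN1 cs0 by (simp add: sum_divide_distrib[symmetric] field_simps)
      also have "\<dots> \<le> (cs * S2.Psi0) / (cs * NN\<^sup>2)" using R NN1 cs0 by (intro divide_right_mono) auto
      also have "\<dots> = S2.Psi0 / NN\<^sup>2" using cs0 by simp
      finally have le: "1 / 2 * (\<Sum>k=K0..K. (\<Sum>s\<in>seqs P K. Dl P u0 s k) / cs) \<le> S2.Psi0 / NN\<^sup>2" .
      show ?thesis unfolding E base[unfolded L0_def] using le by (simp add: sum_ereal)
    qed
    have R3: "NN\<^sup>2 * (\<Sum>s\<in>seqs P K. Zw P u0 ustar s (Suc K)) \<le> cs * S2.Psi0"
      using S2.R3[OF ustar_min, of K] by (simp add: NN_def cs_def)
    have EZ: "Exp P K (\<lambda>s. ereal (Lnorm_sq P (\<lambda>i. z_it P u0 s (Suc K) i - ustar i)))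
        = ereal ((\<Sum>s\<in>seqs P K. Zw P u0 ustar s (Suc K)) / cs)"
      using Exp_ereal[OF N1, of K "\<lambda>s. Zw P u0 ustar s (Suc K)"] by (simp add: Zw_def cs_def)
    have c3: "Exp P K (\<lambda>s. ereal (Lnorm_sq P (\<lambda>i. z_it P u0 s (Suc K) i - ustar i)))
     \<le> ereal (1 - theta P 0) * (Dfun P u0 - Dfun P ustar) + ereal (Lnorm_sq P (\<lambda>i. u0 i - ustar i))"
    proof -
      have "(\<Sum>s\<in>seqs P K. Zw P u0 ustar s (Suc K)) / cs = (NN\<^sup>2 * (\<Sum>s\<in>seqs P K. Zw P u0 ustar s (Suc K))) / (cs * NN\<^sup>2)"
        using NN1 cs0 by simp
      also have "\<dots> \<le> (cs * S2.Psi0) / (cs * NN\<^sup>2)" using R3 NN1 cs0 by (intro divide_right_mono) auto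
      also have "\<dots> = S2.Psi0 / NN\<^sup>2" using cs0 by simp
      finally show ?thesis unfolding EZ base[unfolded L0_def] by simp
    qed
    have c4: "(Exp P K (\<lambda>s. Dfun P (u_it P u0 s (Suc K))) - Dfun P ustar) / ereal ((theta P K)\<^sup>2)
       + ereal ((real (nhat P))\<^sup>2) * Exp P K (\<lambda>s. ereal (Lnorm_sq P (\<lambda>i. z_it P u0 s (Suc K) i - ustar i)))
     \<le> ereal ((real (nhat P))\<^sup>2) *
         (ereal (1 - theta P 0) * (Dfun P u0 - Dfun P ustar) + ereal (Lnorm_sq P (\<lambda>i. u0 i - ustar i)))"
    proof -
      define Dr where "Dr s = dfun P (u_it P u0 s (Suc K)) + Hs P (u_it P u0 s (Suc K))" for s
      have Dfs: "Dfun P (u_it P u0 s (Suc K)) = ereal (Dr s)" if s: "s \<in> seqs P K" for s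
      proof -
        have inv: "Inv P u0 s (Suc K)" using S2.Inv_seqs[OF s] by simp
        show ?thesis unfolding Dr_def
          by (rule S.Dfun_fin) (use S2.Inv_u_fin[OF inv] in auto)
      qed
      have ED: "Exp P K (\<lambda>s. Dfun P (u_it P u0 s (Suc K))) = ereal ((\<Sum>s\<in>seqs P K. Dr s) / cs)"
      proof -
        have "Exp P K (\<lambda>s. Dfun P (u_it P u0 s (Suc K))) = Exp P K (\<lambda>s. ereal (Dr s))"
          unfolding Exp_def by (rule arg_cong[where f = "\<lambda>x. x / _"], rule sum.cong) (auto simp: Dfs)
        then show ?thesis using Exp_ereal[OF N1, of K Dr] by (simp add: cs_def)
      qed
      have thK: "0 < (theta P K)\<^sup>2" using S.theta_pos'[of K] by simp
      have R4: "(\<Sum>s\<in>seqs P K. (1 / (theta P K)\<^sup>2) * (Dr s - Ds) + NN\<^sup>2 * Zw P u0 ustar s (Suc K)) \<le> cs * S2.Psi0"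
        using S2.R4[OF ustar_min, of K] by (simp add: Dr_def NN_def cs_def DstDs)
      define SD where "SD = (\<Sum>s\<in>seqs P K. Dr s)"
      define SZ where "SZ = (\<Sum>s\<in>seqs P K. Zw P u0 ustar s (Suc K))"
      define t where "t = (theta P K)\<^sup>2"
      have sum_eq: "(\<Sum>s\<in>seqs P K. (1 / t) * (Dr s - Ds) + NN\<^sup>2 * Zw P u0 ustar s (Suc K)) = (1 / t) * (SD - cs * Ds) + NN\<^sup>2 * SZ"
        by (simp add: sum.distrib sum_distrib_left[symmetric] sum_subtractf cs_def SD_def SZ_def sum_divide_distrib[symmetric])
      have "(SD / cs - Ds) / t + NN\<^sup>2 * (SZ / cs) = ((1 / t) * (SD - cs * Ds) + NN\<^sup>2 * SZ) / cs"
        using cs0 thK by (simp add: t_def field_simps)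
      then have "((\<Sum>s\<in>seqs P K. Dr s) / cs - Ds) / (theta P K)\<^sup>2 + NN\<^sup>2 * ((\<Sum>s\<in>seqs P K. Zw P u0 ustar s (Suc K)) / cs)
          = (\<Sum>s\<in>seqs P K. (1 / (theta P K)\<^sup>2) * (Dr s - Ds) + NN\<^sup>2 * Zw P u0 ustar s (Suc K)) / cs"
        using sum_eq by (simp add: SD_def SZ_def t_def)
      also have "\<dots> \<le> S2.Psi0" using R4 cs0 by (simp add: divide_le_eq mult.commute)
      finally have le: "((\<Sum>s\<in>seqs P K. Dr s) / cs - Ds) / (theta P K)\<^sup>2 + NN\<^sup>2 * ((\<Sum>s\<in>seqs P K. Zw P u0 ustar s (Suc K)) / cs) \<le> S2.Psi0" .
      have rhs: "ereal ((real (nhat P))\<^sup>2) * ereal (S2.Psi0 / NN\<^sup>2) = ereal S2.Psi0"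
        using NN1 by (simp add: NN_def)
      show ?thesis unfolding base[unfolded L0_def] unfolding ED EZ Dus rhs using le thK
        by (simp add: NN_def)
    qed
    show ?thesis using c1 c2 c3 c4 by blast
  qed
qed


end
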